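(* Let $\mathbf{C}$ be a category with pullbacks and coequalizers of equivalence relations, and let $U:\mathbf{C}\to\mathbf{Sets}$ be a faithful functor preserving pullbacks and coequalizers of equivalence relations. Let $\mathcal{P}$ be a class of regular epimorphisms in $\mathbf{C}$ such that: (a) $\mathcal{P}$ is pullback stable; (b) whenever $X\overset{f}{\underset{g}{\rightrightarrows}}Y\xrightarrow{h}Z$ is a coequalizer diagram in $\mathbf{C}$ whose $U$-image is exact (i.e. is a coequalizer diagram in $\mathbf{Sets}$ and $(Uf,Ug)$ is the kernel pair of $Uh$), and $f,g\in\mathcal{P}$, then $h\in\mathcal{P}$. Then every morphism in $\mathcal{P}$ is an effective descent morphism in $\mathbf{C}$.
   Context: For a morphism $p:E\to B$ in a category $\mathbf{C}$ with pullbacks, a descent data for $p$ is a triple $(C,\gamma,\xi)$ with $\gamma:C\to E$, $\xi:E\times_BC\to C$ (pullback of $p$ and $p\gamma$, projections $\pi_1,\pi_2$) such that $\gamma\xi=\pi_1$, $\xi\langle\gamma,1_C\rangle=1_C$, $\xi\circ(E\times_B\xi)=\xi\circ(E\times_B\pi_2)$; a morphism $(C,\gamma,\xi)\to(C',\gamma',\xi')$ is $f:C\to C'$ with $\gamma'f=\gamma$ and $f\xi=\xi'\circ(E\times_Bf)$. This gives the category $\mathrm{Des}(p)$ and the comparison functor $K^p:(\mathbf{C}\downarrow B)\to\mathrm{Des}(p)$, $K^p(A,\alpha)=(E\times_BA,\pi_1,E\times_B\pi_2)$. $p$ is an effective descent morphism if $K^p$ is an equivalence of categories. *)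

theory Defs
  imports "HOL-Library.FuncSet"
begin

record ('o, 'm) category =
  Ob  :: "'o set"
  Ar  :: "'m set"
  Dom :: "'m \<Rightarrow> 'o"
  Cod :: "'m \<Rightarrow> 'o"
  Cmp :: "'m \<Rightarrow> 'm \<Rightarrow> 'm"   (* Cmp C g f = g o f *)
  Idt :: "'o \<Rightarrow> 'm"

definition hom :: "('o, 'm) category \<Rightarrow> 'o \<Rightarrow> 'o \<Rightarrow> 'm set" where
  "hom C a b = {f \<in> Ar C. Dom C f = a \<and> Cod C f = b}"

definition is_category :: "('o, 'm) category \<Rightarrow> bool" where
  "is_category C \<longleftrightarrow>
     (\<forall>f\<in>Ar C. Dom C f \<in> Ob C \<and> Cod C f \<in> Ob C) \<and>
     (\<forall>a\<in>Ob C. Idt C a \<in> hom C a a) \<and>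
     (\<forall>f\<in>Ar C. \<forall>g\<in>Ar C. Cod C f = Dom C g \<longrightarrow> Cmp C g f \<in> hom C (Dom C f) (Cod C g)) \<and>
     (\<forall>f\<in>Ar C. Cmp C f (Idt C (Dom C f)) = f \<and> Cmp C (Idt C (Cod C f)) f = f) \<and>
     (\<forall>f\<in>Ar C. \<forall>g\<in>Ar C. \<forall>h\<in>Ar C. Cod C f = Dom C g \<and> Cod C g = Dom C h \<longrightarrow>
        Cmp C h (Cmp C g f) = Cmp C (Cmp C h g) f)"

definition iso :: "('o, 'm) category \<Rightarrow> 'm \<Rightarrow> bool" where
  "iso C f \<longleftrightarrow> f \<in> Ar C \<and> (\<exists>g\<in>hom C (Cod C f) (Dom C f).
      Cmp C g f = Idt C (Dom C f) \<and> Cmp C f g = Idt C (Cod C f))"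

definition is_pullback :: "('o, 'm) category \<Rightarrow> 'm \<Rightarrow> 'm \<Rightarrow> 'o \<Rightarrow> 'm \<Rightarrow> 'm \<Rightarrow> bool" where
  "is_pullback C f g P p1 p2 \<longleftrightarrow>
     f \<in> Ar C \<and> g \<in> Ar C \<and> Cod C f = Cod C g \<and> P \<in> Ob C \<and>
     p1 \<in> hom C P (Dom C f) \<and> p2 \<in> hom C P (Dom C g) \<and>
     Cmp C f p1 = Cmp C g p2 \<and>
     (\<forall>Q\<in>Ob C. \<forall>q1\<in>hom C Q (Dom C f). \<forall>q2\<in>hom C Q (Dom C g).
        Cmp C f q1 = Cmp C g q2 \<longrightarrow>
        (\<exists>!u. u \<in> hom C Q P \<and> Cmp C p1 u = q1 \<and> Cmp C p2 u = q2))"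

definition has_pullbacks :: "('o, 'm) category \<Rightarrow> bool" where
  "has_pullbacks C \<longleftrightarrow> (\<forall>f\<in>Ar C. \<forall>g\<in>Ar C. Cod C f = Cod C g \<longrightarrow>
      (\<exists>P p1 p2. is_pullback C f g P p1 p2))"

definition is_coequalizer :: "('o, 'm) category \<Rightarrow> 'm \<Rightarrow> 'm \<Rightarrow> 'm \<Rightarrow> bool" where
  "is_coequalizer C f g h \<longleftrightarrow>
     f \<in> Ar C \<and> g \<in> Ar C \<and> h \<in> Ar C \<and> Dom C f = Dom C g \<and>
     Cod C f = Cod C g \<and> Dom C h = Cod C f \<and> Cmp C h f = Cmp C h g \<and>
     (\<forall>k\<in>Ar C. Dom C k = Cod C f \<and> Cmp C k f = Cmp C k g \<longrightarrow>
        (\<exists>!u. u \<in> hom C (Cod C h) (Cod C k) \<and> Cmp C u h = k))"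

definition regular_epi :: "('o, 'm) category \<Rightarrow> 'm \<Rightarrow> bool" where
  "regular_epi C h \<longleftrightarrow> (\<exists>f g. is_coequalizer C f g h)"

definition is_equiv_rel :: "('o, 'm) category \<Rightarrow> 'm \<Rightarrow> 'm \<Rightarrow> bool" where
  "is_equiv_rel C f g \<longleftrightarrow>
     f \<in> Ar C \<and> g \<in> Ar C \<and> Dom C f = Dom C g \<and> Cod C f = Cod C g \<and>
     (\<forall>x\<in>Ar C. \<forall>y\<in>Ar C. Cod C x = Dom C f \<and> Cod C y = Dom C f \<and> Dom C x = Dom C y \<and>
        Cmp C f x = Cmp C f y \<and> Cmp C g x = Cmp C g y \<longrightarrow> x = y) \<and>
     (\<forall>T\<in>Ob C. equiv (hom C T (Cod C f))
        {(Cmp C f x, Cmp C g x) | x. x \<in> hom C T (Dom C f)})"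

definition has_coeq_of_equiv_rels :: "('o, 'm) category \<Rightarrow> bool" where
  "has_coeq_of_equiv_rels C \<longleftrightarrow>
     (\<forall>f g. is_equiv_rel C f g \<longrightarrow> (\<exists>h. is_coequalizer C f g h))"

type_synonym ('o1, 'm1, 'o2, 'm2) ftor = "('o1 \<Rightarrow> 'o2) \<times> ('m1 \<Rightarrow> 'm2)"

definition is_functor :: "('o1, 'm1) category \<Rightarrow> ('o2, 'm2) category \<Rightarrow>
    ('o1, 'm1, 'o2, 'm2) ftor \<Rightarrow> bool" where
  "is_functor C D F \<longleftrightarrow>
     (\<forall>a\<in>Ob C. fst F a \<in> Ob D) \<and>
     (\<forall>f\<in>Ar C. snd F f \<in> hom D (fst F (Dom C f)) (fst F (Cod C f))) \<and>
     (\<forall>a\<in>Ob C. snd F (Idt C a) = Idt D (fst F a)) \<and>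
     (\<forall>f\<in>Ar C. \<forall>g\<in>Ar C. Cod C f = Dom C g \<longrightarrow>
        snd F (Cmp C g f) = Cmp D (snd F g) (snd F f))"

definition faithful :: "('o1, 'm1) category \<Rightarrow> ('o1, 'm1, 'o2, 'm2) ftor \<Rightarrow> bool" where
  "faithful C F \<longleftrightarrow> (\<forall>a\<in>Ob C. \<forall>b\<in>Ob C. \<forall>f\<in>hom C a b. \<forall>g\<in>hom C a b.
      snd F f = snd F g \<longrightarrow> f = g)"

definition preserves_pullbacks :: "('o1, 'm1) category \<Rightarrow> ('o2, 'm2) category \<Rightarrow>
    ('o1, 'm1, 'o2, 'm2) ftor \<Rightarrow> bool" where
  "preserves_pullbacks C D F \<longleftrightarrow> (\<forall>f g P p1 p2. is_pullback C f g P p1 p2 \<longrightarrow>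
      is_pullback D (snd F f) (snd F g) (fst F P) (snd F p1) (snd F p2))"

definition preserves_coeq_equiv_rels :: "('o1, 'm1) category \<Rightarrow> ('o2, 'm2) category \<Rightarrow>
    ('o1, 'm1, 'o2, 'm2) ftor \<Rightarrow> bool" where
  "preserves_coeq_equiv_rels C D F \<longleftrightarrow> (\<forall>f g h. is_equiv_rel C f g \<and> is_coequalizer C f g h \<longrightarrow>
      is_coequalizer D (snd F f) (snd F g) (snd F h))"

definition id_functor :: "('o, 'm, 'o, 'm) ftor" where
  "id_functor = (\<lambda>a. a, \<lambda>f. f)"

definition comp_functor :: "('o2, 'm2, 'o3, 'm3) ftor \<Rightarrow> ('o1, 'm1, 'o2, 'm2) ftor \<Rightarrow>
    ('o1, 'm1, 'o3, 'm3) ftor" where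
  "comp_functor G F = (fst G \<circ> fst F, snd G \<circ> snd F)"

definition nat_iso :: "('o1, 'm1) category \<Rightarrow> ('o2, 'm2) category \<Rightarrow>
    ('o1, 'm1, 'o2, 'm2) ftor \<Rightarrow> ('o1, 'm1, 'o2, 'm2) ftor \<Rightarrow> ('o1 \<Rightarrow> 'm2) \<Rightarrow> bool" where
  "nat_iso C D F G \<eta> \<longleftrightarrow>
     (\<forall>a\<in>Ob C. \<eta> a \<in> hom D (fst F a) (fst G a) \<and> iso D (\<eta> a)) \<and>
     (\<forall>f\<in>Ar C. Cmp D (\<eta> (Cod C f)) (snd F f) = Cmp D (snd G f) (\<eta> (Dom C f)))"

definition is_equivalence :: "('o1, 'm1) category \<Rightarrow> ('o2, 'm2) category \<Rightarrow>
    ('o1, 'm1, 'o2, 'm2) ftor \<Rightarrow> bool" where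
  "is_equivalence C D K \<longleftrightarrow> is_functor C D K \<and>
     (\<exists>(G :: ('o2, 'm2, 'o1, 'm1) ftor) \<eta> \<epsilon>. is_functor D C G \<and>
        nat_iso C C id_functor (comp_functor G K) \<eta> \<and>
        nat_iso D D (comp_functor K G) id_functor \<epsilon>)"

definition SetCat :: "('u set, 'u set \<times> ('u \<Rightarrow> 'u) \<times> 'u set) category" where
  "SetCat = \<lparr> Ob = UNIV,
              Ar = {(A, f, B). f \<in> A \<rightarrow>\<^sub>E B},
              Dom = fst,
              Cod = (\<lambda>x. snd (snd x)),
              Cmp = (\<lambda>(B', g, C) (A, f, B). (A, compose A g f, C)),
              Idt = (\<lambda>A. (A, \<lambda>x\<in>A. x, A)) \<rparr>"

definition pbk :: "('o, 'm) category \<Rightarrow> 'm \<Rightarrow> 'm \<Rightarrow> 'o \<times> 'm \<times> 'm" where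
  "pbk C p a = (SOME (P, p1, p2). is_pullback C p a P p1 p2)"

definition pbO :: "('o, 'm) category \<Rightarrow> 'm \<Rightarrow> 'm \<Rightarrow> 'o" where
  "pbO C p a = fst (pbk C p a)"
definition pb1 :: "('o, 'm) category \<Rightarrow> 'm \<Rightarrow> 'm \<Rightarrow> 'm" where
  "pb1 C p a = fst (snd (pbk C p a))"
definition pb2 :: "('o, 'm) category \<Rightarrow> 'm \<Rightarrow> 'm \<Rightarrow> 'm" where
  "pb2 C p a = snd (snd (pbk C p a))"

text \<open>For a : A -> B, a' : A' -> B, h : A -> A' with a' h = a, the map
  E x_B h : E x_B A -> E x_B A' (pullbacks along p : E -> B).\<close>
definition fibmap :: "('o, 'm) category \<Rightarrow> 'm \<Rightarrow> 'm \<Rightarrow> 'm \<Rightarrow> 'm \<Rightarrow> 'm" where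
  "fibmap C p a a' h = (THE u. u \<in> hom C (pbO C p a) (pbO C p a') \<and>
      Cmp C (pb1 C p a') u = pb1 C p a \<and> Cmp C (pb2 C p a') u = Cmp C h (pb2 C p a))"

definition diagmap :: "('o, 'm) category \<Rightarrow> 'm \<Rightarrow> 'o \<Rightarrow> 'm \<Rightarrow> 'm" where
  "diagmap C p X \<gamma> = (THE u. u \<in> hom C X (pbO C p (Cmp C p \<gamma>)) \<and>
      Cmp C (pb1 C p (Cmp C p \<gamma>)) u = \<gamma> \<and> Cmp C (pb2 C p (Cmp C p \<gamma>)) u = Idt C X)"

definition Slice :: "('o, 'm) category \<Rightarrow> 'o \<Rightarrow>
    ('o \<times> 'm, ('o \<times> 'm) \<times> 'm \<times> ('o \<times> 'm)) category" where
  "Slice C B = (let Os = {(A, \<alpha>). A \<in> Ob C \<and> \<alpha> \<in> hom C A B} in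
     \<lparr> Ob = Os,
       Ar = {(X, h, Y). X \<in> Os \<and> Y \<in> Os \<and> h \<in> hom C (fst X) (fst Y) \<and> Cmp C (snd Y) h = snd X},
       Dom = fst,
       Cod = (\<lambda>x. snd (snd x)),
       Cmp = (\<lambda>(Y', k, Z) (X, h, Y). (X, Cmp C k h, Z)),
       Idt = (\<lambda>X. (X, Idt C (fst X), X)) \<rparr>)"

definition is_descent_data :: "('o, 'm) category \<Rightarrow> 'm \<Rightarrow> 'o \<times> 'm \<times> 'm \<Rightarrow> bool" where
  "is_descent_data C p D \<longleftrightarrow> (case D of (X, \<gamma>, \<xi>) \<Rightarrow>
     X \<in> Ob C \<and> \<gamma> \<in> hom C X (Dom C p) \<and>
     \<xi> \<in> hom C (pbO C p (Cmp C p \<gamma>)) X \<and>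
     Cmp C \<gamma> \<xi> = pb1 C p (Cmp C p \<gamma>) \<and>
     Cmp C \<xi> (diagmap C p X \<gamma>) = Idt C X \<and>
     Cmp C \<xi> (fibmap C p (Cmp C p (pb1 C p (Cmp C p \<gamma>))) (Cmp C p \<gamma>) \<xi>) =
     Cmp C \<xi> (fibmap C p (Cmp C p (pb1 C p (Cmp C p \<gamma>))) (Cmp C p \<gamma>) (pb2 C p (Cmp C p \<gamma>))))"

definition is_descent_morphism :: "('o, 'm) category \<Rightarrow> 'm \<Rightarrow> 'o \<times> 'm \<times> 'm \<Rightarrow> 'm \<Rightarrow> 'o \<times> 'm \<times> 'm \<Rightarrow> bool" where
  "is_descent_morphism C p D f D' \<longleftrightarrow> (case D of (X, \<gamma>, \<xi>) \<Rightarrow> case D' of (X', \<gamma>', \<xi>') \<Rightarrow>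
     f \<in> hom C X X' \<and> Cmp C \<gamma>' f = \<gamma> \<and>
     Cmp C f \<xi> = Cmp C \<xi>' (fibmap C p (Cmp C p \<gamma>) (Cmp C p \<gamma>') f))"

definition Des :: "('o, 'm) category \<Rightarrow> 'm \<Rightarrow>
    ('o \<times> 'm \<times> 'm, ('o \<times> 'm \<times> 'm) \<times> 'm \<times> ('o \<times> 'm \<times> 'm)) category" where
  "Des C p =
     \<lparr> Ob = {D. is_descent_data C p D},
       Ar = {(D, f, D'). is_descent_data C p D \<and> is_descent_data C p D' \<and> is_descent_morphism C p D f D'},
       Dom = fst,
       Cod = (\<lambda>x. snd (snd x)),
       Cmp = (\<lambda>(Y', k, Z) (X, h, Y). (X, Cmp C k h, Z)),
       Idt = (\<lambda>D. (D, Idt C (fst D), D)) \<rparr>"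

text \<open>Comparison functor K^p(A, alpha) = (E x_B A, pi_1, E x_B pi_2).\<close>
definition K_obj :: "('o, 'm) category \<Rightarrow> 'm \<Rightarrow> 'o \<times> 'm \<Rightarrow> 'o \<times> 'm \<times> 'm" where
  "K_obj C p A = (case A of (A0, \<alpha>) \<Rightarrow>
     (pbO C p \<alpha>, pb1 C p \<alpha>, fibmap C p (Cmp C p (pb1 C p \<alpha>)) \<alpha> (pb2 C p \<alpha>)))"

definition Kp :: "('o, 'm) category \<Rightarrow> 'm \<Rightarrow>
    ('o \<times> 'm, ('o \<times> 'm) \<times> 'm \<times> ('o \<times> 'm), 'o \<times> 'm \<times> 'm, ('o \<times> 'm \<times> 'm) \<times> 'm \<times> ('o \<times> 'm \<times> 'm)) ftor" where
  "Kp C p = (K_obj C p,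
     \<lambda>(X, h, Y). (K_obj C p X, fibmap C p (snd X) (snd Y) h, K_obj C p Y))"

definition effective_descent :: "('o, 'm) category \<Rightarrow> 'm \<Rightarrow> bool" where
  "effective_descent C p \<longleftrightarrow> p \<in> Ar C \<and> is_equivalence (Slice C (Cod C p)) (Des C p) (Kp C p)"

definition pullback_stable :: "('o, 'm) category \<Rightarrow> 'm set \<Rightarrow> bool" where
  "pullback_stable C P \<longleftrightarrow> (\<forall>p\<in>P. \<forall>g Q q1 q2. is_pullback C p g Q q1 q2 \<longrightarrow> q2 \<in> P)"

definition exact_image :: "('o, 'm) category \<Rightarrow> ('o, 'm, 'u set, 'u set \<times> ('u \<Rightarrow> 'u) \<times> 'u set) ftor \<Rightarrow>
    'm \<Rightarrow> 'm \<Rightarrow> 'm \<Rightarrow> bool" where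
  "exact_image C U f g h \<longleftrightarrow>
     is_coequalizer SetCat (snd U f) (snd U g) (snd U h) \<and>
     is_pullback SetCat (snd U h) (snd U h) (fst U (Dom C f)) (snd U f) (snd U g)"

end

theory Submission
  imports Defs
begin

lemma SetCat_simps:
  "Ob SetCat = UNIV" "Ar SetCat = {(A, f, B). f \<in> A \<rightarrow>\<^sub>E B}" "Dom SetCat = fst"
  "Cod SetCat = (\<lambda>x. snd (snd x))"
  "Cmp SetCat (B', g, C') (A, f, B) = (A, compose A g f, C')"
  "Idt SetCat A = (A, \<lambda>x\<in>A. x, A)"
  by (auto simp: SetCat_def)

lemma SetCat_hom: "(A', f, B') \<in> hom SetCat A B \<longleftrightarrow> A' = A \<and> B' = B \<and> f \<in> A \<rightarrow>\<^sub>E B"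
  by (auto simp: hom_def SetCat_simps)

lemma set_pb_ex:
  assumes pb: "is_pullback SetCat (X, f, Z) (Y, g, W) PP (PP, q1, X) (PP, q2, Y)"
    and x: "x \<in> X" and y: "y \<in> Y" and e: "f x = g y"
  shows "\<exists>z\<in>PP. q1 z = x \<and> q2 z = y"
proof -
  define w :: 'a where "w = undefined"
  define Q where "Q = {w}"
  define a1 where "a1 = (Q, \<lambda>v\<in>Q. x, X)"
  define a2 where "a2 = (Q, \<lambda>v\<in>Q. y, Y)"
  have ZW: "Z = W" using pb by (simp add: is_pullback_def SetCat_simps)
  have h1: "a1 \<in> hom SetCat Q (Dom SetCat (X, f, Z))" using x by (simp add: a1_def SetCat_hom SetCat_simps)
  have h2: "a2 \<in> hom SetCat Q (Dom SetCat (Y, g, W))" using y by (simp add: a2_def SetCat_hom SetCat_simps)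
  have c: "Cmp SetCat (X, f, Z) a1 = Cmp SetCat (Y, g, W) a2"
    using e ZW by (simp add: a1_def a2_def SetCat_simps compose_def Q_def fun_eq_iff)
  obtain u where u: "u \<in> hom SetCat Q PP" "Cmp SetCat (PP, q1, X) u = a1" "Cmp SetCat (PP, q2, Y) u = a2"
    using pb h1 h2 c unfolding is_pullback_def by (metis UNIV_I SetCat_simps(1))
  obtain u' where u': "u = (Q, u', PP)" "u' \<in> Q \<rightarrow>\<^sub>E PP" using u(1)
    by (cases u) (auto simp: SetCat_hom)
  have "compose Q q1 u' = (\<lambda>v\<in>Q. x)" using u(2) u' by (simp add: SetCat_simps a1_def)
  then have "q1 (u' w) = x" unfolding compose_def Q_def by (metis restrict_apply' singletonI)
  moreover
  have "compose Q q2 u' = (\<lambda>v\<in>Q. y)" using u(3) u' by (simp add: SetCat_simps a2_def)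
  then have "q2 (u' w) = y" unfolding compose_def Q_def by (metis restrict_apply' singletonI)
  moreover have "u' w \<in> PP" using u'(2) Q_def by auto
  ultimately show ?thesis by blast
qed

lemma set_pb_un:
  assumes pb: "is_pullback SetCat (X, f, Z) (Y, g, W) PP (PP, q1, X) (PP, q2, Y)"
    and z: "z \<in> PP" and z': "z' \<in> PP" and e1: "q1 z = q1 z'" and e2: "q2 z = q2 z'"
  shows "z = z'"
proof -
  define w :: 'a where "w = undefined"
  define Q where "Q = {w}"
  define a1 where "a1 = (Q, \<lambda>v\<in>Q. q1 z, X)"
  define a2 where "a2 = (Q, \<lambda>v\<in>Q. q2 z, Y)"
  have ZW: "Z = W" using pb by (simp add: is_pullback_def SetCat_simps)
  have q1: "q1 \<in> PP \<rightarrow>\<^sub>E X" "q2 \<in> PP \<rightarrow>\<^sub>E Y" using pb by (auto simp: is_pullback_def SetCat_hom)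
  have fg: "compose PP f q1 = compose PP g q2" using pb by (simp add: is_pullback_def SetCat_simps)
  have e: "f (q1 z) = g (q2 z)" using fun_cong[OF fg, of z] z by (simp add: compose_def)
  have h1: "a1 \<in> hom SetCat Q (Dom SetCat (X, f, Z))" using q1 z by (auto simp: a1_def SetCat_hom SetCat_simps)
  have h2: "a2 \<in> hom SetCat Q (Dom SetCat (Y, g, W))" using q1 z by (auto simp: a2_def SetCat_hom SetCat_simps)
  have c: "Cmp SetCat (X, f, Z) a1 = Cmp SetCat (Y, g, W) a2"
    using e ZW by (simp add: a1_def a2_def SetCat_simps compose_def Q_def fun_eq_iff)
  have un: "\<exists>!u. u \<in> hom SetCat Q PP \<and> Cmp SetCat (PP, q1, X) u = a1 \<and> Cmp SetCat (PP, q2, Y) u = a2"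
    using pb h1 h2 c unfolding is_pullback_def by (metis UNIV_I SetCat_simps(1))
  define u1 where "u1 = (Q, \<lambda>v\<in>Q. z, PP)"
  define u2 where "u2 = (Q, \<lambda>v\<in>Q. z', PP)"
  have "u1 \<in> hom SetCat Q PP \<and> Cmp SetCat (PP, q1, X) u1 = a1 \<and> Cmp SetCat (PP, q2, Y) u1 = a2"
    using z by (auto simp: u1_def SetCat_hom SetCat_simps a1_def a2_def compose_def Q_def)
  moreover have "u2 \<in> hom SetCat Q PP \<and> Cmp SetCat (PP, q1, X) u2 = a1 \<and> Cmp SetCat (PP, q2, Y) u2 = a2"
    using z' e1 e2 by (auto simp: u2_def SetCat_hom SetCat_simps a1_def a2_def compose_def Q_def)
  ultimately have "u1 = u2" using un by blast
  then have "(\<lambda>v\<in>Q. z) = (\<lambda>v\<in>Q. z')" by (simp add: u1_def u2_def)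
  then show ?thesis unfolding Q_def by (metis restrict_apply' singletonI)
qed

locale ctx =
  fixes C :: "('o, 'm) category"
    and U :: "('o, 'm, 'u set, 'u set \<times> ('u \<Rightarrow> 'u) \<times> 'u set) ftor"
    and P :: "'m set"
  assumes cat: "is_category C"
    and hpb: "has_pullbacks C"
    and hcq: "has_coeq_of_equiv_rels C"
    and fnc: "is_functor C SetCat U"
    and faith: "faithful C U"
    and ppb: "preserves_pullbacks C SetCat U"
    and pcq: "preserves_coeq_equiv_rels C SetCat U"
    and PA: "P \<subseteq> Ar C"
    and Preg: "\<forall>h\<in>P. regular_epi C h"
    and Pstab: "pullback_stable C P"
    and Pcl: "\<forall>f g h. is_coequalizer C f g h \<and> exact_image C U f g h \<and> f \<in> P \<and> g \<in> P \<longrightarrow> h \<in> P"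
begin

abbreviation "uo \<equiv> fst U"
abbreviation "uf f \<equiv> fst (snd (snd U f))"

lemma ob_dom[simp]: "f \<in> Ar C \<Longrightarrow> Dom C f \<in> Ob C"
  using cat by (simp add: is_category_def)
lemma ob_cod[simp]: "f \<in> Ar C \<Longrightarrow> Cod C f \<in> Ob C"
  using cat by (simp add: is_category_def)
lemma id_hom: "a \<in> Ob C \<Longrightarrow> Idt C a \<in> hom C a a"
  using cat by (simp add: is_category_def)
lemma id_simps[simp]: "a \<in> Ob C \<Longrightarrow> Idt C a \<in> Ar C" "a \<in> Ob C \<Longrightarrow> Dom C (Idt C a) = a"
  "a \<in> Ob C \<Longrightarrow> Cod C (Idt C a) = a"
  using id_hom by (auto simp: hom_def)
lemma comp_simps[simp]:
  assumes "f \<in> Ar C" "g \<in> Ar C" "Cod C f = Dom C g"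
  shows "Cmp C g f \<in> Ar C" "Dom C (Cmp C g f) = Dom C f" "Cod C (Cmp C g f) = Cod C g"
  using cat assms by (auto simp: is_category_def hom_def)
lemma comp_hom: "f \<in> hom C a b \<Longrightarrow> g \<in> hom C b c \<Longrightarrow> Cmp C g f \<in> hom C a c"
  by (simp add: hom_def)
lemma id_l: "f \<in> Ar C \<Longrightarrow> Cmp C (Idt C (Cod C f)) f = f"
  using cat by (simp add: is_category_def)
lemma id_r: "f \<in> Ar C \<Longrightarrow> Cmp C f (Idt C (Dom C f)) = f"
  using cat by (simp add: is_category_def)
lemma assoc: "f \<in> Ar C \<Longrightarrow> g \<in> Ar C \<Longrightarrow> h \<in> Ar C \<Longrightarrow> Cod C f = Dom C g \<Longrightarrow> Cod C g = Dom C h \<Longrightarrow>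
  Cmp C h (Cmp C g f) = Cmp C (Cmp C h g) f"
  using cat by (simp add: is_category_def)

lemma U_arr: "f \<in> Ar C \<Longrightarrow> snd U f = (uo (Dom C f), uf f, uo (Cod C f)) \<and> uf f \<in> uo (Dom C f) \<rightarrow>\<^sub>E uo (Cod C f)"
  using fnc unfolding is_functor_def
  by (cases "snd U f") (auto simp: SetCat_hom dest!: bspec[of _ _ f])

lemma uf_in[simp]: "f \<in> Ar C \<Longrightarrow> x \<in> uo (Dom C f) \<Longrightarrow> uf f x \<in> uo (Cod C f)"
  using U_arr by blast

lemma uf_comp: assumes "f \<in> Ar C" "g \<in> Ar C" "Cod C f = Dom C g" "x \<in> uo (Dom C f)"
  shows "uf (Cmp C g f) x = uf g (uf f x)"
proof -
  have "snd U (Cmp C g f) = Cmp SetCat (snd U g) (snd U f)"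
    using fnc assms unfolding is_functor_def by blast
  also have "\<dots> = (uo (Dom C f), compose (uo (Dom C f)) (uf g) (uf f), uo (Cod C g))"
    using conjunct1[OF U_arr[OF assms(1)]] conjunct1[OF U_arr[OF assms(2)]] by (metis SetCat_simps(5))
  finally show ?thesis using assms(4) by (simp add: compose_def)
qed

lemma uf_id: "a \<in> Ob C \<Longrightarrow> x \<in> uo a \<Longrightarrow> uf (Idt C a) x = x"
  using fnc unfolding is_functor_def by (simp add: SetCat_simps)

lemma fext: assumes "f \<in> hom C a b" "g \<in> hom C a b" "\<And>x. x \<in> uo a \<Longrightarrow> uf f x = uf g x"
  shows "f = g"
proof -
  have ar: "f \<in> Ar C" "g \<in> Ar C" and d: "Dom C f = a" "Dom C g = a" "Cod C f = b" "Cod C g = b"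
    using assms by (auto simp: hom_def)
  have "uf f = uf g" using U_arr[OF ar(1)] U_arr[OF ar(2)] d assms(3)
    by (intro PiE_ext[of _ "uo a" "\<lambda>_. uo b"]) auto
  then have "snd U f = snd U g" using conjunct1[OF U_arr[OF ar(1)]] conjunct1[OF U_arr[OF ar(2)]] d by simp
  moreover have "a \<in> Ob C" "b \<in> Ob C" using ar d by auto
  ultimately show ?thesis using faith assms unfolding faithful_def by blast
qed

lemma pb_set: assumes "is_pullback C f g Pb p1 p2"
  shows "is_pullback SetCat (uo (Dom C f), uf f, uo (Cod C f)) (uo (Dom C g), uf g, uo (Cod C g)) (uo Pb)
     (uo Pb, uf p1, uo (Dom C f)) (uo Pb, uf p2, uo (Dom C g))"
proof -
  have h: "f \<in> Ar C" "g \<in> Ar C" "p1 \<in> hom C Pb (Dom C f)" "p2 \<in> hom C Pb (Dom C g)"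
    using assms by (auto simp: is_pullback_def)
  have "is_pullback SetCat (snd U f) (snd U g) (uo Pb) (snd U p1) (snd U p2)"
    using ppb assms by (simp add: preserves_pullbacks_def)
  moreover have "snd U p1 = (uo Pb, uf p1, uo (Dom C f))" "snd U p2 = (uo Pb, uf p2, uo (Dom C g))"
    using h(3,4) conjunct1[OF U_arr[of p1]] conjunct1[OF U_arr[of p2]] by (auto simp: hom_def)
  ultimately show ?thesis using conjunct1[OF U_arr[OF h(1)]] conjunct1[OF U_arr[OF h(2)]] by metis
qed

lemma pb_sq: assumes "is_pullback C f g Pb p1 p2" "z \<in> uo Pb"
  shows "uf p1 z \<in> uo (Dom C f)" "uf p2 z \<in> uo (Dom C g)" "uf f (uf p1 z) = uf g (uf p2 z)"
proof -
  have h: "f \<in> Ar C" "g \<in> Ar C" "p1 \<in> hom C Pb (Dom C f)" "p2 \<in> hom C Pb (Dom C g)"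
    "Cmp C f p1 = Cmp C g p2"
    using assms by (auto simp: is_pullback_def)
  show "uf p1 z \<in> uo (Dom C f)" "uf p2 z \<in> uo (Dom C g)" using h assms(2) uf_in[of p1 z] uf_in[of p2 z] by (auto simp: hom_def)
  show "uf f (uf p1 z) = uf g (uf p2 z)" using uf_comp[of p1 f z] uf_comp[of p2 g z] h assms(2)
    by (auto simp: hom_def)
qed

lemma pb_ex: assumes "is_pullback C f g Pb p1 p2" "x \<in> uo (Dom C f)" "y \<in> uo (Dom C g)" "uf f x = uf g y"
  shows "\<exists>z\<in>uo Pb. uf p1 z = x \<and> uf p2 z = y"
  using set_pb_ex[OF pb_set[OF assms(1)]] assms by blast

lemma pb_un: assumes "is_pullback C f g Pb p1 p2" "z \<in> uo Pb" "z' \<in> uo Pb"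
  "uf p1 z = uf p1 z'" "uf p2 z = uf p2 z'"
  shows "z = z'"
  using set_pb_un[OF pb_set[OF assms(1)]] assms by blast

end

context ctx begin

lemma regepi_ar: "regular_epi C h \<Longrightarrow> h \<in> Ar C"
  by (auto simp: regular_epi_def is_coequalizer_def)

lemma regepi_desc:
  assumes r: "regular_epi C h" and k: "k \<in> Ar C" "Dom C k = Dom C h"
    and c: "\<And>x y. x \<in> uo (Dom C h) \<Longrightarrow> y \<in> uo (Dom C h) \<Longrightarrow> uf h x = uf h y \<Longrightarrow> uf k x = uf k y"
  shows "\<exists>u\<in>hom C (Cod C h) (Cod C k). Cmp C u h = k"
proof -
  obtain f g where co: "is_coequalizer C f g h" using r by (auto simp: regular_epi_def)
  have fg: "f \<in> Ar C" "g \<in> Ar C" "h \<in> Ar C" "Dom C f = Dom C g" "Cod C f = Cod C g" "Dom C h = Cod C f"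
    "Cmp C h f = Cmp C h g"
    using co by (auto simp: is_coequalizer_def)
  have "Cmp C k f = Cmp C k g"
  proof (rule fext[of _ "Dom C f" "Cod C k"])
    show "Cmp C k f \<in> hom C (Dom C f) (Cod C k)" "Cmp C k g \<in> hom C (Dom C f) (Cod C k)"
      using fg k by (auto simp: hom_def)
    fix x assume x: "x \<in> uo (Dom C f)"
    have "uf h (uf f x) = uf h (uf g x)"
      using uf_comp[of f h x] uf_comp[of g h x] fg x by simp
    then have "uf k (uf f x) = uf k (uf g x)"
      using c[of "uf f x" "uf g x"] fg x uf_in[of f x] uf_in[of g x] by simp
    then show "uf (Cmp C k f) x = uf (Cmp C k g) x"
      using uf_comp[of f k x] uf_comp[of g k x] fg x k by simp
  qed
  moreover have "\<forall>k\<in>Ar C. Dom C k = Cod C f \<and> Cmp C k f = Cmp C k g \<longrightarrow>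
        (\<exists>!u. u \<in> hom C (Cod C h) (Cod C k) \<and> Cmp C u h = k)" using co by (simp add: is_coequalizer_def)
  ultimately have "\<exists>!u. u \<in> hom C (Cod C h) (Cod C k) \<and> Cmp C u h = k" using k fg by auto
  then show ?thesis by auto
qed

lemma regepi_epi:
  assumes r: "regular_epi C h" and u: "u \<in> hom C (Cod C h) W" "v \<in> hom C (Cod C h) W"
    and e: "Cmp C u h = Cmp C v h"
  shows "u = v"
proof -
  obtain f g where co: "is_coequalizer C f g h" using r by (auto simp: regular_epi_def)
  have fg: "f \<in> Ar C" "g \<in> Ar C" "h \<in> Ar C" "Dom C f = Dom C g" "Cod C f = Cod C g" "Dom C h = Cod C f"
    "Cmp C h f = Cmp C h g"
    using co by (auto simp: is_coequalizer_def)
  have ar: "u \<in> Ar C" "v \<in> Ar C" "Dom C u = Cod C h" "Dom C v = Cod C h" "Cod C u = W" "Cod C v = W"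
    using u by (auto simp: hom_def)
  let ?k = "Cmp C u h"
  have k: "?k \<in> Ar C" "Dom C ?k = Cod C f" using ar fg by auto
  have "Cmp C ?k f = Cmp C u (Cmp C h f)" using assoc[of f h u] fg ar by simp
  also have "\<dots> = Cmp C u (Cmp C h g)" using fg by simp
  also have "\<dots> = Cmp C ?k g" using assoc[of g h u] fg ar by simp
  finally have "Cmp C ?k f = Cmp C ?k g" .
  moreover have "\<forall>k\<in>Ar C. Dom C k = Cod C f \<and> Cmp C k f = Cmp C k g \<longrightarrow>
        (\<exists>!u. u \<in> hom C (Cod C h) (Cod C k) \<and> Cmp C u h = k)" using co by (simp add: is_coequalizer_def)
  ultimately have un: "\<exists>!w. w \<in> hom C (Cod C h) (Cod C ?k) \<and> Cmp C w h = ?k"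
    using k by auto
  have "Cod C ?k = W" using ar fg by auto
  then have "u \<in> hom C (Cod C h) (Cod C ?k) \<and> Cmp C u h = ?k" "v \<in> hom C (Cod C h) (Cod C ?k) \<and> Cmp C v h = ?k"
    using u e by auto
  then show ?thesis using un by (auto dest: ex1_implies_ex)
qed

lemma pbk_ok: assumes "f \<in> Ar C" "g \<in> Ar C" "Cod C f = Cod C g"
  shows "is_pullback C f g (pbO C f g) (pb1 C f g) (pb2 C f g)"
proof -
  obtain Pb p1 p2 where "is_pullback C f g Pb p1 p2" using hpb assms unfolding has_pullbacks_def by blast
  then have "\<exists>x. case x of (Pb, p1, p2) \<Rightarrow> is_pullback C f g Pb p1 p2" by auto
  from someI_ex[OF this] have "case pbk C f g of (Pb, p1, p2) \<Rightarrow> is_pullback C f g Pb p1 p2"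
    unfolding pbk_def .
  then show ?thesis by (cases "pbk C f g") (simp add: pbO_def pb1_def pb2_def)
qed

lemma pb_parts: assumes "is_pullback C f g Pb p1 p2"
  shows "f \<in> Ar C" "g \<in> Ar C" "Pb \<in> Ob C" "p1 \<in> Ar C" "p2 \<in> Ar C" "Dom C p1 = Pb" "Dom C p2 = Pb"
    "Cod C p1 = Dom C f" "Cod C p2 = Dom C g" "Cmp C f p1 = Cmp C g p2" "Cod C f = Cod C g"
  using assms by (auto simp: is_pullback_def hom_def)

lemma pb_univ: assumes "is_pullback C f g Pb p1 p2" "q1 \<in> hom C Q (Dom C f)" "q2 \<in> hom C Q (Dom C g)"
    "Cmp C f q1 = Cmp C g q2"
  shows "\<exists>!u. u \<in> hom C Q Pb \<and> Cmp C p1 u = q1 \<and> Cmp C p2 u = q2"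
proof -
  have "Q \<in> Ob C" using assms(2) by (auto simp: hom_def)
  then show ?thesis using assms unfolding is_pullback_def by blast
qed

lemma pb_into_elem: assumes pb: "is_pullback C f g Pb p1 p2" and u: "u \<in> hom C Q Pb"
  and x: "x \<in> uo Q" and z: "z \<in> uo Pb"
  and e1: "uf (Cmp C p1 u) x = uf p1 z" and e2: "uf (Cmp C p2 u) x = uf p2 z"
  shows "uf u x = z"
proof -
  note pp = pb_parts[OF pb]
  have ua: "u \<in> Ar C" "Dom C u = Q" "Cod C u = Pb" using u by (auto simp: hom_def)
  show ?thesis
  proof (rule pb_un[OF pb])
    show "uf u x \<in> uo Pb" using uf_in[of u x] ua x by auto
    show "uf p1 (uf u x) = uf p1 z" using e1 uf_comp[of u p1 x] ua pp x by auto
    show "uf p2 (uf u x) = uf p2 z" using e2 uf_comp[of u p2 x] ua pp x by auto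
  qed (rule z)
qed

end

locale ctxp = ctx + fixes p assumes pP: "p \<in> P"
begin

abbreviation "E \<equiv> Dom C p"
abbreviation "B \<equiv> Cod C p"
abbreviation "PO a \<equiv> pbO C p a"
abbreviation "P1 a \<equiv> pb1 C p a"
abbreviation "P2 a \<equiv> pb2 C p a"

lemma p_ar[simp]: "p \<in> Ar C" using pP PA by auto

lemma pbp: "a \<in> Ar C \<Longrightarrow> Cod C a = B \<Longrightarrow> is_pullback C p a (PO a) (P1 a) (P2 a)"
  using pbk_ok[of p a] by simp

lemma pbp_parts: assumes "a \<in> Ar C" "Cod C a = B"
  shows "PO a \<in> Ob C" "P1 a \<in> Ar C" "P2 a \<in> Ar C" "Dom C (P1 a) = PO a" "Dom C (P2 a) = PO a"
    "Cod C (P1 a) = E" "Cod C (P2 a) = Dom C a"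
  using pb_parts[OF pbp[OF assms]] by auto

lemma pbp_sq: "a \<in> Ar C \<Longrightarrow> Cod C a = B \<Longrightarrow> Cmp C p (P1 a) = Cmp C a (P2 a)"
  using pb_parts[OF pbp] by auto

lemma P2_in_P: "a \<in> Ar C \<Longrightarrow> Cod C a = B \<Longrightarrow> P2 a \<in> P"
  using Pstab pP pbp unfolding pullback_stable_def by blast

lemma pe_sq: assumes "a \<in> Ar C" "Cod C a = B" "z \<in> uo (PO a)"
  shows "uf (P1 a) z \<in> uo E" "uf (P2 a) z \<in> uo (Dom C a)" "uf p (uf (P1 a) z) = uf a (uf (P2 a) z)"
  using pb_sq[OF pbp[OF assms(1,2)] assms(3)] by auto

lemma pe_ex: assumes "a \<in> Ar C" "Cod C a = B" "x \<in> uo E" "y \<in> uo (Dom C a)" "uf p x = uf a y"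
  shows "\<exists>z\<in>uo (PO a). uf (P1 a) z = x \<and> uf (P2 a) z = y"
  using pb_ex[OF pbp[OF assms(1,2)]] assms by auto

lemma pe_un: assumes "a \<in> Ar C" "Cod C a = B" "z \<in> uo (PO a)" "z' \<in> uo (PO a)"
  "uf (P1 a) z = uf (P1 a) z'" "uf (P2 a) z = uf (P2 a) z'"
  shows "z = z'"
  using pb_un[OF pbp[OF assms(1,2)]] assms by auto

lemma fm_prop: assumes a: "a \<in> Ar C" "Cod C a = B" and a': "a' \<in> Ar C" "Cod C a' = B"
  and h: "h \<in> hom C (Dom C a) (Dom C a')" and e: "Cmp C a' h = a"
  shows "fibmap C p a a' h \<in> hom C (PO a) (PO a') \<and> Cmp C (P1 a') (fibmap C p a a' h) = P1 a
     \<and> Cmp C (P2 a') (fibmap C p a a' h) = Cmp C h (P2 a)"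
proof -
  note A = pbp_parts[OF a] and A' = pbp_parts[OF a']
  have ha: "h \<in> Ar C" "Dom C h = Dom C a" "Cod C h = Dom C a'" using h by (auto simp: hom_def)
  have q1: "P1 a \<in> hom C (PO a) (Dom C p)" using A by (simp add: hom_def)
  have q2: "Cmp C h (P2 a) \<in> hom C (PO a) (Dom C a')" using A ha by (simp add: hom_def)
  have "Cmp C a' (Cmp C h (P2 a)) = Cmp C (Cmp C a' h) (P2 a)" using assoc[of "P2 a" h a'] A ha a' by simp
  then have eq: "Cmp C p (P1 a) = Cmp C a' (Cmp C h (P2 a))" using e pbp_sq[OF a] by simp
  have "\<exists>!u. u \<in> hom C (PO a) (PO a') \<and> Cmp C (P1 a') u = P1 a \<and> Cmp C (P2 a') u = Cmp C h (P2 a)"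
    by (rule pb_univ[OF pbp[OF a'] q1 q2 eq])
  then show ?thesis unfolding fibmap_def by (rule theI')
qed

lemma fm_unique: assumes a: "a \<in> Ar C" "Cod C a = B" and a': "a' \<in> Ar C" "Cod C a' = B"
  and h: "h \<in> hom C (Dom C a) (Dom C a')" and e: "Cmp C a' h = a"
  and v: "v \<in> hom C (PO a) (PO a')" "Cmp C (P1 a') v = P1 a" "Cmp C (P2 a') v = Cmp C h (P2 a)"
  shows "fibmap C p a a' h = v"
proof -
  note A = pbp_parts[OF a] and A' = pbp_parts[OF a']
  have ha: "h \<in> Ar C" "Dom C h = Dom C a" "Cod C h = Dom C a'" using h by (auto simp: hom_def)
  have q1: "P1 a \<in> hom C (PO a) (Dom C p)" using A by (simp add: hom_def)
  have q2: "Cmp C h (P2 a) \<in> hom C (PO a) (Dom C a')" using A ha by (simp add: hom_def)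
  have "Cmp C a' (Cmp C h (P2 a)) = Cmp C (Cmp C a' h) (P2 a)" using assoc[of "P2 a" h a'] A ha a' by simp
  then have eq: "Cmp C p (P1 a) = Cmp C a' (Cmp C h (P2 a))" using e pbp_sq[OF a] by simp
  have un: "\<exists>!u. u \<in> hom C (PO a) (PO a') \<and> Cmp C (P1 a') u = P1 a \<and> Cmp C (P2 a') u = Cmp C h (P2 a)"
    by (rule pb_univ[OF pbp[OF a'] q1 q2 eq])
  have "fibmap C p a a' h \<in> hom C (PO a) (PO a') \<and> Cmp C (P1 a') (fibmap C p a a' h) = P1 a
     \<and> Cmp C (P2 a') (fibmap C p a a' h) = Cmp C h (P2 a)" by (rule fm_prop[OF a a' h e])
  then show ?thesis using un v by blast
qed

lemma fm_elem: assumes a: "a \<in> Ar C" "Cod C a = B" and a': "a' \<in> Ar C" "Cod C a' = B"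
  and h: "h \<in> hom C (Dom C a) (Dom C a')" and e: "Cmp C a' h = a" and z: "z \<in> uo (PO a)"
  shows "uf (fibmap C p a a' h) z \<in> uo (PO a')"
    "uf (P1 a') (uf (fibmap C p a a' h) z) = uf (P1 a) z"
    "uf (P2 a') (uf (fibmap C p a a' h) z) = uf h (uf (P2 a) z)"
proof -
  note A = pbp_parts[OF a] and A' = pbp_parts[OF a']
  note F = fm_prop[OF a a' h e]
  let ?f = "fibmap C p a a' h"
  have fa: "?f \<in> Ar C" "Dom C ?f = PO a" "Cod C ?f = PO a'" using F by (auto simp: hom_def)
  have ha: "h \<in> Ar C" "Dom C h = Dom C a" "Cod C h = Dom C a'" using h by (auto simp: hom_def)
  show "uf ?f z \<in> uo (PO a')" using uf_in[of ?f z] fa z by simp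
  show "uf (P1 a') (uf ?f z) = uf (P1 a) z" using uf_comp[of ?f "P1 a'" z] fa A' F z by simp
  show "uf (P2 a') (uf ?f z) = uf h (uf (P2 a) z)"
    using uf_comp[of ?f "P2 a'" z] uf_comp[of "P2 a" h z] fa A A' F z ha by simp
qed

lemma dg_prop: assumes g: "g \<in> hom C X E"
  shows "diagmap C p X g \<in> hom C X (PO (Cmp C p g)) \<and> Cmp C (P1 (Cmp C p g)) (diagmap C p X g) = g
     \<and> Cmp C (P2 (Cmp C p g)) (diagmap C p X g) = Idt C X"
proof -
  have ga: "g \<in> Ar C" "Dom C g = X" "Cod C g = E" using g by (auto simp: hom_def)
  let ?a = "Cmp C p g"
  have a: "?a \<in> Ar C" "Cod C ?a = B" "Dom C ?a = X" using ga by auto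
  have X: "X \<in> Ob C" using ga ob_dom by blast
  have q2: "Idt C X \<in> hom C X (Dom C ?a)" using a X id_hom by simp
  have eq: "Cmp C p g = Cmp C ?a (Idt C X)" using id_r[of ?a] a by simp
  have "\<exists>!u. u \<in> hom C X (PO ?a) \<and> Cmp C (P1 ?a) u = g \<and> Cmp C (P2 ?a) u = Idt C X"
    by (rule pb_univ[OF pbp[OF a(1,2)] g q2 eq])
  then show ?thesis unfolding diagmap_def by (rule theI')
qed

lemma dg_elem: assumes g: "g \<in> hom C X E" and x: "x \<in> uo X"
  shows "uf (diagmap C p X g) x \<in> uo (PO (Cmp C p g))"
    "uf (P1 (Cmp C p g)) (uf (diagmap C p X g) x) = uf g x"
    "uf (P2 (Cmp C p g)) (uf (diagmap C p X g) x) = x"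
proof -
  have ga: "g \<in> Ar C" "Dom C g = X" "Cod C g = E" using g by (auto simp: hom_def)
  let ?a = "Cmp C p g"
  have a: "?a \<in> Ar C" "Cod C ?a = B" "Dom C ?a = X" using ga by auto
  note A = pbp_parts[OF a(1,2)]
  note F = dg_prop[OF g]
  let ?f = "diagmap C p X g"
  have X: "X \<in> Ob C" using ga ob_dom by blast
  have fa: "?f \<in> Ar C" "Dom C ?f = X" "Cod C ?f = PO ?a" using F by (auto simp: hom_def)
  show "uf ?f x \<in> uo (PO ?a)" using uf_in[of ?f x] fa x by simp
  show "uf (P1 ?a) (uf ?f x) = uf g x" using uf_comp[of ?f "P1 ?a" x] fa A F x by simp
  show "uf (P2 ?a) (uf ?f x) = x" using uf_comp[of ?f "P2 ?a" x] fa A F x uf_id[OF X x] by simp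
qed

end

lemma Slice_simps:
  "Ob (Slice C B) = {(A, \<alpha>). A \<in> Ob C \<and> \<alpha> \<in> hom C A B}"
  "Ar (Slice C B) = {(X, h, Y). X \<in> Ob (Slice C B) \<and> Y \<in> Ob (Slice C B) \<and> h \<in> hom C (fst X) (fst Y) \<and> Cmp C (snd Y) h = snd X}"
  "Dom (Slice C B) = fst" "Cod (Slice C B) = (\<lambda>x. snd (snd x))"
  "Cmp (Slice C B) (Y', k, Z) (X, h, Y) = (X, Cmp C k h, Z)"
  "Idt (Slice C B) X = (X, Idt C (fst X), X)"
  by (auto simp: Slice_def Let_def)

lemma Des_simps:
  "Ob (Des C p) = {D. is_descent_data C p D}"
  "Ar (Des C p) = {(D, f, D'). is_descent_data C p D \<and> is_descent_data C p D' \<and> is_descent_morphism C p D f D'}"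
  "Dom (Des C p) = fst" "Cod (Des C p) = (\<lambda>x. snd (snd x))"
  "Cmp (Des C p) (Y', k, Z) (X, h, Y) = (X, Cmp C k h, Z)"
  "Idt (Des C p) X = (X, Idt C (fst X), X)"
  by (auto simp: Des_def)

context ctxp begin

definition "Kxi \<alpha> = fibmap C p (Cmp C p (P1 \<alpha>)) \<alpha> (P2 \<alpha>)"

lemma K_obj_eq: "K_obj C p (A, \<alpha>) = (PO \<alpha>, P1 \<alpha>, Kxi \<alpha>)"
  by (simp add: K_obj_def Kxi_def)

lemma Kxi_prop: assumes a: "\<alpha> \<in> Ar C" "Cod C \<alpha> = B"
  shows "Kxi \<alpha> \<in> hom C (PO (Cmp C p (P1 \<alpha>))) (PO \<alpha>)"
    "Cmp C (P1 \<alpha>) (Kxi \<alpha>) = P1 (Cmp C p (P1 \<alpha>))"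
    "Cmp C (P2 \<alpha>) (Kxi \<alpha>) = Cmp C (P2 \<alpha>) (P2 (Cmp C p (P1 \<alpha>)))"
proof -
  note A = pbp_parts[OF a]
  let ?d = "Cmp C p (P1 \<alpha>)"
  have d: "?d \<in> Ar C" "Cod C ?d = B" "Dom C ?d = PO \<alpha>" using A a by auto
  have h: "P2 \<alpha> \<in> hom C (Dom C ?d) (Dom C \<alpha>)" using A d by (simp add: hom_def)
  have e: "Cmp C \<alpha> (P2 \<alpha>) = ?d" using pbp_sq[OF a] by simp
  note F = fm_prop[OF d(1,2) a h e]
  show "Kxi \<alpha> \<in> hom C (PO ?d) (PO \<alpha>)" "Cmp C (P1 \<alpha>) (Kxi \<alpha>) = P1 ?d"
    "Cmp C (P2 \<alpha>) (Kxi \<alpha>) = Cmp C (P2 \<alpha>) (P2 ?d)" using F by (auto simp: Kxi_def)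
qed

lemma Kxi_elem: assumes a: "\<alpha> \<in> Ar C" "Cod C \<alpha> = B" and v: "v \<in> uo (PO (Cmp C p (P1 \<alpha>)))"
  shows "uf (Kxi \<alpha>) v \<in> uo (PO \<alpha>)"
    "uf (P1 \<alpha>) (uf (Kxi \<alpha>) v) = uf (P1 (Cmp C p (P1 \<alpha>))) v"
    "uf (P2 \<alpha>) (uf (Kxi \<alpha>) v) = uf (P2 \<alpha>) (uf (P2 (Cmp C p (P1 \<alpha>))) v)"
proof -
  note A = pbp_parts[OF a]
  let ?d = "Cmp C p (P1 \<alpha>)"
  have d: "?d \<in> Ar C" "Cod C ?d = B" "Dom C ?d = PO \<alpha>" using A a by auto
  have h: "P2 \<alpha> \<in> hom C (Dom C ?d) (Dom C \<alpha>)" using A d by (simp add: hom_def)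
  have e: "Cmp C \<alpha> (P2 \<alpha>) = ?d" using pbp_sq[OF a] by simp
  note F = fm_elem[OF d(1,2) a h e v]
  show "uf (Kxi \<alpha>) v \<in> uo (PO \<alpha>)"
    "uf (P1 \<alpha>) (uf (Kxi \<alpha>) v) = uf (P1 ?d) v"
    "uf (P2 \<alpha>) (uf (Kxi \<alpha>) v) = uf (P2 \<alpha>) (uf (P2 ?d) v)" using F by (auto simp: Kxi_def)
qed

end

context ctxp begin

lemma K_dd: assumes a: "\<alpha> \<in> Ar C" "Cod C \<alpha> = B"
  shows "is_descent_data C p (PO \<alpha>, P1 \<alpha>, Kxi \<alpha>)"
proof -
  note A = pbp_parts[OF a]
  let ?d = "Cmp C p (P1 \<alpha>)"
  have d: "?d \<in> Ar C" "Cod C ?d = B" "Dom C ?d = PO \<alpha>" using A a by auto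
  note D = pbp_parts[OF d(1,2)]
  note X = Kxi_prop[OF a]
  have g: "P1 \<alpha> \<in> hom C (PO \<alpha>) E" using A by (simp add: hom_def)
  let ?dg = "diagmap C p (PO \<alpha>) (P1 \<alpha>)"
  note DG = dg_prop[OF g]
  have xa: "Kxi \<alpha> \<in> Ar C" "Dom C (Kxi \<alpha>) = PO ?d" "Cod C (Kxi \<alpha>) = PO \<alpha>" using X by (auto simp: hom_def)
  have dga: "?dg \<in> Ar C" "Dom C ?dg = PO \<alpha>" "Cod C ?dg = PO ?d" using DG by (auto simp: hom_def)
  have unit: "Cmp C (Kxi \<alpha>) ?dg = Idt C (PO \<alpha>)"
  proof (rule fext[of _ "PO \<alpha>" "PO \<alpha>"])
    show "Cmp C (Kxi \<alpha>) ?dg \<in> hom C (PO \<alpha>) (PO \<alpha>)" using xa dga by (simp add: hom_def)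
    show "Idt C (PO \<alpha>) \<in> hom C (PO \<alpha>) (PO \<alpha>)" using id_hom A by simp
    fix x assume x: "x \<in> uo (PO \<alpha>)"
    note G = dg_elem[OF g x]
    note K = Kxi_elem[OF a G(1)]
    have "uf (Kxi \<alpha>) (uf ?dg x) = x"
      by (rule pe_un[OF a K(1) x]) (simp_all add: K G)
    then show "uf (Cmp C (Kxi \<alpha>) ?dg) x = uf (Idt C (PO \<alpha>)) x"
      using uf_comp[of ?dg "Kxi \<alpha>" x] xa dga x uf_id[OF A(1) x] by simp
  qed
  let ?d2 = "Cmp C p (P1 ?d)"
  have d2: "?d2 \<in> Ar C" "Cod C ?d2 = B" "Dom C ?d2 = PO ?d" using D d by auto
  note D2 = pbp_parts[OF d2(1,2)]
  have h1: "Kxi \<alpha> \<in> hom C (Dom C ?d2) (Dom C ?d)" using X d d2 by simp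
  have e1: "Cmp C ?d (Kxi \<alpha>) = ?d2"
    using assoc[of "Kxi \<alpha>" "P1 \<alpha>" p] xa A X(2) by simp
  have h2: "P2 ?d \<in> hom C (Dom C ?d2) (Dom C ?d)" using D d d2 by (simp add: hom_def)
  have e2: "Cmp C ?d (P2 ?d) = ?d2" using pbp_sq[OF d(1,2)] by simp
  let ?F1 = "fibmap C p ?d2 ?d (Kxi \<alpha>)" and ?F2 = "fibmap C p ?d2 ?d (P2 ?d)"
  note F1 = fm_prop[OF d2(1,2) d(1,2) h1 e1] and F2 = fm_prop[OF d2(1,2) d(1,2) h2 e2]
  have f1a: "?F1 \<in> Ar C" "Dom C ?F1 = PO ?d2" "Cod C ?F1 = PO ?d" using F1 by (auto simp: hom_def)
  have f2a: "?F2 \<in> Ar C" "Dom C ?F2 = PO ?d2" "Cod C ?F2 = PO ?d" using F2 by (auto simp: hom_def)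
  have coc: "Cmp C (Kxi \<alpha>) ?F1 = Cmp C (Kxi \<alpha>) ?F2"
  proof (rule fext[of _ "PO ?d2" "PO \<alpha>"])
    show "Cmp C (Kxi \<alpha>) ?F1 \<in> hom C (PO ?d2) (PO \<alpha>)" "Cmp C (Kxi \<alpha>) ?F2 \<in> hom C (PO ?d2) (PO \<alpha>)"
      using xa f1a f2a by (auto simp: hom_def)
    fix w assume w: "w \<in> uo (PO ?d2)"
    note W = pe_sq[OF d2(1,2) w]
    note G1 = fm_elem[OF d2(1,2) d(1,2) h1 e1 w] and G2 = fm_elem[OF d2(1,2) d(1,2) h2 e2 w]
    note K1 = Kxi_elem[OF a G1(1)] and K2 = Kxi_elem[OF a G2(1)]
    have w2: "uf (P2 ?d2) w \<in> uo (PO ?d)" using W d2 by simp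
    note K3 = Kxi_elem[OF a w2]
    have "uf (Kxi \<alpha>) (uf ?F1 w) = uf (Kxi \<alpha>) (uf ?F2 w)"
      by (rule pe_un[OF a K1(1) K2(1)]) (simp_all add: K1 K2 G1 G2 K3)
    then show "uf (Cmp C (Kxi \<alpha>) ?F1) w = uf (Cmp C (Kxi \<alpha>) ?F2) w"
      using uf_comp[of ?F1 "Kxi \<alpha>" w] uf_comp[of ?F2 "Kxi \<alpha>" w] xa f1a f2a w by simp
  qed
  show ?thesis unfolding is_descent_data_def using A X unit coc g by simp
qed

end

context ctxp begin

lemma K_mor: assumes a: "\<alpha> \<in> Ar C" "Cod C \<alpha> = B" and a': "\<alpha>' \<in> Ar C" "Cod C \<alpha>' = B"
  and h: "h \<in> hom C (Dom C \<alpha>) (Dom C \<alpha>')" and e: "Cmp C \<alpha>' h = \<alpha>"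
  shows "is_descent_morphism C p (PO \<alpha>, P1 \<alpha>, Kxi \<alpha>) (fibmap C p \<alpha> \<alpha>' h) (PO \<alpha>', P1 \<alpha>', Kxi \<alpha>')"
proof -
  note A = pbp_parts[OF a] and A' = pbp_parts[OF a']
  let ?f = "fibmap C p \<alpha> \<alpha>' h"
  note F = fm_prop[OF a a' h e]
  have fa: "?f \<in> Ar C" "Dom C ?f = PO \<alpha>" "Cod C ?f = PO \<alpha>'" using F by (auto simp: hom_def)
  have ha: "h \<in> Ar C" "Dom C h = Dom C \<alpha>" "Cod C h = Dom C \<alpha>'" using h by (auto simp: hom_def)
  let ?d = "Cmp C p (P1 \<alpha>)" and ?d' = "Cmp C p (P1 \<alpha>')"
  have d: "?d \<in> Ar C" "Cod C ?d = B" "Dom C ?d = PO \<alpha>" using A a by auto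
  have d': "?d' \<in> Ar C" "Cod C ?d' = B" "Dom C ?d' = PO \<alpha>'" using A' a' by auto
  note X = Kxi_prop[OF a] and X' = Kxi_prop[OF a']
  have xa: "Kxi \<alpha> \<in> Ar C" "Dom C (Kxi \<alpha>) = PO ?d" "Cod C (Kxi \<alpha>) = PO \<alpha>" using X by (auto simp: hom_def)
  have xa': "Kxi \<alpha>' \<in> Ar C" "Dom C (Kxi \<alpha>') = PO ?d'" "Cod C (Kxi \<alpha>') = PO \<alpha>'" using X' by (auto simp: hom_def)
  have hf: "?f \<in> hom C (Dom C ?d) (Dom C ?d')" using F d d' by simp
  have ef: "Cmp C ?d' ?f = ?d" using assoc[of ?f "P1 \<alpha>'" p] fa A' F by simp
  let ?G = "fibmap C p ?d ?d' ?f"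
  note G = fm_prop[OF d(1,2) d'(1,2) hf ef]
  have ga: "?G \<in> Ar C" "Dom C ?G = PO ?d" "Cod C ?G = PO ?d'" using G by (auto simp: hom_def)
  have "Cmp C ?f (Kxi \<alpha>) = Cmp C (Kxi \<alpha>') ?G"
  proof (rule fext[of _ "PO ?d" "PO \<alpha>'"])
    show "Cmp C ?f (Kxi \<alpha>) \<in> hom C (PO ?d) (PO \<alpha>')" "Cmp C (Kxi \<alpha>') ?G \<in> hom C (PO ?d) (PO \<alpha>')"
      using fa xa xa' ga by (auto simp: hom_def)
    fix v assume v: "v \<in> uo (PO ?d)"
    note K1 = Kxi_elem[OF a v]
    note F1 = fm_elem[OF a a' h e K1(1)]
    note G1 = fm_elem[OF d(1,2) d'(1,2) hf ef v]
    note K2 = Kxi_elem[OF a' G1(1)]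
    have v2: "uf (P2 ?d) v \<in> uo (PO \<alpha>)" using pe_sq[OF d(1,2) v] d by simp
    note F2 = fm_elem[OF a a' h e v2]
    have "uf ?f (uf (Kxi \<alpha>) v) = uf (Kxi \<alpha>') (uf ?G v)"
      by (rule pe_un[OF a' F1(1) K2(1)]) (simp_all add: K1 F1 G1 K2 F2)
    then show "uf (Cmp C ?f (Kxi \<alpha>)) v = uf (Cmp C (Kxi \<alpha>') ?G) v"
      using uf_comp[of "Kxi \<alpha>" ?f v] uf_comp[of ?G "Kxi \<alpha>'" v] fa xa xa' ga v by simp
  qed
  then show ?thesis unfolding is_descent_morphism_def using F by simp
qed

lemma slice_ob: "X \<in> Ob (Slice C B) \<longleftrightarrow> fst X \<in> Ob C \<and> snd X \<in> hom C (fst X) B"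
  by (cases X) (simp add: Slice_simps)

lemma K_functor: "is_functor (Slice C B) (Des C p) (Kp C p)"
proof -
  have ob: "K_obj C p X \<in> Ob (Des C p)" if X: "X \<in> Ob (Slice C B)" for X
  proof -
    obtain A \<alpha> where X': "X = (A, \<alpha>)" by (cases X)
    have "\<alpha> \<in> Ar C" "Cod C \<alpha> = B" using X X' by (auto simp: Slice_simps hom_def)
    then show ?thesis using K_dd X' by (simp add: K_obj_eq Des_simps)
  qed
  have ar: "snd (Kp C p) f \<in> hom (Des C p) (fst (Kp C p) (Dom (Slice C B) f)) (fst (Kp C p) (Cod (Slice C B) f))"
    if f: "f \<in> Ar (Slice C B)" for f
  proof -
    obtain A \<alpha> h A' \<alpha>' where f': "f = ((A, \<alpha>), h, (A', \<alpha>'))" by (cases f) auto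
    have a: "\<alpha> \<in> Ar C" "Cod C \<alpha> = B" "Dom C \<alpha> = A" and a': "\<alpha>' \<in> Ar C" "Cod C \<alpha>' = B" "Dom C \<alpha>' = A'"
      and h: "h \<in> hom C A A'" and e: "Cmp C \<alpha>' h = \<alpha>" using f f' by (auto simp: Slice_simps hom_def)
    have h': "h \<in> hom C (Dom C \<alpha>) (Dom C \<alpha>')" using h a a' by simp
    show ?thesis using f' K_dd[OF a(1,2)] K_dd[OF a'(1,2)] K_mor[OF a(1,2) a'(1,2) h' e]
      by (simp add: Kp_def K_obj_eq hom_def Des_simps Slice_simps)
  qed
  have idt: "snd (Kp C p) (Idt (Slice C B) X) = Idt (Des C p) (fst (Kp C p) X)" if X: "X \<in> Ob (Slice C B)" for X
  proof -
    obtain A \<alpha> where X': "X = (A, \<alpha>)" by (cases X)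
    have a: "\<alpha> \<in> Ar C" "Cod C \<alpha> = B" "Dom C \<alpha> = A" "A \<in> Ob C" using X X' by (auto simp: Slice_simps hom_def)
    note Aa = pbp_parts[OF a(1,2)]
    have "fibmap C p \<alpha> \<alpha> (Idt C A) = Idt C (PO \<alpha>)"
    proof (rule fm_unique[OF a(1,2) a(1,2)])
      show "Idt C A \<in> hom C (Dom C \<alpha>) (Dom C \<alpha>)" using id_hom a by simp
      show "Cmp C \<alpha> (Idt C A) = \<alpha>" using id_r[of \<alpha>] a by simp
      show "Idt C (PO \<alpha>) \<in> hom C (PO \<alpha>) (PO \<alpha>)" using id_hom Aa by simp
      show "Cmp C (P1 \<alpha>) (Idt C (PO \<alpha>)) = P1 \<alpha>" using id_r[of "P1 \<alpha>"] Aa by simp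
      show "Cmp C (P2 \<alpha>) (Idt C (PO \<alpha>)) = Cmp C (Idt C A) (P2 \<alpha>)"
        using id_r[of "P2 \<alpha>"] id_l[of "P2 \<alpha>"] Aa a by simp
    qed
    then show ?thesis using X' by (simp add: Kp_def K_obj_eq Slice_simps Des_simps)
  qed
  have cmp: "snd (Kp C p) (Cmp (Slice C B) g f) = Cmp (Des C p) (snd (Kp C p) g) (snd (Kp C p) f)"
    if f: "f \<in> Ar (Slice C B)" and g: "g \<in> Ar (Slice C B)" and fg: "Cod (Slice C B) f = Dom (Slice C B) g" for f g
  proof -
    obtain A \<alpha> h A' \<alpha>' where f': "f = ((A, \<alpha>), h, (A', \<alpha>'))" by (cases f) auto
    obtain k A'' \<alpha>'' where g': "g = ((A', \<alpha>'), k, (A'', \<alpha>''))" using fg f' by (cases g) (auto simp: Slice_simps)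
    have a: "\<alpha> \<in> Ar C" "Cod C \<alpha> = B" "Dom C \<alpha> = A" and a': "\<alpha>' \<in> Ar C" "Cod C \<alpha>' = B" "Dom C \<alpha>' = A'"
      and a'': "\<alpha>'' \<in> Ar C" "Cod C \<alpha>'' = B" "Dom C \<alpha>'' = A''"
      and h: "h \<in> hom C A A'" and e: "Cmp C \<alpha>' h = \<alpha>" and k: "k \<in> hom C A' A''" and e': "Cmp C \<alpha>'' k = \<alpha>'"
      using f f' g g' by (auto simp: Slice_simps hom_def)
    have ha: "h \<in> Ar C" "Dom C h = A" "Cod C h = A'" "k \<in> Ar C" "Dom C k = A'" "Cod C k = A''"
      using h k by (auto simp: hom_def)
    have h': "h \<in> hom C (Dom C \<alpha>) (Dom C \<alpha>')" using h a a' by simp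
    have k': "k \<in> hom C (Dom C \<alpha>') (Dom C \<alpha>'')" using k a' a'' by simp
    have kh: "Cmp C k h \<in> hom C (Dom C \<alpha>) (Dom C \<alpha>'')" using ha a a'' by (simp add: hom_def)
    have ekh: "Cmp C \<alpha>'' (Cmp C k h) = \<alpha>" using assoc[of h k \<alpha>''] ha a'' e e' by simp
    note F = fm_prop[OF a(1,2) a'(1,2) h' e] and G = fm_prop[OF a'(1,2) a''(1,2) k' e']
    let ?f = "fibmap C p \<alpha> \<alpha>' h" and ?g = "fibmap C p \<alpha>' \<alpha>'' k"
    have fa: "?f \<in> Ar C" "Dom C ?f = PO \<alpha>" "Cod C ?f = PO \<alpha>'" using F by (auto simp: hom_def)
    have gaa: "?g \<in> Ar C" "Dom C ?g = PO \<alpha>'" "Cod C ?g = PO \<alpha>''" using G by (auto simp: hom_def)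
    note A = pbp_parts[OF a(1,2)] and A' = pbp_parts[OF a'(1,2)] and A'' = pbp_parts[OF a''(1,2)]
    have "fibmap C p \<alpha> \<alpha>'' (Cmp C k h) = Cmp C ?g ?f"
    proof (rule fm_unique[OF a(1,2) a''(1,2) kh ekh])
      show "Cmp C ?g ?f \<in> hom C (PO \<alpha>) (PO \<alpha>'')" using fa gaa by (simp add: hom_def)
      show "Cmp C (P1 \<alpha>'') (Cmp C ?g ?f) = P1 \<alpha>" using assoc[of ?f ?g "P1 \<alpha>''"] fa gaa A'' F G by simp
      have "Cmp C (P2 \<alpha>'') (Cmp C ?g ?f) = Cmp C (Cmp C k (P2 \<alpha>')) ?f"
        using assoc[of ?f ?g "P2 \<alpha>''"] fa gaa A'' G by simp
      also have "\<dots> = Cmp C k (Cmp C h (P2 \<alpha>))" using assoc[of ?f "P2 \<alpha>'" k] fa A' ha a' F by simp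
      also have "\<dots> = Cmp C (Cmp C k h) (P2 \<alpha>)" using assoc[of "P2 \<alpha>" h k] A ha a by simp
      finally show "Cmp C (P2 \<alpha>'') (Cmp C ?g ?f) = Cmp C (Cmp C k h) (P2 \<alpha>)" .
    qed
    then show ?thesis using f' g' by (simp add: Kp_def K_obj_eq Slice_simps Des_simps)
  qed
  have "fst (Kp C p) = K_obj C p" by (simp add: Kp_def)
  then show ?thesis unfolding is_functor_def using ob ar idt cmp by auto
qed

end

context ctxp begin

lemma P2_regepi: "a \<in> Ar C \<Longrightarrow> Cod C a = B \<Longrightarrow> regular_epi C (P2 a)"
  using P2_in_P Preg by blast

lemma K_full: assumes X: "X \<in> Ob (Slice C B)" and Y: "Y \<in> Ob (Slice C B)"
  and g: "g \<in> hom (Des C p) (fst (Kp C p) X) (fst (Kp C p) Y)"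
  shows "\<exists>!f. f \<in> hom (Slice C B) X Y \<and> snd (Kp C p) f = g"
proof -
  obtain A \<alpha> where X': "X = (A, \<alpha>)" by (cases X)
  obtain A' \<alpha>' where Y': "Y = (A', \<alpha>')" by (cases Y)
  have a: "\<alpha> \<in> Ar C" "Cod C \<alpha> = B" "Dom C \<alpha> = A" "A \<in> Ob C" using X X' by (auto simp: Slice_simps hom_def)
  have a': "\<alpha>' \<in> Ar C" "Cod C \<alpha>' = B" "Dom C \<alpha>' = A'" "A' \<in> Ob C" using Y Y' by (auto simp: Slice_simps hom_def)
  have fK: "fst (Kp C p) = K_obj C p" by (simp add: Kp_def)
  obtain \<phi> where g': "g = ((PO \<alpha>, P1 \<alpha>, Kxi \<alpha>), \<phi>, (PO \<alpha>', P1 \<alpha>', Kxi \<alpha>'))"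
    and dm: "is_descent_morphism C p (PO \<alpha>, P1 \<alpha>, Kxi \<alpha>) \<phi> (PO \<alpha>', P1 \<alpha>', Kxi \<alpha>')"
    using g X' Y' fK by (cases g) (auto simp: hom_def Des_simps K_obj_eq)
  let ?d = "Cmp C p (P1 \<alpha>)" and ?d' = "Cmp C p (P1 \<alpha>')"
  note A = pbp_parts[OF a(1,2)] and A' = pbp_parts[OF a'(1,2)]
  have d: "?d \<in> Ar C" "Cod C ?d = B" "Dom C ?d = PO \<alpha>" using A a by auto
  have d': "?d' \<in> Ar C" "Cod C ?d' = B" "Dom C ?d' = PO \<alpha>'" using A' a' by auto
  have ph: "\<phi> \<in> hom C (PO \<alpha>) (PO \<alpha>')" "Cmp C (P1 \<alpha>') \<phi> = P1 \<alpha>"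
    and phx: "Cmp C \<phi> (Kxi \<alpha>) = Cmp C (Kxi \<alpha>') (fibmap C p ?d ?d' \<phi>)"
    using dm by (auto simp: is_descent_morphism_def)
  have pha: "\<phi> \<in> Ar C" "Dom C \<phi> = PO \<alpha>" "Cod C \<phi> = PO \<alpha>'" using ph by (auto simp: hom_def)
  have hf: "\<phi> \<in> hom C (Dom C ?d) (Dom C ?d')" using ph d d' by simp
  have ef: "Cmp C ?d' \<phi> = ?d" using assoc[of \<phi> "P1 \<alpha>'" p] pha A' ph by simp
  let ?G = "fibmap C p ?d ?d' \<phi>"
  note G = fm_prop[OF d(1,2) d'(1,2) hf ef]
  have ga: "?G \<in> Ar C" "Dom C ?G = PO ?d" "Cod C ?G = PO ?d'" using G by (auto simp: hom_def)
  note XP = Kxi_prop[OF a(1,2)] and XP' = Kxi_prop[OF a'(1,2)]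
  have xa: "Kxi \<alpha> \<in> Ar C" "Dom C (Kxi \<alpha>) = PO ?d" "Cod C (Kxi \<alpha>) = PO \<alpha>" using XP by (auto simp: hom_def)
  have xa': "Kxi \<alpha>' \<in> Ar C" "Dom C (Kxi \<alpha>') = PO ?d'" "Cod C (Kxi \<alpha>') = PO \<alpha>'" using XP' by (auto simp: hom_def)
  have phx_el: "uf \<phi> (uf (Kxi \<alpha>) v) = uf (Kxi \<alpha>') (uf ?G v)" if v: "v \<in> uo (PO ?d)" for v
    using uf_comp[of "Kxi \<alpha>" \<phi> v] uf_comp[of ?G "Kxi \<alpha>'" v] phx xa xa' ga pha v by metis
  let ?k = "Cmp C (P2 \<alpha>') \<phi>"
  have ka: "?k \<in> Ar C" "Dom C ?k = Dom C (P2 \<alpha>)" "Cod C ?k = A'" using pha A A' a' by auto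
  have "\<exists>u\<in>hom C (Cod C (P2 \<alpha>)) (Cod C ?k). Cmp C u (P2 \<alpha>) = ?k"
  proof (rule regepi_desc[OF P2_regepi[OF a(1,2)] ka(1,2)])
    fix x y assume x: "x \<in> uo (Dom C (P2 \<alpha>))" and y: "y \<in> uo (Dom C (P2 \<alpha>))"
      and xy: "uf (P2 \<alpha>) x = uf (P2 \<alpha>) y"
    have x': "x \<in> uo (PO \<alpha>)" and y': "y \<in> uo (PO \<alpha>)" using x y A by auto
    note Sx = pe_sq[OF a(1,2) x'] and Sy = pe_sq[OF a(1,2) y']
    have "uf ?d y = uf p (uf (P1 \<alpha>) y)" using uf_comp[of "P1 \<alpha>" p y] A y' by simp
    then have eq: "uf p (uf (P1 \<alpha>) x) = uf ?d y" using Sx Sy xy by simp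
    obtain v where v: "v \<in> uo (PO ?d)" "uf (P1 ?d) v = uf (P1 \<alpha>) x" "uf (P2 ?d) v = y"
      using pe_ex[OF d(1,2) Sx(1) _ eq] y' d by auto
    note K = Kxi_elem[OF a(1,2) v(1)]
    have kv: "uf (Kxi \<alpha>) v = x" by (rule pe_un[OF a(1,2) K(1) x']) (simp_all add: K v xy)
    note Gv = fm_elem[OF d(1,2) d'(1,2) hf ef v(1)]
    note K' = Kxi_elem[OF a'(1,2) Gv(1)]
    have "uf (P2 \<alpha>') (uf \<phi> x) = uf (P2 \<alpha>') (uf \<phi> y)"
      using phx_el[OF v(1)] kv K' Gv v by simp
    then show "uf ?k x = uf ?k y"
      using uf_comp[of \<phi> "P2 \<alpha>'" x] uf_comp[of \<phi> "P2 \<alpha>'" y] pha A' x' y' by simp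
  qed
  then obtain h where h: "h \<in> hom C A A'" and hk: "Cmp C h (P2 \<alpha>) = ?k" using A a ka by auto
  have ha: "h \<in> Ar C" "Dom C h = A" "Cod C h = A'" using h by (auto simp: hom_def)
  have eh: "Cmp C \<alpha>' h = \<alpha>"
  proof (rule regepi_epi[OF P2_regepi[OF a(1,2)]])
    show "Cmp C \<alpha>' h \<in> hom C (Cod C (P2 \<alpha>)) B" "\<alpha> \<in> hom C (Cod C (P2 \<alpha>)) B" using ha a a' A by (auto simp: hom_def)
    have "Cmp C (Cmp C \<alpha>' h) (P2 \<alpha>) = Cmp C \<alpha>' ?k" using assoc[of "P2 \<alpha>" h \<alpha>'] A ha a a' hk by simp
    also have "\<dots> = Cmp C (Cmp C \<alpha>' (P2 \<alpha>')) \<phi>" using assoc[of \<phi> "P2 \<alpha>'" \<alpha>'] A' pha a' by simp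
    also have "\<dots> = Cmp C (Cmp C p (P1 \<alpha>')) \<phi>" using pbp_sq[OF a'(1,2)] by simp
    also have "\<dots> = Cmp C p (P1 \<alpha>)" using assoc[of \<phi> "P1 \<alpha>'" p] A' pha ph by simp
    also have "\<dots> = Cmp C \<alpha> (P2 \<alpha>)" using pbp_sq[OF a(1,2)] by simp
    finally show "Cmp C (Cmp C \<alpha>' h) (P2 \<alpha>) = Cmp C \<alpha> (P2 \<alpha>)" .
  qed
  have h': "h \<in> hom C (Dom C \<alpha>) (Dom C \<alpha>')" using h a a' by simp
  have fm: "fibmap C p \<alpha> \<alpha>' h = \<phi>"
    by (rule fm_unique[OF a(1,2) a'(1,2) h' eh ph(1) ph(2)]) (simp add: hk)
  let ?f = "(X, h, Y)"
  have f1: "?f \<in> hom (Slice C B) X Y" using X Y h eh X' Y' by (simp add: hom_def Slice_simps)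
  have f2: "snd (Kp C p) ?f = g" using fm g' X' Y' by (simp add: Kp_def K_obj_eq)
  have un: "f = ?f" if f: "f \<in> hom (Slice C B) X Y" "snd (Kp C p) f = g" for f
  proof -
    obtain h2 where f': "f = (X, h2, Y)" and h2: "h2 \<in> hom C A A'" "Cmp C \<alpha>' h2 = \<alpha>"
      using f(1) X' Y' by (cases f) (auto simp: hom_def Slice_simps)
    have fm2: "fibmap C p \<alpha> \<alpha>' h2 = \<phi>" using f(2) f' g' X' Y' by (simp add: Kp_def K_obj_eq)
    have h2': "h2 \<in> hom C (Dom C \<alpha>) (Dom C \<alpha>')" using h2 a a' by simp
    have "Cmp C h2 (P2 \<alpha>) = ?k" using fm_prop[OF a(1,2) a'(1,2) h2' h2(2)] fm2 by simp
    then have "h2 = h" using regepi_epi[OF P2_regepi[OF a(1,2)], of h2 A' h] h h2 hk A a by simp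
    then show ?thesis using f' by simp
  qed
  show ?thesis using f1 f2 un by blast
qed

end

lemma coeq_setD:
  assumes co: "is_coequalizer SetCat (R, f, X) (R, g, X) (X, h, Z)"
  shows "f \<in> R \<rightarrow>\<^sub>E X" "g \<in> R \<rightarrow>\<^sub>E X" "h \<in> X \<rightarrow>\<^sub>E Z"
    "\<And>k. k \<in> Ar SetCat \<Longrightarrow> Dom SetCat k = X \<Longrightarrow> Cmp SetCat k (R, f, X) = Cmp SetCat k (R, g, X) \<Longrightarrow>
        \<exists>!u. u \<in> hom SetCat Z (snd (snd k)) \<and> Cmp SetCat u (X, h, Z) = k"
proof -
  show "f \<in> R \<rightarrow>\<^sub>E X" "g \<in> R \<rightarrow>\<^sub>E X" "h \<in> X \<rightarrow>\<^sub>E Z"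
    using co unfolding is_coequalizer_def by (auto simp: SetCat_simps)
  have "\<forall>k\<in>Ar SetCat. Dom SetCat k = Cod SetCat (R, f, X) \<and> Cmp SetCat k (R, f, X) = Cmp SetCat k (R, g, X) \<longrightarrow>
        (\<exists>!u. u \<in> hom SetCat (Cod SetCat (X, h, Z)) (Cod SetCat k) \<and> Cmp SetCat u (X, h, Z) = k)"
    using co unfolding is_coequalizer_def by blast
  then show "\<And>k. k \<in> Ar SetCat \<Longrightarrow> Dom SetCat k = X \<Longrightarrow> Cmp SetCat k (R, f, X) = Cmp SetCat k (R, g, X) \<Longrightarrow>
        \<exists>!u. u \<in> hom SetCat Z (snd (snd k)) \<and> Cmp SetCat u (X, h, Z) = k"
    unfolding SetCat_simps(4) by simp
qed

lemma set_coeq_surj: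
  assumes co: "is_coequalizer SetCat (R, f, X) (R, g, X) (X, h, Z)" and z: "z \<in> Z"
  shows "\<exists>x\<in>X. h x = z"
proof (rule ccontr)
  assume nz: "\<not> (\<exists>x\<in>X. h x = z)"
  note D = coeq_setD[OF co]
  note un = D(4)
  show False
  proof (cases "\<exists>u0 u1 :: 'a. u0 \<noteq> u1")
    case True
    then obtain u0 u1 :: 'a where u01: "u0 \<noteq> u1" by blast
    define K where "K = {u0, u1}"
    define k where "k = (X, \<lambda>x\<in>X. u0, K)"
    have k: "k \<in> Ar SetCat" "Dom SetCat k = X" using K_def by (auto simp: k_def SetCat_simps)
    have "Cmp SetCat k (R, f, X) = Cmp SetCat k (R, g, X)"
      using D(1,2) by (auto simp: k_def SetCat_simps compose_def fun_eq_iff)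
    note U = un[OF k this]
    define m1 where "m1 = (Z, \<lambda>w\<in>Z. u0, K)"
    define m2 where "m2 = (Z, \<lambda>w\<in>Z. if w \<in> h ` X then u0 else u1, K)"
    have "m1 \<in> hom SetCat Z (snd (snd k)) \<and> Cmp SetCat m1 (X, h, Z) = k"
      using D(3) K_def by (auto simp: m1_def k_def SetCat_simps SetCat_hom compose_def fun_eq_iff)
    moreover have "m2 \<in> hom SetCat Z (snd (snd k)) \<and> Cmp SetCat m2 (X, h, Z) = k"
      using D(3) K_def by (auto simp: m2_def k_def SetCat_simps SetCat_hom compose_def fun_eq_iff)
    ultimately have "m1 = m2" using U by blast
    then have "(\<lambda>w\<in>Z. u0) z = (\<lambda>w\<in>Z. if w \<in> h ` X then u0 else u1) z" by (simp add: m1_def m2_def)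
    moreover have "z \<notin> h ` X" using nz by auto
    ultimately show False using z u01 by simp
  next
    case False
    then have single: "\<And>a b :: 'a. a = b" by blast
    show False
    proof (cases "X = {}")
      case True
      define k where "k = (X, \<lambda>x\<in>X. (undefined :: 'a), {} :: 'a set)"
      have k: "k \<in> Ar SetCat" "Dom SetCat k = X" using True by (auto simp: k_def SetCat_simps)
      have "Cmp SetCat k (R, f, X) = Cmp SetCat k (R, g, X)"
        using D(1,2) True by (auto simp: k_def SetCat_simps compose_def fun_eq_iff)
      then obtain u where u: "u \<in> hom SetCat Z {}" using D(4)[OF k] by (auto simp: k_def SetCat_simps)
      then show False using z by (cases u) (auto simp: SetCat_hom)
    next
      case False
      then obtain x where "x \<in> X" by blast
      then show False using nz single by blast
    qed
  qed
qed

lemma set_coeq_ker: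
  assumes co: "is_coequalizer SetCat (R, f, X) (R, g, X) (X, h, Z)"
    and refl: "\<And>x. x \<in> X \<Longrightarrow> \<exists>r\<in>R. f r = x \<and> g r = x"
    and sym: "\<And>r. r \<in> R \<Longrightarrow> \<exists>r'\<in>R. f r' = g r \<and> g r' = f r"
    and trans: "\<And>r r'. r \<in> R \<Longrightarrow> r' \<in> R \<Longrightarrow> g r = f r' \<Longrightarrow> \<exists>r''\<in>R. f r'' = f r \<and> g r'' = g r'"
    and x: "x \<in> X" and y: "y \<in> X" and e: "h x = h y"
  shows "\<exists>r\<in>R. f r = x \<and> g r = y"
proof (cases "\<exists>u0 u1 :: 'a. u0 \<noteq> u1")
  case True
  note D = coeq_setD[OF co]
  then obtain u0 u1 :: 'a where u01: "u0 \<noteq> u1" using True by blast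
  define K where "K = {u0, u1}"
  define kf where "kf = (\<lambda>w\<in>X. if \<exists>r\<in>R. f r = x \<and> g r = w then u0 else u1)"
  define k where "k = (X, kf, K)"
  have k: "k \<in> Ar SetCat" "Dom SetCat k = X" using K_def by (auto simp: k_def kf_def SetCat_simps)
  have iff: "(\<exists>r1\<in>R. f r1 = x \<and> g r1 = f r) \<longleftrightarrow> (\<exists>r2\<in>R. f r2 = x \<and> g r2 = g r)" if r: "r \<in> R" for r
  proof
    assume "\<exists>r1\<in>R. f r1 = x \<and> g r1 = f r"
    then obtain r1 where "r1 \<in> R" "f r1 = x" "g r1 = f r" by blast
    then show "\<exists>r2\<in>R. f r2 = x \<and> g r2 = g r" using trans[of r1 r] r by metis
  next
    assume "\<exists>r2\<in>R. f r2 = x \<and> g r2 = g r"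
    then obtain r2 where r2: "r2 \<in> R" "f r2 = x" "g r2 = g r" by blast
    obtain r' where r': "r' \<in> R" "f r' = g r" "g r' = f r" using sym[OF r] by blast
    show "\<exists>r1\<in>R. f r1 = x \<and> g r1 = f r" using trans[of r2 r'] r2 r' by metis
  qed
  have "Cmp SetCat k (R, f, X) = Cmp SetCat k (R, g, X)"
    using D(1,2) iff by (auto simp: k_def kf_def SetCat_simps compose_def fun_eq_iff)
  then obtain u where u: "u \<in> hom SetCat Z K" "Cmp SetCat u (X, h, Z) = k"
    using D(4)[OF k] by (auto simp: k_def SetCat_simps)
  obtain u' where u': "u = (Z, u', K)" using u(1) by (cases u) (auto simp: SetCat_hom)
  have "compose X u' h = kf" using u(2) u' by (simp add: k_def SetCat_simps)
  then have "u' (h x) = kf x" "u' (h y) = kf y" using x y fun_cong[of "compose X u' h" kf x]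
      fun_cong[of "compose X u' h" kf y] by (auto simp: compose_def)
  then have "kf y = kf x" using e by simp
  moreover have "kf x = u0" using refl[OF x] x by (auto simp: kf_def)
  ultimately show ?thesis using y u01 by (auto simp: kf_def split: if_splits)
next
  case False
  then have "x = y" by blast
  then show ?thesis using refl[OF x] by blast
qed

lemma set_pb_intro:
  assumes a: "a \<in> X \<rightarrow>\<^sub>E Z" and b: "b \<in> Y \<rightarrow>\<^sub>E Z" and p1: "p1 \<in> PP \<rightarrow>\<^sub>E X" and p2: "p2 \<in> PP \<rightarrow>\<^sub>E Y"
    and sq: "\<And>z. z \<in> PP \<Longrightarrow> a (p1 z) = b (p2 z)"
    and inj: "\<And>z z'. z \<in> PP \<Longrightarrow> z' \<in> PP \<Longrightarrow> p1 z = p1 z' \<Longrightarrow> p2 z = p2 z' \<Longrightarrow> z = z'"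
    and ex: "\<And>x y. x \<in> X \<Longrightarrow> y \<in> Y \<Longrightarrow> a x = b y \<Longrightarrow> \<exists>z\<in>PP. p1 z = x \<and> p2 z = y"
  shows "is_pullback SetCat (X, a, Z) (Y, b, Z) PP (PP, p1, X) (PP, p2, Y)"
proof -
  have c: "Cmp SetCat (X, a, Z) (PP, p1, X) = Cmp SetCat (Y, b, Z) (PP, p2, Y)"
    using sq by (auto simp: SetCat_simps compose_def fun_eq_iff)
  have univ: "\<exists>!u. u \<in> hom SetCat Q PP \<and> Cmp SetCat (PP, p1, X) u = q1 \<and> Cmp SetCat (PP, p2, Y) u = q2"
    if q1: "q1 \<in> hom SetCat Q X" and q2: "q2 \<in> hom SetCat Q Y"
      and qc: "Cmp SetCat (X, a, Z) q1 = Cmp SetCat (Y, b, Z) q2" for Q q1 q2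
  proof -
    obtain f1 where f1: "q1 = (Q, f1, X)" "f1 \<in> Q \<rightarrow>\<^sub>E X" using q1 by (cases q1) (auto simp: SetCat_hom)
    obtain f2 where f2: "q2 = (Q, f2, Y)" "f2 \<in> Q \<rightarrow>\<^sub>E Y" using q2 by (cases q2) (auto simp: SetCat_hom)
    have cq: "compose Q a f1 = compose Q b f2" using qc f1 f2 by (simp add: SetCat_simps)
    have ab: "a (f1 w) = b (f2 w)" if "w \<in> Q" for w
    proof -
      have "compose Q a f1 w = compose Q b f2 w" using cq by simp
      then show ?thesis using that by (simp add: compose_def)
    qed
    have exw: "\<exists>z. z \<in> PP \<and> p1 z = f1 w \<and> p2 z = f2 w" if w: "w \<in> Q" for w
      using ex[of "f1 w" "f2 w"] f1(2) f2(2) ab[OF w] w by auto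
    define uf where "uf = (\<lambda>w\<in>Q. SOME z. z \<in> PP \<and> p1 z = f1 w \<and> p2 z = f2 w)"
    have ufw: "uf w \<in> PP \<and> p1 (uf w) = f1 w \<and> p2 (uf w) = f2 w" if w: "w \<in> Q" for w
      using someI_ex[OF exw[OF w]] w by (simp add: uf_def)
    let ?u = "(Q, uf, PP)"
    have u1: "?u \<in> hom SetCat Q PP" using ufw by (auto simp: SetCat_hom uf_def)
    have u2: "Cmp SetCat (PP, p1, X) ?u = q1" using ufw f1 by (auto simp: SetCat_simps compose_def fun_eq_iff)
    have u3: "Cmp SetCat (PP, p2, Y) ?u = q2" using ufw f2 by (auto simp: SetCat_simps compose_def fun_eq_iff)
    have uniq: "v = ?u" if v: "v \<in> hom SetCat Q PP" "Cmp SetCat (PP, p1, X) v = q1" "Cmp SetCat (PP, p2, Y) v = q2" for v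
    proof -
      obtain vf where vf: "v = (Q, vf, PP)" "vf \<in> Q \<rightarrow>\<^sub>E PP" using v(1) by (cases v) (auto simp: SetCat_hom)
      have "compose Q p1 vf = f1" "compose Q p2 vf = f2" using v(2,3) vf f1 f2 by (auto simp: SetCat_simps)
      then have e1: "p1 (vf w) = f1 w" and e2: "p2 (vf w) = f2 w" if "w \<in> Q" for w
        using that by (auto simp: compose_def fun_eq_iff dest!: spec[of _ w])
      have "vf = uf"
      proof
        fix w show "vf w = uf w"
        proof (cases "w \<in> Q")
          case True
          then show ?thesis using inj[of "vf w" "uf w"] vf(2) ufw[OF True] e1[OF True] e2[OF True] by auto
        next
          case False
          then show ?thesis using vf(2) by (auto simp: uf_def)
        qed
      qed
      then show ?thesis using vf by simp
    qed
    show ?thesis using u1 u2 u3 uniq by blast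
  qed
  show ?thesis unfolding is_pullback_def using a b p1 p2 c univ by (auto simp: SetCat_simps SetCat_hom)
qed

lemma equiv_kernel: "equiv A {(a, b). a \<in> A \<and> b \<in> A \<and> F a = F b}"
  by (auto simp: equiv_def refl_on_def sym_def trans_def)

context ctx begin

lemma U_eq: "f \<in> Ar C \<Longrightarrow> snd U f = (uo (Dom C f), uf f, uo (Cod C f))"
  using U_arr by blast

lemma coeq_U: assumes er: "is_equiv_rel C f g" and co: "is_coequalizer C f g h"
  shows "is_coequalizer SetCat (uo (Dom C f), uf f, uo (Cod C f)) (uo (Dom C f), uf g, uo (Cod C f))
     (uo (Cod C f), uf h, uo (Cod C h))"
proof -
  have a: "f \<in> Ar C" "g \<in> Ar C" "h \<in> Ar C" "Dom C g = Dom C f" "Cod C g = Cod C f" "Dom C h = Cod C f"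
    using co by (auto simp: is_coequalizer_def)
  have "is_coequalizer SetCat (snd U f) (snd U g) (snd U h)" using pcq er co
    by (simp add: preserves_coeq_equiv_rels_def)
  then show ?thesis using U_eq[OF a(1)] U_eq[OF a(2)] U_eq[OF a(3)] a(4-6) by metis
qed

lemma coeq_surj: assumes er: "is_equiv_rel C f g" and co: "is_coequalizer C f g h" and y: "y \<in> uo (Cod C h)"
  shows "\<exists>x\<in>uo (Dom C h). uf h x = y"
proof -
  have "Dom C h = Cod C f" using co by (auto simp: is_coequalizer_def)
  then show ?thesis using set_coeq_surj[OF coeq_U[OF er co] y] by simp
qed

lemma kp_equiv: assumes h: "h \<in> Ar C"
  shows "is_equiv_rel C (pb1 C h h) (pb2 C h h)"
proof -
  note pb = pbk_ok[OF h h refl]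
  note pp = pb_parts[OF pb]
  let ?K = "pbO C h h" and ?k1 = "pb1 C h h" and ?k2 = "pb2 C h h"
  have mono: "x = y" if x: "x \<in> Ar C" and y: "y \<in> Ar C" and c: "Cod C x = Dom C ?k1" "Cod C y = Dom C ?k1"
    "Dom C x = Dom C y" and e: "Cmp C ?k1 x = Cmp C ?k1 y" "Cmp C ?k2 x = Cmp C ?k2 y" for x y
  proof (rule fext[of _ "Dom C x" ?K])
    show "x \<in> hom C (Dom C x) ?K" "y \<in> hom C (Dom C x) ?K" using x y c pp by (auto simp: hom_def)
    fix t assume t: "t \<in> uo (Dom C x)"
    show "uf x t = uf y t"
    proof (rule pb_un[OF pb])
      show "uf x t \<in> uo ?K" "uf y t \<in> uo ?K" using uf_in[of x t] uf_in[of y t] x y c t pp by auto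
      show "uf ?k1 (uf x t) = uf ?k1 (uf y t)" using uf_comp[of x ?k1 t] uf_comp[of y ?k1 t] x y c t pp e by simp
      show "uf ?k2 (uf x t) = uf ?k2 (uf y t)" using uf_comp[of x ?k2 t] uf_comp[of y ?k2 t] x y c t pp e by simp
    qed
  qed
  have releq: "{(Cmp C ?k1 x, Cmp C ?k2 x) | x. x \<in> hom C T ?K} =
      {(a, b). a \<in> hom C T (Dom C h) \<and> b \<in> hom C T (Dom C h) \<and> Cmp C h a = Cmp C h b}" if T: "T \<in> Ob C" for T
  proof safe
    fix x assume x: "x \<in> hom C T ?K"
    have xa: "x \<in> Ar C" "Dom C x = T" "Cod C x = ?K" using x by (auto simp: hom_def)
    show "Cmp C ?k1 x \<in> hom C T (Dom C h)" "Cmp C ?k2 x \<in> hom C T (Dom C h)" using xa pp by (auto simp: hom_def)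
    show "Cmp C h (Cmp C ?k1 x) = Cmp C h (Cmp C ?k2 x)"
      using assoc[of x ?k1 h] assoc[of x ?k2 h] xa pp by simp
  next
    fix a b assume a: "a \<in> hom C T (Dom C h)" and b: "b \<in> hom C T (Dom C h)" and e: "Cmp C h a = Cmp C h b"
    obtain x where "x \<in> hom C T ?K" "Cmp C ?k1 x = a" "Cmp C ?k2 x = b"
      using pb_univ[OF pb a b e] by blast
    then show "\<exists>x. (a, b) = (Cmp C ?k1 x, Cmp C ?k2 x) \<and> x \<in> hom C T ?K" by auto
  qed
  show ?thesis unfolding is_equiv_rel_def using pp mono releq equiv_kernel by auto
qed

lemma kp_coeq: assumes h: "regular_epi C h"
  shows "is_coequalizer C (pb1 C h h) (pb2 C h h) h"
proof -
  have ha: "h \<in> Ar C" using regepi_ar[OF h] .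
  note pb = pbk_ok[OF ha ha refl]
  note pp = pb_parts[OF pb]
  let ?K = "pbO C h h" and ?k1 = "pb1 C h h" and ?k2 = "pb2 C h h"
  have un: "\<exists>!u. u \<in> hom C (Cod C h) (Cod C k) \<and> Cmp C u h = k"
    if k: "k \<in> Ar C" "Dom C k = Cod C ?k1" "Cmp C k ?k1 = Cmp C k ?k2" for k
  proof -
    have "\<exists>u\<in>hom C (Cod C h) (Cod C k). Cmp C u h = k"
    proof (rule regepi_desc[OF h k(1)])
      show "Dom C k = Dom C h" using k pp by simp
      fix x y assume x: "x \<in> uo (Dom C h)" and y: "y \<in> uo (Dom C h)" and e: "uf h x = uf h y"
      obtain z where z: "z \<in> uo ?K" "uf ?k1 z = x" "uf ?k2 z = y" using pb_ex[OF pb x y e] by blast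
      have "uf (Cmp C k ?k1) z = uf (Cmp C k ?k2) z" using k(3) by simp
      then show "uf k x = uf k y" using uf_comp[of ?k1 k z] uf_comp[of ?k2 k z] k pp z by simp
    qed
    then obtain u where u: "u \<in> hom C (Cod C h) (Cod C k)" "Cmp C u h = k" by blast
    have "v = u" if "v \<in> hom C (Cod C h) (Cod C k)" "Cmp C v h = k" for v
      using regepi_epi[OF h that(1) u(1)] that(2) u(2) by simp
    then show ?thesis using u by blast
  qed
  show ?thesis unfolding is_coequalizer_def using pp ha un by auto
qed

lemma regepi_surj: assumes h: "regular_epi C h" and y: "y \<in> uo (Cod C h)"
  shows "\<exists>x\<in>uo (Dom C h). uf h x = y"
  using coeq_surj[OF kp_equiv[OF regepi_ar[OF h]] kp_coeq[OF h] y] .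

end

context ctxp begin

lemma pe_mor_eq: assumes a: "a \<in> Ar C" "Cod C a = B" and u: "u \<in> hom C Q (PO a)" "u' \<in> hom C Q (PO a)"
  and e: "\<And>t. t \<in> uo Q \<Longrightarrow> uf (P1 a) (uf u t) = uf (P1 a) (uf u' t) \<and> uf (P2 a) (uf u t) = uf (P2 a) (uf u' t)"
  shows "u = u'"
proof (rule fext[OF u])
  fix t assume t: "t \<in> uo Q"
  have ua: "u \<in> Ar C" "Dom C u = Q" "Cod C u = PO a" "u' \<in> Ar C" "Dom C u' = Q" "Cod C u' = PO a"
    using u by (auto simp: hom_def)
  show "uf u t = uf u' t"
    by (rule pe_un[OF a]) (use uf_in[of u t] uf_in[of u' t] ua t e[OF t] in auto)
qed

lemma pr_ex: assumes a: "a \<in> Ar C" "Cod C a = B" "e \<in> uo E" "c \<in> uo (Dom C a)" "uf p e = uf a c"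
  shows "\<exists>!v. v \<in> uo (PO a) \<and> uf (P1 a) v = e \<and> uf (P2 a) v = c"
proof -
  obtain v where v: "v \<in> uo (PO a)" "uf (P1 a) v = e" "uf (P2 a) v = c" using pe_ex[OF assms] by blast
  show ?thesis
  proof (rule ex1I[of _ v])
    show "v \<in> uo (PO a) \<and> uf (P1 a) v = e \<and> uf (P2 a) v = c" using v by simp
    fix v' assume "v' \<in> uo (PO a) \<and> uf (P1 a) v' = e \<and> uf (P2 a) v' = c"
    then show "v' = v" using pe_un[OF a(1,2), of v' v] v by simp
  qed
qed

definition "pr a e c = (THE v. v \<in> uo (PO a) \<and> uf (P1 a) v = e \<and> uf (P2 a) v = c)"

lemma pr_prop: assumes a: "a \<in> Ar C" "Cod C a = B" "e \<in> uo E" "c \<in> uo (Dom C a)" "uf p e = uf a c"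
  shows "pr a e c \<in> uo (PO a)" "uf (P1 a) (pr a e c) = e" "uf (P2 a) (pr a e c) = c"
  using theI'[OF pr_ex[OF assms]] unfolding pr_def by auto

lemma pr_eq: assumes a: "a \<in> Ar C" "Cod C a = B" and v: "v \<in> uo (PO a)"
  "uf (P1 a) v = e" "uf (P2 a) v = c"
  shows "pr a e c = v"
  unfolding pr_def
proof (rule the_equality)
  show "v \<in> uo (PO a) \<and> uf (P1 a) v = e \<and> uf (P2 a) v = c" using v by simp
  fix v' assume "v' \<in> uo (PO a) \<and> uf (P1 a) v' = e \<and> uf (P2 a) v' = c"
  then show "v' = v" using pe_un[OF a, of v' v] v by simp
qed

end

locale dd = ctxp + fixes X \<gamma> \<xi> assumes dd: "is_descent_data C p (X, \<gamma>, \<xi>)"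
begin

abbreviation "\<delta> \<equiv> Cmp C p \<gamma>"
abbreviation "R \<equiv> PO \<delta>"
abbreviation "\<pi>1 \<equiv> P1 \<delta>"
abbreviation "\<pi>2 \<equiv> P2 \<delta>"
abbreviation "\<delta>2 \<equiv> Cmp C p \<pi>1"
abbreviation "Fx \<equiv> fibmap C p \<delta>2 \<delta> \<xi>"
abbreviation "Fp \<equiv> fibmap C p \<delta>2 \<delta> \<pi>2"
abbreviation "dg \<equiv> diagmap C p X \<gamma>"

lemma ddD: "X \<in> Ob C" "\<gamma> \<in> hom C X E" "\<xi> \<in> hom C R X" "Cmp C \<gamma> \<xi> = \<pi>1" "Cmp C \<xi> dg = Idt C X"
  "Cmp C \<xi> Fx = Cmp C \<xi> Fp"
  using dd by (auto simp: is_descent_data_def)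

lemma ga: "\<gamma> \<in> Ar C" "Dom C \<gamma> = X" "Cod C \<gamma> = E" using ddD by (auto simp: hom_def)
lemma xa: "\<xi> \<in> Ar C" "Dom C \<xi> = R" "Cod C \<xi> = X" using ddD by (auto simp: hom_def)
lemma de: "\<delta> \<in> Ar C" "Cod C \<delta> = B" "Dom C \<delta> = X" using ga by auto
lemma Rp: "R \<in> Ob C" "\<pi>1 \<in> Ar C" "\<pi>2 \<in> Ar C" "Dom C \<pi>1 = R" "Dom C \<pi>2 = R" "Cod C \<pi>1 = E" "Cod C \<pi>2 = X"
  using pbp_parts[OF de(1,2)] de by auto
lemma de2: "\<delta>2 \<in> Ar C" "Cod C \<delta>2 = B" "Dom C \<delta>2 = R" using Rp by auto
lemma RRp: "PO \<delta>2 \<in> Ob C" "P1 \<delta>2 \<in> Ar C" "P2 \<delta>2 \<in> Ar C" "Dom C (P1 \<delta>2) = PO \<delta>2" "Dom C (P2 \<delta>2) = PO \<delta>2"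
  "Cod C (P1 \<delta>2) = E" "Cod C (P2 \<delta>2) = R"
  using pbp_parts[OF de2(1,2)] de2 by auto

lemma dl_el: "x \<in> uo X \<Longrightarrow> uf \<delta> x = uf p (uf \<gamma> x)"
  using uf_comp[of \<gamma> p x] ga by simp

lemma xi_in: "v \<in> uo R \<Longrightarrow> uf \<xi> v \<in> uo X" using uf_in[of \<xi> v] xa by simp
lemma xi_g: "v \<in> uo R \<Longrightarrow> uf \<gamma> (uf \<xi> v) = uf \<pi>1 v"
  using uf_comp[of \<xi> \<gamma> v] xa ga ddD(4) by simp
lemma R_sq: assumes "v \<in> uo R" shows "uf \<pi>1 v \<in> uo E" "uf \<pi>2 v \<in> uo X" "uf p (uf \<pi>1 v) = uf p (uf \<gamma> (uf \<pi>2 v))"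
  using pe_sq[OF de(1,2) assms] dl_el[of "uf \<pi>2 v"] de by auto
lemma g_in: "x \<in> uo X \<Longrightarrow> uf \<gamma> x \<in> uo E" using uf_in[of \<gamma> x] ga by simp

lemma dg_el: assumes x: "x \<in> uo X" shows "uf dg x \<in> uo R" "uf \<pi>1 (uf dg x) = uf \<gamma> x" "uf \<pi>2 (uf dg x) = x"
  using dg_elem[OF ddD(2) x] by auto

lemma unit_el: assumes x: "x \<in> uo X" shows "uf \<xi> (uf dg x) = x"
proof -
  have dga: "dg \<in> Ar C" "Dom C dg = X" "Cod C dg = R" using dg_prop[OF ddD(2)] by (auto simp: hom_def)
  have "uf (Cmp C \<xi> dg) x = x" using ddD(5) uf_id[OF ddD(1) x] by simp
  then show ?thesis using uf_comp[of dg \<xi> x] dga xa x by simp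
qed

abbreviation "rp e c \<equiv> pr \<delta> e c"

lemma rp: assumes "e \<in> uo E" "c \<in> uo X" "uf p e = uf p (uf \<gamma> c)"
  shows "rp e c \<in> uo R" "uf \<pi>1 (rp e c) = e" "uf \<pi>2 (rp e c) = c"
  using pr_prop[OF de(1,2) assms(1)] assms dl_el de by auto

lemma rp_eq: assumes "v \<in> uo R" shows "rp (uf \<pi>1 v) (uf \<pi>2 v) = v"
  using pr_eq[OF de(1,2) assms] by simp

lemma R_ext: assumes "v \<in> uo R" "v' \<in> uo R" "uf \<pi>1 v = uf \<pi>1 v'" "uf \<pi>2 v = uf \<pi>2 v'" shows "v = v'"
  using pe_un[OF de(1,2) assms] .

lemma dg_rp: assumes x: "x \<in> uo X" shows "uf dg x = rp (uf \<gamma> x) x"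
  using pr_eq[OF de(1,2) dg_el(1)[OF x]] dg_el[OF x] by simp

lemma coc_el: assumes w: "w \<in> uo (PO \<delta>2)" shows "uf \<xi> (uf Fx w) = uf \<xi> (uf Fp w)"
proof -
  have h1: "\<xi> \<in> hom C (Dom C \<delta>2) (Dom C \<delta>)" using ddD(3) de de2 by simp
  have h2: "\<pi>2 \<in> hom C (Dom C \<delta>2) (Dom C \<delta>)" using Rp de de2 by (simp add: hom_def)
  have e1: "Cmp C \<delta> \<xi> = \<delta>2" using assoc[of \<xi> \<gamma> p] xa ga ddD(4) by simp
  have e2: "Cmp C \<delta> \<pi>2 = \<delta>2" using pbp_sq[OF de(1,2)] by simp
  have f1: "Fx \<in> Ar C" "Dom C Fx = PO \<delta>2" "Cod C Fx = R" using fm_prop[OF de2(1,2) de(1,2) h1 e1] by (auto simp: hom_def)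
  have f2: "Fp \<in> Ar C" "Dom C Fp = PO \<delta>2" "Cod C Fp = R" using fm_prop[OF de2(1,2) de(1,2) h2 e2] by (auto simp: hom_def)
  have "uf (Cmp C \<xi> Fx) w = uf (Cmp C \<xi> Fp) w" using ddD(6) by simp
  then show ?thesis using uf_comp[of Fx \<xi> w] uf_comp[of Fp \<xi> w] f1 f2 xa w by simp
qed

lemma coc2: assumes e: "e \<in> uo E" and v: "v \<in> uo R" and pe: "uf p e = uf p (uf \<pi>1 v)"
  shows "uf \<xi> (rp e (uf \<xi> v)) = uf \<xi> (rp e (uf \<pi>2 v))"
proof -
  have h1: "\<xi> \<in> hom C (Dom C \<delta>2) (Dom C \<delta>)" using ddD(3) de de2 by simp
  have h2: "\<pi>2 \<in> hom C (Dom C \<delta>2) (Dom C \<delta>)" using Rp de de2 by (simp add: hom_def)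
  have e1: "Cmp C \<delta> \<xi> = \<delta>2" using assoc[of \<xi> \<gamma> p] xa ga ddD(4) by simp
  have e2: "Cmp C \<delta> \<pi>2 = \<delta>2" using pbp_sq[OF de(1,2)] by simp
  have d2v: "uf \<delta>2 v = uf p (uf \<pi>1 v)" using uf_comp[of \<pi>1 p v] Rp v by simp
  obtain w where w: "w \<in> uo (PO \<delta>2)" "uf (P1 \<delta>2) w = e" "uf (P2 \<delta>2) w = v"
    using pe_ex[OF de2(1,2) e, of v] v pe d2v de2 by auto
  note G1 = fm_elem[OF de2(1,2) de(1,2) h1 e1 w(1)] and G2 = fm_elem[OF de2(1,2) de(1,2) h2 e2 w(1)]
  have "uf Fx w = rp e (uf \<xi> v)" using pr_eq[OF de(1,2) G1(1)] G1 w by simp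
  moreover have "uf Fp w = rp e (uf \<pi>2 v)" using pr_eq[OF de(1,2) G2(1)] G2 w by simp
  ultimately show ?thesis using coc_el[OF w(1)] by simp
qed

lemma xi_rp_tau: assumes v: "v \<in> uo R"
  shows "uf \<xi> (rp (uf \<gamma> (uf \<pi>2 v)) (uf \<xi> v)) = uf \<pi>2 v"
proof -
  note S = R_sq[OF v]
  have "uf \<xi> (rp (uf \<gamma> (uf \<pi>2 v)) (uf \<xi> v)) = uf \<xi> (rp (uf \<gamma> (uf \<pi>2 v)) (uf \<pi>2 v))"
    using coc2[OF g_in[OF S(2)] v] S by simp
  also have "\<dots> = uf \<xi> (uf dg (uf \<pi>2 v))" using dg_rp[OF S(2)] by simp
  also have "\<dots> = uf \<pi>2 v" using unit_el[OF S(2)] .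
  finally show ?thesis .
qed

end

context ctx begin

lemma pb_iso: assumes pb: "is_pullback C f g Pb p1 p2"
  and s: "s \<in> hom C Pb' Pb" and s': "s' \<in> hom C Pb Pb'"
  and e1: "Cmp C s s' = Idt C Pb" and e2: "Cmp C s' s = Idt C Pb'"
  shows "is_pullback C f g Pb' (Cmp C p1 s) (Cmp C p2 s)"
proof -
  note pp = pb_parts[OF pb]
  have sa: "s \<in> Ar C" "Dom C s = Pb'" "Cod C s = Pb" "s' \<in> Ar C" "Dom C s' = Pb" "Cod C s' = Pb'"
    using s s' by (auto simp: hom_def)
  have Pb': "Pb' \<in> Ob C" using sa ob_dom by blast
  have h1: "Cmp C p1 s \<in> hom C Pb' (Dom C f)" "Cmp C p2 s \<in> hom C Pb' (Dom C g)" using sa pp by (auto simp: hom_def)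
  have sq: "Cmp C f (Cmp C p1 s) = Cmp C g (Cmp C p2 s)"
    using assoc[of s p1 f] assoc[of s p2 g] sa pp by simp
  have univ: "\<exists>!u. u \<in> hom C Q Pb' \<and> Cmp C (Cmp C p1 s) u = q1 \<and> Cmp C (Cmp C p2 s) u = q2"
    if q1: "q1 \<in> hom C Q (Dom C f)" and q2: "q2 \<in> hom C Q (Dom C g)" and qe: "Cmp C f q1 = Cmp C g q2" for Q q1 q2
  proof -
    have ex1: "\<exists>!w. w \<in> hom C Q Pb \<and> Cmp C p1 w = q1 \<and> Cmp C p2 w = q2"
      by (rule pb_univ[OF pb q1 q2 qe])
    obtain w where w: "w \<in> hom C Q Pb" "Cmp C p1 w = q1" "Cmp C p2 w = q2"
      using ex1_implies_ex[OF ex1] by blast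
    have wu: "w' = w" if "w' \<in> hom C Q Pb" "Cmp C p1 w' = q1" "Cmp C p2 w' = q2" for w'
    proof -
      have "(THE x. x \<in> hom C Q Pb \<and> Cmp C p1 x = q1 \<and> Cmp C p2 x = q2) = w'"
        by (rule the1_equality[OF ex1]) (simp add: that)
      moreover have "(THE x. x \<in> hom C Q Pb \<and> Cmp C p1 x = q1 \<and> Cmp C p2 x = q2) = w"
        by (rule the1_equality[OF ex1]) (simp add: w)
      ultimately show ?thesis by simp
    qed
    have wa: "w \<in> Ar C" "Dom C w = Q" "Cod C w = Pb" using w by (auto simp: hom_def)
    let ?u = "Cmp C s' w"
    have ua: "?u \<in> Ar C" "Dom C ?u = Q" "Cod C ?u = Pb'" using wa sa by auto
    have ssw: "Cmp C s ?u = w"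
      using assoc[of w s' s] wa sa e1 id_l[of w] by simp
    have c1: "Cmp C (Cmp C p1 s) ?u = q1" using assoc[of ?u s p1] ua sa pp ssw w by simp
    have c2: "Cmp C (Cmp C p2 s) ?u = q2" using assoc[of ?u s p2] ua sa pp ssw w by simp
    have un: "v = ?u" if v: "v \<in> hom C Q Pb'" "Cmp C (Cmp C p1 s) v = q1" "Cmp C (Cmp C p2 s) v = q2" for v
    proof -
      have va: "v \<in> Ar C" "Dom C v = Q" "Cod C v = Pb'" using v by (auto simp: hom_def)
      have "Cmp C s v = w"
      proof (rule wu)
        show "Cmp C s v \<in> hom C Q Pb" using va sa by (simp add: hom_def)
        show "Cmp C p1 (Cmp C s v) = q1" using assoc[of v s p1] va sa pp v by simp
        show "Cmp C p2 (Cmp C s v) = q2" using assoc[of v s p2] va sa pp v by simp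
      qed
      then have "Cmp C s' (Cmp C s v) = ?u" by simp
      then show ?thesis using assoc[of v s s'] va sa e2 id_l[of v] by simp
    qed
    have "?u \<in> hom C Q Pb'" using ua by (simp add: hom_def)
    then have uP: "?u \<in> hom C Q Pb' \<and> Cmp C (Cmp C p1 s) ?u = q1 \<and> Cmp C (Cmp C p2 s) ?u = q2"
      using c1 c2 by simp
    show ?thesis
    proof (rule ex1I[of _ ?u])
      show "?u \<in> hom C Q Pb' \<and> Cmp C (Cmp C p1 s) ?u = q1 \<and> Cmp C (Cmp C p2 s) ?u = q2" by (rule uP)
      fix v assume "v \<in> hom C Q Pb' \<and> Cmp C (Cmp C p1 s) v = q1 \<and> Cmp C (Cmp C p2 s) v = q2"
      then show "v = ?u" using un by blast
    qed
  qed
  show ?thesis unfolding is_pullback_def using pp Pb' h1 sq univ by auto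
qed

end

context dd begin

lemma p_de_eq: "Cmp C p (Cmp C \<gamma> \<pi>2) = Cmp C \<delta> \<xi>"
proof (rule fext[of _ R B])
  show "Cmp C p (Cmp C \<gamma> \<pi>2) \<in> hom C R B" "Cmp C \<delta> \<xi> \<in> hom C R B" using Rp ga xa de by (auto simp: hom_def)
  fix v assume v: "v \<in> uo R"
  show "uf (Cmp C p (Cmp C \<gamma> \<pi>2)) v = uf (Cmp C \<delta> \<xi>) v"
    using uf_comp[of \<pi>2 \<gamma> v] uf_comp[of "Cmp C \<gamma> \<pi>2" p v] uf_comp[of \<xi> \<delta> v] Rp ga xa de v
      dl_el[OF xi_in[OF v]] xi_g[OF v] R_sq[OF v] by simp
qed

definition "tau = (THE u. u \<in> hom C R R \<and> Cmp C \<pi>1 u = Cmp C \<gamma> \<pi>2 \<and> Cmp C \<pi>2 u = \<xi>)"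

lemma tau_prop: "tau \<in> hom C R R" "Cmp C \<pi>1 tau = Cmp C \<gamma> \<pi>2" "Cmp C \<pi>2 tau = \<xi>"
proof -
  have q1: "Cmp C \<gamma> \<pi>2 \<in> hom C R (Dom C p)" using Rp ga by (simp add: hom_def)
  have q2: "\<xi> \<in> hom C R (Dom C \<delta>)" using ddD(3) de by simp
  have "\<exists>!u. u \<in> hom C R R \<and> Cmp C \<pi>1 u = Cmp C \<gamma> \<pi>2 \<and> Cmp C \<pi>2 u = \<xi>"
    by (rule pb_univ[OF pbp[OF de(1,2)] q1 q2 p_de_eq])
  from theI'[OF this] show "tau \<in> hom C R R" "Cmp C \<pi>1 tau = Cmp C \<gamma> \<pi>2" "Cmp C \<pi>2 tau = \<xi>"
    unfolding tau_def by auto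
qed

lemma tau_a: "tau \<in> Ar C" "Dom C tau = R" "Cod C tau = R" using tau_prop by (auto simp: hom_def)

lemma tau_el: assumes v: "v \<in> uo R"
  shows "uf tau v \<in> uo R" "uf \<pi>1 (uf tau v) = uf \<gamma> (uf \<pi>2 v)" "uf \<pi>2 (uf tau v) = uf \<xi> v"
proof -
  show "uf tau v \<in> uo R" using uf_in[of tau v] tau_a v by simp
  have "uf (Cmp C \<pi>1 tau) v = uf (Cmp C \<gamma> \<pi>2) v" using tau_prop by simp
  then show "uf \<pi>1 (uf tau v) = uf \<gamma> (uf \<pi>2 v)" using uf_comp[of tau \<pi>1 v] uf_comp[of \<pi>2 \<gamma> v] tau_a Rp ga v by simp
  have "uf (Cmp C \<pi>2 tau) v = uf \<xi> v" using tau_prop by simp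
  then show "uf \<pi>2 (uf tau v) = uf \<xi> v" using uf_comp[of tau \<pi>2 v] tau_a Rp v by simp
qed

lemma tau_rp: assumes v: "v \<in> uo R" shows "uf tau v = rp (uf \<gamma> (uf \<pi>2 v)) (uf \<xi> v)"
  using pr_eq[OF de(1,2) tau_el(1)[OF v]] tau_el[OF v] by simp

lemma xi_tau: "Cmp C \<xi> tau = \<pi>2"
proof (rule fext[of _ R X])
  show "Cmp C \<xi> tau \<in> hom C R X" "\<pi>2 \<in> hom C R X" using tau_a xa Rp by (auto simp: hom_def)
  fix v assume v: "v \<in> uo R"
  show "uf (Cmp C \<xi> tau) v = uf \<pi>2 v"
    using uf_comp[of tau \<xi> v] tau_a xa v tau_rp[OF v] xi_rp_tau[OF v] by simp
qed

lemma tau_tau: "Cmp C tau tau = Idt C R"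
proof (rule fext[of _ R R])
  show "Cmp C tau tau \<in> hom C R R" "Idt C R \<in> hom C R R" using tau_a Rp id_hom by (auto simp: hom_def)
  fix v assume v: "v \<in> uo R"
  note T1 = tau_el[OF v]
  note T2 = tau_el[OF T1(1)]
  have "uf tau (uf tau v) = v"
  proof (rule R_ext[OF T2(1) v])
    show "uf \<pi>1 (uf tau (uf tau v)) = uf \<pi>1 v" using T2 T1 xi_g[OF v] by simp
    have "uf \<xi> (uf tau v) = uf \<pi>2 v" using tau_rp[OF v] xi_rp_tau[OF v] by simp
    then show "uf \<pi>2 (uf tau (uf tau v)) = uf \<pi>2 v" using T2 by simp
  qed
  then show "uf (Cmp C tau tau) v = uf (Idt C R) v" using uf_comp[of tau tau v] tau_a v uf_id[OF Rp(1) v] by simp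
qed

lemma xi_pb: "is_pullback C p \<delta> R (Cmp C \<gamma> \<pi>2) \<xi>"
  using pb_iso[OF pbp[OF de(1,2)] tau_prop(1) tau_prop(1) tau_tau tau_tau] tau_prop by simp

lemma xi_P: "\<xi> \<in> P"
  using Pstab pP xi_pb unfolding pullback_stable_def by blast

end

context ctx begin
lemma uf_c: "f \<in> hom C a b \<Longrightarrow> g \<in> hom C b c \<Longrightarrow> x \<in> uo a \<Longrightarrow> uf (Cmp C g f) x = uf g (uf f x)"
  using uf_comp[of f g x] by (auto simp: hom_def)
lemma uf_h: "f \<in> hom C a b \<Longrightarrow> x \<in> uo a \<Longrightarrow> uf f x \<in> uo b"
  using uf_in[of f x] by (auto simp: hom_def)
lemma hom_c: "f \<in> hom C a b \<Longrightarrow> g \<in> hom C b c \<Longrightarrow> Cmp C g f \<in> hom C a c"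
  by (simp add: hom_def)
end

context dd begin

lemma hR: "\<pi>1 \<in> hom C R E" "\<pi>2 \<in> hom C R X" "\<xi> \<in> hom C R X" "\<gamma> \<in> hom C X E" "tau \<in> hom C R R"
  "dg \<in> hom C X R" "\<delta> \<in> hom C X B"
  using Rp ddD tau_prop dg_prop[OF ddD(2)] de by (auto simp: hom_def)

lemma xi_tau_el: "v \<in> uo R \<Longrightarrow> uf \<xi> (uf tau v) = uf \<pi>2 v"
  using uf_c[OF hR(5) hR(3)] xi_tau by metis

lemma er: "is_equiv_rel C \<xi> \<pi>2"
proof -
  have mono: "x = y" if x: "x \<in> Ar C" and y: "y \<in> Ar C" and c: "Cod C x = R" "Cod C y = R" "Dom C x = Dom C y"
    and e: "Cmp C \<xi> x = Cmp C \<xi> y" "Cmp C \<pi>2 x = Cmp C \<pi>2 y" for x y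
  proof (rule fext[of _ "Dom C x" R])
    show hx: "x \<in> hom C (Dom C x) R" and hy: "y \<in> hom C (Dom C x) R" using x y c by (auto simp: hom_def)
    fix t assume t: "t \<in> uo (Dom C x)"
    have e1: "uf \<xi> (uf x t) = uf \<xi> (uf y t)" using uf_c[OF hx hR(3) t] uf_c[OF hy hR(3) t] e by simp
    have e2: "uf \<pi>2 (uf x t) = uf \<pi>2 (uf y t)" using uf_c[OF hx hR(2) t] uf_c[OF hy hR(2) t] e by simp
    show "uf x t = uf y t"
      using R_ext[OF uf_h[OF hx t] uf_h[OF hy t]] e1 e2 xi_g[OF uf_h[OF hx t]] xi_g[OF uf_h[OF hy t]] by simp
  qed
  have eqv: "equiv (hom C T X) {(Cmp C \<xi> x, Cmp C \<pi>2 x) | x. x \<in> hom C T R}" if T: "T \<in> Ob C" for T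
  proof -
    let ?r = "{(Cmp C \<xi> x, Cmp C \<pi>2 x) | x. x \<in> hom C T R}"
    have sub: "?r \<subseteq> hom C T X \<times> hom C T X"
    proof
      fix z assume "z \<in> ?r"
      then obtain x where x: "x \<in> hom C T R" "z = (Cmp C \<xi> x, Cmp C \<pi>2 x)" by blast
      show "z \<in> hom C T X \<times> hom C T X" using hom_c[OF x(1) hR(3)] hom_c[OF x(1) hR(2)] x(2) by simp
    qed
    have rf: "(a, a) \<in> ?r" if a: "a \<in> hom C T X" for a
    proof -
      have x: "Cmp C dg a \<in> hom C T R" using hom_c[OF a hR(6)] .
      have "Cmp C \<xi> (Cmp C dg a) = a"
      proof (rule fext[OF hom_c[OF x hR(3)] a])
        fix t assume t: "t \<in> uo T"
        show "uf (Cmp C \<xi> (Cmp C dg a)) t = uf a t"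
          using uf_c[OF x hR(3) t] uf_c[OF a hR(6) t] unit_el[OF uf_h[OF a t]] by simp
      qed
      moreover have "Cmp C \<pi>2 (Cmp C dg a) = a"
      proof (rule fext[OF hom_c[OF x hR(2)] a])
        fix t assume t: "t \<in> uo T"
        show "uf (Cmp C \<pi>2 (Cmp C dg a)) t = uf a t"
          using uf_c[OF x hR(2) t] uf_c[OF a hR(6) t] dg_el(3)[OF uf_h[OF a t]] by simp
      qed
      ultimately have "(a, a) = (Cmp C \<xi> (Cmp C dg a), Cmp C \<pi>2 (Cmp C dg a))" by simp
      then show ?thesis using x by blast
    qed
    have sy: "(b, a) \<in> ?r" if ab: "(a, b) \<in> ?r" for a b
    proof -
      obtain x where x: "x \<in> hom C T R" "a = Cmp C \<xi> x" "b = Cmp C \<pi>2 x" using ab by blast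
      have x': "Cmp C tau x \<in> hom C T R" using hom_c[OF x(1) hR(5)] .
      have "Cmp C \<xi> (Cmp C tau x) = b"
      proof (rule fext[OF hom_c[OF x' hR(3)]])
        show "b \<in> hom C T X" using x(3) hom_c[OF x(1) hR(2)] by simp
        fix t assume t: "t \<in> uo T"
        show "uf (Cmp C \<xi> (Cmp C tau x)) t = uf b t"
          using uf_c[OF x' hR(3) t] uf_c[OF x(1) hR(5) t] uf_c[OF x(1) hR(2) t] x(3)
            xi_tau_el[OF uf_h[OF x(1) t]] by simp
      qed
      moreover have "Cmp C \<pi>2 (Cmp C tau x) = a"
      proof (rule fext[OF hom_c[OF x' hR(2)]])
        show "a \<in> hom C T X" using x(2) hom_c[OF x(1) hR(3)] by simp
        fix t assume t: "t \<in> uo T"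
        show "uf (Cmp C \<pi>2 (Cmp C tau x)) t = uf a t"
          using uf_c[OF x' hR(2) t] uf_c[OF x(1) hR(5) t] uf_c[OF x(1) hR(3) t] x(2)
            tau_el(3)[OF uf_h[OF x(1) t]] by simp
      qed
      ultimately have "(b, a) = (Cmp C \<xi> (Cmp C tau x), Cmp C \<pi>2 (Cmp C tau x))" by simp
      then show ?thesis using x' by blast
    qed
    have tr: "(a, c) \<in> ?r" if ab: "(a, b) \<in> ?r" and bc: "(b, c) \<in> ?r" for a b c
    proof -
      obtain x where x: "x \<in> hom C T R" "a = Cmp C \<xi> x" "b = Cmp C \<pi>2 x" using ab by blast
      obtain y where y: "y \<in> hom C T R" "b = Cmp C \<xi> y" "c = Cmp C \<pi>2 y" using bc by blast
      have xy: "uf \<pi>2 (uf x t) = uf \<xi> (uf y t)" if t: "t \<in> uo T" for t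
      proof -
        have "uf (Cmp C \<pi>2 x) t = uf (Cmp C \<xi> y) t" using x(3) y(2) by simp
        then show ?thesis using uf_c[OF x(1) hR(2) t] uf_c[OF y(1) hR(3) t] by simp
      qed
      have hP: "P1 \<delta>2 \<in> hom C (PO \<delta>2) E" "P2 \<delta>2 \<in> hom C (PO \<delta>2) R" using RRp by (auto simp: hom_def)
      have q1: "Cmp C \<pi>1 x \<in> hom C T (Dom C p)" using hom_c[OF x(1) hR(1)] by simp
      have q2: "y \<in> hom C T (Dom C \<delta>2)" using y(1) de2 by simp
      have d2h: "\<delta>2 \<in> hom C R B" using de2 by (simp add: hom_def)
      have qe: "Cmp C p (Cmp C \<pi>1 x) = Cmp C \<delta>2 y"
      proof (rule fext[of _ T B])
        show "Cmp C p (Cmp C \<pi>1 x) \<in> hom C T B" "Cmp C \<delta>2 y \<in> hom C T B"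
          using hom_c[OF q1, of p B] hom_c[OF y(1) d2h] by (auto simp: hom_def)
        fix t assume t: "t \<in> uo T"
        have ph: "p \<in> hom C E B" by (simp add: hom_def)
        have xt: "uf x t \<in> uo R" and yt: "uf y t \<in> uo R" using uf_h[OF x(1) t] uf_h[OF y(1) t] .
        have "uf p (uf \<pi>1 (uf x t)) = uf p (uf \<pi>1 (uf y t))"
          using R_sq(3)[OF xt] xy[OF t] xi_g[OF yt] by simp
        then show "uf (Cmp C p (Cmp C \<pi>1 x)) t = uf (Cmp C \<delta>2 y) t"
          using uf_c[OF q1 ph t] uf_c[OF x(1) hR(1) t] uf_c[OF y(1) d2h t] uf_c[OF hR(1) ph yt] by simp
      qed
      obtain w where w: "w \<in> hom C T (PO \<delta>2)" "Cmp C (P1 \<delta>2) w = Cmp C \<pi>1 x" "Cmp C (P2 \<delta>2) w = y"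
        using pb_univ[OF pbp[OF de2(1,2)] q1 q2 qe] by blast
      have h2: "\<pi>2 \<in> hom C (Dom C \<delta>2) (Dom C \<delta>)" using Rp de de2 by (simp add: hom_def)
      have e2: "Cmp C \<delta> \<pi>2 = \<delta>2" using pbp_sq[OF de(1,2)] by simp
      have h1: "\<xi> \<in> hom C (Dom C \<delta>2) (Dom C \<delta>)" using ddD(3) de de2 by simp
      have e1: "Cmp C \<delta> \<xi> = \<delta>2" using assoc[of \<xi> \<gamma> p] xa ga ddD(4) by simp
      have Fph: "Fp \<in> hom C (PO \<delta>2) R" using fm_prop[OF de2(1,2) de(1,2) h2 e2] by simp
      have z: "Cmp C Fp w \<in> hom C T R" using hom_c[OF w(1) Fph] .
      have el: "uf \<xi> (uf Fp (uf w t)) = uf \<xi> (uf x t) \<and> uf \<pi>2 (uf Fp (uf w t)) = uf \<pi>2 (uf y t)"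
        if t: "t \<in> uo T" for t
      proof -
        have wt: "uf w t \<in> uo (PO \<delta>2)" using uf_h[OF w(1) t] .
        have xt: "uf x t \<in> uo R" and yt: "uf y t \<in> uo R" using uf_h[OF x(1) t] uf_h[OF y(1) t] .
        have "uf (Cmp C (P1 \<delta>2) w) t = uf (Cmp C \<pi>1 x) t" using w(2) by simp
        then have pw1: "uf (P1 \<delta>2) (uf w t) = uf \<pi>1 (uf x t)"
          using uf_c[OF w(1) hP(1) t] uf_c[OF x(1) hR(1) t] by simp
        have "uf (Cmp C (P2 \<delta>2) w) t = uf y t" using w(3) by simp
        then have pw2: "uf (P2 \<delta>2) (uf w t) = uf y t"
          using uf_c[OF w(1) hP(2) t] by simp
        note G1 = fm_elem[OF de2(1,2) de(1,2) h1 e1 wt] and G2 = fm_elem[OF de2(1,2) de(1,2) h2 e2 wt]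
        have "uf Fx (uf w t) = uf x t"
          using R_ext[OF G1(1) xt] G1 pw1 pw2 xy[OF t] by simp
        then have "uf \<xi> (uf Fp (uf w t)) = uf \<xi> (uf x t)" using coc_el[OF wt] by simp
        moreover have "uf \<pi>2 (uf Fp (uf w t)) = uf \<pi>2 (uf y t)" using G2 pw2 by simp
        ultimately show ?thesis by simp
      qed
      have "Cmp C \<xi> (Cmp C Fp w) = a"
      proof (rule fext[OF hom_c[OF z hR(3)]])
        show "a \<in> hom C T X" using x(2) hom_c[OF x(1) hR(3)] by simp
        fix t assume t: "t \<in> uo T"
        show "uf (Cmp C \<xi> (Cmp C Fp w)) t = uf a t"
          using uf_c[OF z hR(3) t] uf_c[OF w(1) Fph t] uf_c[OF x(1) hR(3) t] x(2) el[OF t] by simp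
      qed
      moreover have "Cmp C \<pi>2 (Cmp C Fp w) = c"
      proof (rule fext[OF hom_c[OF z hR(2)]])
        show "c \<in> hom C T X" using y(3) hom_c[OF y(1) hR(2)] by simp
        fix t assume t: "t \<in> uo T"
        show "uf (Cmp C \<pi>2 (Cmp C Fp w)) t = uf c t"
          using uf_c[OF z hR(2) t] uf_c[OF w(1) Fph t] uf_c[OF y(1) hR(2) t] y(3) el[OF t] by simp
      qed
      ultimately have "(a, c) = (Cmp C \<xi> (Cmp C Fp w), Cmp C \<pi>2 (Cmp C Fp w))" by simp
      then show ?thesis using z by blast
    qed
    show ?thesis
    proof (rule equivI[OF sub])
      show "refl_on (hom C T X) ?r" by (rule refl_onI) (rule rf)
      show "sym ?r" by (rule symI) (rule sy)
      show "trans ?r" by (rule transI) (rule tr)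
    qed
  qed
  show ?thesis unfolding is_equiv_rel_def using xa Rp mono eqv by auto
qed

end

context dd begin

definition "qq = (SOME h. is_coequalizer C \<xi> \<pi>2 h)"

lemma qq_co: "is_coequalizer C \<xi> \<pi>2 qq"
proof -
  have "\<exists>h. is_coequalizer C \<xi> \<pi>2 h" using hcq er by (simp add: has_coeq_of_equiv_rels_def)
  then show ?thesis unfolding qq_def by (rule someI_ex)
qed

abbreviation "AA \<equiv> Cod C qq"

lemma qq_a: "qq \<in> Ar C" "Dom C qq = X" "qq \<in> hom C X AA" "Cmp C qq \<xi> = Cmp C qq \<pi>2"
  using qq_co xa by (auto simp: is_coequalizer_def hom_def)

lemma qq_el: assumes v: "v \<in> uo R" shows "uf qq (uf \<xi> v) = uf qq (uf \<pi>2 v)"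
proof -
  have "uf (Cmp C qq \<xi>) v = uf (Cmp C qq \<pi>2) v" using qq_a(4) by simp
  then show ?thesis using uf_c[OF hR(3) qq_a(3) v] uf_c[OF hR(2) qq_a(3) v] by simp
qed

lemma ker_el: assumes x: "x \<in> uo X" and y: "y \<in> uo X" and e: "uf qq x = uf qq y"
  shows "\<exists>r\<in>uo R. uf \<xi> r = x \<and> uf \<pi>2 r = y"
proof -
  have co: "is_coequalizer SetCat (uo R, uf \<xi>, uo X) (uo R, uf \<pi>2, uo X) (uo X, uf qq, uo AA)"
    using coeq_U[OF er qq_co] xa by simp
  show ?thesis
  proof (rule set_coeq_ker[OF co _ _ _ x y e])
    fix c assume c: "c \<in> uo X"
    show "\<exists>r\<in>uo R. uf \<xi> r = c \<and> uf \<pi>2 r = c" using dg_el[OF c] unit_el[OF c] by blast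
  next
    fix r assume r: "r \<in> uo R"
    note T = tau_el[OF r]
    show "\<exists>r'\<in>uo R. uf \<xi> r' = uf \<pi>2 r \<and> uf \<pi>2 r' = uf \<xi> r" using T xi_tau_el[OF r] by blast
  next
    fix r r' assume r: "r \<in> uo R" and r': "r' \<in> uo R" and e: "uf \<pi>2 r = uf \<xi> r'"
    note S = R_sq[OF r] and S' = R_sq[OF r']
    have c1: "uf p (uf \<pi>1 r) = uf p (uf \<gamma> (uf \<pi>2 r'))"
      using S(3) e xi_g[OF r'] S'(3) by simp
    note RP = rp[OF S(1) S'(2) c1]
    have c2: "uf p (uf \<pi>1 r) = uf p (uf \<pi>1 r')" using S(3) e xi_g[OF r'] by simp
    have "uf \<xi> (rp (uf \<pi>1 r) (uf \<pi>2 r')) = uf \<xi> (rp (uf \<pi>1 r) (uf \<xi> r'))"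
      using coc2[OF S(1) r' c2] by simp
    also have "\<dots> = uf \<xi> r" using e rp_eq[OF r] by simp
    finally show "\<exists>r''\<in>uo R. uf \<xi> r'' = uf \<xi> r \<and> uf \<pi>2 r'' = uf \<pi>2 r'" using RP by blast
  qed
qed

lemma exact: "exact_image C U \<xi> \<pi>2 qq"
proof -
  have c: "is_coequalizer SetCat (snd U \<xi>) (snd U \<pi>2) (snd U qq)"
    using pcq er qq_co by (simp add: preserves_coeq_equiv_rels_def)
  have e1: "snd U \<xi> = (uo R, uf \<xi>, uo X)" using U_eq[OF xa(1)] xa by simp
  have e2: "snd U \<pi>2 = (uo R, uf \<pi>2, uo X)" using U_eq[OF Rp(3)] Rp by simp
  have e3: "snd U qq = (uo X, uf qq, uo AA)" using U_eq[OF qq_a(1)] qq_a by simp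
  have f: "uf qq \<in> uo X \<rightarrow>\<^sub>E uo AA" "uf \<xi> \<in> uo R \<rightarrow>\<^sub>E uo X" "uf \<pi>2 \<in> uo R \<rightarrow>\<^sub>E uo X"
    using U_arr[OF qq_a(1)] U_arr[OF xa(1)] U_arr[OF Rp(3)] qq_a xa Rp by auto
  have "is_pullback SetCat (uo X, uf qq, uo AA) (uo X, uf qq, uo AA) (uo R) (uo R, uf \<xi>, uo X) (uo R, uf \<pi>2, uo X)"
  proof (rule set_pb_intro[OF f(1) f(1) f(2) f(3)])
    show "\<And>z. z \<in> uo R \<Longrightarrow> uf qq (uf \<xi> z) = uf qq (uf \<pi>2 z)" by (rule qq_el)
    show "\<And>z z'. z \<in> uo R \<Longrightarrow> z' \<in> uo R \<Longrightarrow> uf \<xi> z = uf \<xi> z' \<Longrightarrow> uf \<pi>2 z = uf \<pi>2 z' \<Longrightarrow> z = z'"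
    proof -
      fix z z' assume z: "z \<in> uo R" "z' \<in> uo R" "uf \<xi> z = uf \<xi> z'" "uf \<pi>2 z = uf \<pi>2 z'"
      show "z = z'" using R_ext[OF z(1,2)] xi_g[OF z(1)] xi_g[OF z(2)] z(3,4) by simp
    qed
    show "\<And>x y. x \<in> uo X \<Longrightarrow> y \<in> uo X \<Longrightarrow> uf qq x = uf qq y \<Longrightarrow> \<exists>z\<in>uo R. uf \<xi> z = x \<and> uf \<pi>2 z = y"
      by (rule ker_el)
  qed
  then have "is_pullback SetCat (snd U qq) (snd U qq) (uo (Dom C \<xi>)) (snd U \<xi>) (snd U \<pi>2)"
    using e1 e2 e3 xa by simp
  then show ?thesis unfolding exact_image_def using c by simp
qed

lemma qq_P: "qq \<in> P"
  by (rule Pcl[rule_format, of \<xi> \<pi>2 qq]) (simp add: qq_co exact xi_P P2_in_P[OF de(1,2)])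

lemma qq_regepi: "regular_epi C qq" using qq_P Preg by blast

definition "alpha = (THE u. u \<in> hom C AA B \<and> Cmp C u qq = \<delta>)"

lemma alpha_prop: "alpha \<in> hom C AA B" "Cmp C alpha qq = \<delta>"
proof -
  have "Cmp C \<delta> \<xi> = Cmp C p \<pi>1" using assoc[of \<xi> \<gamma> p] xa ga ddD(4) by simp
  also have "\<dots> = Cmp C \<delta> \<pi>2" using pbp_sq[OF de(1,2)] .
  finally have e: "Cmp C \<delta> \<xi> = Cmp C \<delta> \<pi>2" .
  have "\<forall>k\<in>Ar C. Dom C k = Cod C \<xi> \<and> Cmp C k \<xi> = Cmp C k \<pi>2 \<longrightarrow>
        (\<exists>!u. u \<in> hom C (Cod C qq) (Cod C k) \<and> Cmp C u qq = k)" using qq_co by (simp add: is_coequalizer_def)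
  from bspec[OF this de(1)] have imp: "Dom C \<delta> = Cod C \<xi> \<and> Cmp C \<delta> \<xi> = Cmp C \<delta> \<pi>2 \<longrightarrow>
        (\<exists>!u. u \<in> hom C (Cod C qq) (Cod C \<delta>) \<and> Cmp C u qq = \<delta>)" .
  have "Dom C \<delta> = Cod C \<xi> \<and> Cmp C \<delta> \<xi> = Cmp C \<delta> \<pi>2" using de xa e by simp
  with imp have "\<exists>!u. u \<in> hom C (Cod C qq) (Cod C \<delta>) \<and> Cmp C u qq = \<delta>" by (rule mp)
  then have "\<exists>!u. u \<in> hom C AA B \<and> Cmp C u qq = \<delta>" using de by simp
  from theI'[OF this] show "alpha \<in> hom C AA B" "Cmp C alpha qq = \<delta>" unfolding alpha_def by auto
qed

lemma al: "alpha \<in> Ar C" "Cod C alpha = B" "Dom C alpha = AA" using alpha_prop by (auto simp: hom_def)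

lemma al_el: assumes x: "x \<in> uo X" shows "uf alpha (uf qq x) = uf \<delta> x"
proof -
  have "uf (Cmp C alpha qq) x = uf \<delta> x" using alpha_prop(2) by simp
  then show ?thesis using uf_c[OF qq_a(3) alpha_prop(1) x] by simp
qed

abbreviation "mq \<equiv> fibmap C p \<delta> alpha qq"

lemma qq_h: "qq \<in> hom C (Dom C \<delta>) (Dom C alpha)" using qq_a al de by simp

lemma mq_prop: "mq \<in> hom C R (PO alpha)" "Cmp C (P1 alpha) mq = \<pi>1" "Cmp C (P2 alpha) mq = Cmp C qq \<pi>2"
  using fm_prop[OF de(1,2) al(1,2) qq_h alpha_prop(2)] by auto

lemma mq_el: assumes v: "v \<in> uo R"
  shows "uf mq v \<in> uo (PO alpha)" "uf (P1 alpha) (uf mq v) = uf \<pi>1 v" "uf (P2 alpha) (uf mq v) = uf qq (uf \<pi>2 v)"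
  using fm_elem[OF de(1,2) al(1,2) qq_h alpha_prop(2) v] by auto

lemma hA: "P1 alpha \<in> hom C (PO alpha) E" "P2 alpha \<in> hom C (PO alpha) AA" "PO alpha \<in> Ob C"
  using pbp_parts[OF al(1,2)] al by (auto simp: hom_def)

lemma mq_pb: "is_pullback C qq (P2 alpha) R \<pi>2 mq"
proof -
  have univ: "\<exists>!u. u \<in> hom C Q R \<and> Cmp C \<pi>2 u = z1 \<and> Cmp C mq u = z2"
    if z1: "z1 \<in> hom C Q (Dom C qq)" and z2: "z2 \<in> hom C Q (Dom C (P2 alpha))"
      and ze: "Cmp C qq z1 = Cmp C (P2 alpha) z2" for Q z1 z2
  proof -
    have z1': "z1 \<in> hom C Q X" using z1 qq_a by simp
    have z2': "z2 \<in> hom C Q (PO alpha)" using z2 pbp_parts[OF al(1,2)] by simp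
    have zel: "uf qq (uf z1 t) = uf (P2 alpha) (uf z2 t)" if t: "t \<in> uo Q" for t
    proof -
      have "uf (Cmp C qq z1) t = uf (Cmp C (P2 alpha) z2) t" using ze by simp
      then show ?thesis using uf_c[OF z1' qq_a(3) t] uf_c[OF z2' hA(2) t] by simp
    qed
    have q1: "Cmp C (P1 alpha) z2 \<in> hom C Q (Dom C p)" using hom_c[OF z2' hA(1)] by simp
    have q2: "z1 \<in> hom C Q (Dom C \<delta>)" using z1' de by simp
    have ph: "p \<in> hom C E B" by (simp add: hom_def)
    have qe: "Cmp C p (Cmp C (P1 alpha) z2) = Cmp C \<delta> z1"
    proof (rule fext[OF hom_c[OF hom_c[OF z2' hA(1)] ph] hom_c[OF z1' hR(7)]])
      fix t assume t: "t \<in> uo Q"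
      have z2t: "uf z2 t \<in> uo (PO alpha)" using uf_h[OF z2' t] .
      have z1t: "uf z1 t \<in> uo X" using uf_h[OF z1' t] .
      show "uf (Cmp C p (Cmp C (P1 alpha) z2)) t = uf (Cmp C \<delta> z1) t"
        using uf_c[OF hom_c[OF z2' hA(1)] ph t] uf_c[OF z2' hA(1) t] uf_c[OF z1' hR(7) t]
          pe_sq(3)[OF al(1,2) z2t] zel[OF t] al_el[OF z1t] by simp
    qed
    obtain u where u: "u \<in> hom C Q R" "Cmp C \<pi>1 u = Cmp C (P1 alpha) z2" "Cmp C \<pi>2 u = z1"
      using pb_univ[OF pbp[OF de(1,2)] q1 q2 qe] by blast
    have uel: "uf \<pi>1 (uf u t) = uf (P1 alpha) (uf z2 t)" "uf \<pi>2 (uf u t) = uf z1 t" if t: "t \<in> uo Q" for t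
    proof -
      have "uf (Cmp C \<pi>1 u) t = uf (Cmp C (P1 alpha) z2) t" "uf (Cmp C \<pi>2 u) t = uf z1 t" using u by simp_all
      then show "uf \<pi>1 (uf u t) = uf (P1 alpha) (uf z2 t)" "uf \<pi>2 (uf u t) = uf z1 t"
        using uf_c[OF u(1) hR(1) t] uf_c[OF z2' hA(1) t] uf_c[OF u(1) hR(2) t] by simp_all
    qed
    have mu: "Cmp C mq u = z2"
    proof (rule pe_mor_eq[OF al(1,2) hom_c[OF u(1) mq_prop(1)] z2'])
      fix t assume t: "t \<in> uo Q"
      have ut: "uf u t \<in> uo R" using uf_h[OF u(1) t] .
      show "uf (P1 alpha) (uf (Cmp C mq u) t) = uf (P1 alpha) (uf z2 t) \<and>
            uf (P2 alpha) (uf (Cmp C mq u) t) = uf (P2 alpha) (uf z2 t)"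
        using uf_c[OF u(1) mq_prop(1) t] mq_el[OF ut] uel[OF t] zel[OF t] by simp
    qed
    have un: "v = u" if v: "v \<in> hom C Q R" "Cmp C \<pi>2 v = z1" "Cmp C mq v = z2" for v
    proof (rule pe_mor_eq[OF de(1,2) v(1) u(1)])
      fix t assume t: "t \<in> uo Q"
      have vt: "uf v t \<in> uo R" using uf_h[OF v(1) t] .
      have "uf (Cmp C mq v) t = uf z2 t" "uf (Cmp C \<pi>2 v) t = uf z1 t" using v by simp_all
      then have "uf mq (uf v t) = uf z2 t" "uf \<pi>2 (uf v t) = uf z1 t"
        using uf_c[OF v(1) mq_prop(1) t] uf_c[OF v(1) hR(2) t] by simp_all
      then show "uf \<pi>1 (uf v t) = uf \<pi>1 (uf u t) \<and> uf \<pi>2 (uf v t) = uf \<pi>2 (uf u t)"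
        using mq_el(2)[OF vt] uel[OF t] by simp
    qed
    show ?thesis
    proof (rule ex1I[of _ u])
      show "u \<in> hom C Q R \<and> Cmp C \<pi>2 u = z1 \<and> Cmp C mq u = z2" using u mu by simp
      fix v assume "v \<in> hom C Q R \<and> Cmp C \<pi>2 v = z1 \<and> Cmp C mq v = z2"
      then show "v = u" using un by blast
    qed
  qed
  have sq: "Cmp C qq \<pi>2 = Cmp C (P2 alpha) mq" using mq_prop by simp
  have h1: "\<pi>2 \<in> hom C R (Dom C qq)" "mq \<in> hom C R (Dom C (P2 alpha))"
    using hR mq_prop qq_a pbp_parts[OF al(1,2)] by auto
  show ?thesis unfolding is_pullback_def using qq_a Rp h1 sq univ pbp_parts[OF al(1,2)] al by auto
qed

lemma mq_P: "mq \<in> P"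
  using Pstab qq_P mq_pb unfolding pullback_stable_def by blast

lemma mq_regepi: "regular_epi C mq" using mq_P Preg by blast

end

context dd begin

lemma mq_a: "mq \<in> Ar C" "Dom C mq = R" "Cod C mq = PO alpha" using mq_prop by (auto simp: hom_def)

lemma psi_ex: "\<exists>u\<in>hom C (PO alpha) X. Cmp C u mq = \<xi>"
proof -
  have "\<exists>u\<in>hom C (Cod C mq) (Cod C \<xi>). Cmp C u mq = \<xi>"
  proof (rule regepi_desc[OF mq_regepi xa(1)])
    show "Dom C \<xi> = Dom C mq" using xa mq_a by simp
    fix v v' assume v: "v \<in> uo (Dom C mq)" and v': "v' \<in> uo (Dom C mq)" and e: "uf mq v = uf mq v'"
    have vR: "v \<in> uo R" "v' \<in> uo R" using v v' mq_a by auto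
    note M = mq_el[OF vR(1)] and M' = mq_el[OF vR(2)]
    have e1: "uf \<pi>1 v = uf \<pi>1 v'" using M M' e by metis
    have e2: "uf qq (uf \<pi>2 v) = uf qq (uf \<pi>2 v')" using M M' e by metis
    note S = R_sq[OF vR(1)] and S' = R_sq[OF vR(2)]
    obtain r where r: "r \<in> uo R" "uf \<xi> r = uf \<pi>2 v" "uf \<pi>2 r = uf \<pi>2 v'" using ker_el[OF S(2) S'(2) e2] by blast
    have c: "uf p (uf \<pi>1 v) = uf p (uf \<pi>1 r)" using xi_g[OF r(1)] r(2) S(3) by simp
    have "uf \<xi> v = uf \<xi> (rp (uf \<pi>1 v) (uf \<pi>2 v))" using rp_eq[OF vR(1)] by simp
    also have "\<dots> = uf \<xi> (rp (uf \<pi>1 v) (uf \<xi> r))" using r by simp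
    also have "\<dots> = uf \<xi> (rp (uf \<pi>1 v) (uf \<pi>2 r))" using coc2[OF S(1) r(1) c] .
    also have "\<dots> = uf \<xi> v'" using r(3) e1 rp_eq[OF vR(2)] by simp
    finally show "uf \<xi> v = uf \<xi> v'" .
  qed
  then show ?thesis using mq_a xa by simp
qed

definition "psi = (SOME u. u \<in> hom C (PO alpha) X \<and> Cmp C u mq = \<xi>)"

lemma psi_prop: "psi \<in> hom C (PO alpha) X" "Cmp C psi mq = \<xi>"
proof -
  have "\<exists>u. u \<in> hom C (PO alpha) X \<and> Cmp C u mq = \<xi>" using psi_ex by blast
  from someI_ex[OF this] show "psi \<in> hom C (PO alpha) X" "Cmp C psi mq = \<xi>" unfolding psi_def by auto
qed

lemma psi_el: assumes v: "v \<in> uo R" shows "uf psi (uf mq v) = uf \<xi> v"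
proof -
  have "uf (Cmp C psi mq) v = uf \<xi> v" using psi_prop(2) by simp
  then show ?thesis using uf_c[OF mq_prop(1) psi_prop(1) v] by simp
qed

lemma surj_mq: assumes z: "z \<in> uo (PO alpha)" shows "\<exists>v\<in>uo R. uf mq v = z"
  using regepi_surj[OF mq_regepi, of z] z mq_a by simp

definition "phi = (THE u. u \<in> hom C X (PO alpha) \<and> Cmp C (P1 alpha) u = \<gamma> \<and> Cmp C (P2 alpha) u = qq)"

lemma phi_prop: "phi \<in> hom C X (PO alpha)" "Cmp C (P1 alpha) phi = \<gamma>" "Cmp C (P2 alpha) phi = qq"
proof -
  have q1: "\<gamma> \<in> hom C X (Dom C p)" using ddD(2) by simp
  have q2: "qq \<in> hom C X (Dom C alpha)" using qq_a(3) al by simp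
  have eq: "Cmp C p \<gamma> = Cmp C alpha qq" using alpha_prop(2) by simp
  have "\<exists>!u. u \<in> hom C X (PO alpha) \<and> Cmp C (P1 alpha) u = \<gamma> \<and> Cmp C (P2 alpha) u = qq"
    by (rule pb_univ[OF pbp[OF al(1,2)] q1 q2 eq])
  from theI'[OF this] show "phi \<in> hom C X (PO alpha)" "Cmp C (P1 alpha) phi = \<gamma>" "Cmp C (P2 alpha) phi = qq"
    unfolding phi_def by auto
qed

lemma phi_el: assumes x: "x \<in> uo X"
  shows "uf phi x \<in> uo (PO alpha)" "uf (P1 alpha) (uf phi x) = uf \<gamma> x" "uf (P2 alpha) (uf phi x) = uf qq x"
proof -
  show "uf phi x \<in> uo (PO alpha)" using uf_h[OF phi_prop(1) x] .
  have "uf (Cmp C (P1 alpha) phi) x = uf \<gamma> x" "uf (Cmp C (P2 alpha) phi) x = uf qq x" using phi_prop by simp_all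
  then show "uf (P1 alpha) (uf phi x) = uf \<gamma> x" "uf (P2 alpha) (uf phi x) = uf qq x"
    using uf_c[OF phi_prop(1) hA(1) x] uf_c[OF phi_prop(1) hA(2) x] by simp_all
qed

lemma psi_phi: "Cmp C psi phi = Idt C X"
proof (rule fext[OF hom_c[OF phi_prop(1) psi_prop(1)] id_hom[OF ddD(1)]])
  fix x assume x: "x \<in> uo X"
  note D = dg_el[OF x]
  note M = mq_el[OF D(1)]
  have "uf phi x = uf mq (uf dg x)"
    using pe_un[OF al(1,2) phi_el(1)[OF x] M(1)] phi_el[OF x] M D by simp
  then have "uf psi (uf phi x) = x" using psi_el[OF D(1)] unit_el[OF x] by simp
  then show "uf (Cmp C psi phi) x = uf (Idt C X) x"
    using uf_c[OF phi_prop(1) psi_prop(1) x] uf_id[OF ddD(1) x] by simp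
qed

lemma phi_psi: "Cmp C phi psi = Idt C (PO alpha)"
proof (rule fext[OF hom_c[OF psi_prop(1) phi_prop(1)] id_hom[OF hA(3)]])
  fix z assume z: "z \<in> uo (PO alpha)"
  obtain v where v: "v \<in> uo R" "uf mq v = z" using surj_mq[OF z] by blast
  note M = mq_el[OF v(1)]
  have xv: "uf \<xi> v \<in> uo X" using xi_in[OF v(1)] .
  have "uf phi (uf psi z) = z"
    using pe_un[OF al(1,2) phi_el(1)[OF xv] z] phi_el[OF xv] psi_el[OF v(1)] v M xi_g[OF v(1)] qq_el[OF v(1)]
    by simp
  then show "uf (Cmp C phi psi) z = uf (Idt C (PO alpha)) z"
    using uf_c[OF psi_prop(1) phi_prop(1) z] uf_id[OF hA(3) z] by simp
qed

lemma g_psi: "Cmp C \<gamma> psi = P1 alpha"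
proof (rule fext[OF hom_c[OF psi_prop(1) ddD(2)] hA(1)])
  fix z assume z: "z \<in> uo (PO alpha)"
  obtain v where v: "v \<in> uo R" "uf mq v = z" using surj_mq[OF z] by blast
  show "uf (Cmp C \<gamma> psi) z = uf (P1 alpha) z"
    using uf_c[OF psi_prop(1) ddD(2) z] psi_el[OF v(1)] v mq_el[OF v(1)] xi_g[OF v(1)] by simp
qed

lemma psi_dm: "is_descent_morphism C p (PO alpha, P1 alpha, Kxi alpha) psi (X, \<gamma>, \<xi>)"
proof -
  let ?d = "Cmp C p (P1 alpha)"
  note A = pbp_parts[OF al(1,2)]
  have d: "?d \<in> Ar C" "Cod C ?d = B" "Dom C ?d = PO alpha" using A al by auto
  have hf: "psi \<in> hom C (Dom C ?d) (Dom C \<delta>)" using psi_prop(1) d de by simp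
  have ef: "Cmp C \<delta> psi = ?d"
    using assoc[of psi \<gamma> p] psi_prop(1) ga g_psi by (simp add: hom_def)
  let ?G = "fibmap C p ?d \<delta> psi"
  note G = fm_prop[OF d(1,2) de(1,2) hf ef]
  have Gh: "?G \<in> hom C (PO ?d) R" using G by simp
  have Kh: "Kxi alpha \<in> hom C (PO ?d) (PO alpha)" using Kxi_prop(1)[OF al(1,2)] .
  have "Cmp C psi (Kxi alpha) = Cmp C \<xi> ?G"
  proof (rule fext[OF hom_c[OF Kh psi_prop(1)] hom_c[OF Gh hR(3)]])
    fix t assume t: "t \<in> uo (PO ?d)"
    note T = pe_sq[OF d(1,2) t]
    have zt: "uf (P2 ?d) t \<in> uo (PO alpha)" using T(2) d by simp
    obtain v where v: "v \<in> uo R" "uf mq v = uf (P2 ?d) t" using surj_mq[OF zt] by blast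
    note M = mq_el[OF v(1)] and S = R_sq[OF v(1)]
    have "uf ?d (uf (P2 ?d) t) = uf p (uf (P1 alpha) (uf (P2 ?d) t))" using uf_comp[of "P1 alpha" p] A zt by simp
    then have pe: "uf p (uf (P1 ?d) t) = uf p (uf \<pi>1 v)" using T(3) v M by simp
    note K = Kxi_elem[OF al(1,2) t]
    have c1: "uf p (uf (P1 ?d) t) = uf p (uf \<gamma> (uf \<pi>2 v))" using pe S(3) by simp
    note V' = rp[OF T(1) S(2) c1]
    have "uf mq (rp (uf (P1 ?d) t) (uf \<pi>2 v)) = uf (Kxi alpha) t"
      using pe_un[OF al(1,2) mq_el(1)[OF V'(1)] K(1)] mq_el[OF V'(1)] V' K v M by simp
    then have lhs: "uf psi (uf (Kxi alpha) t) = uf \<xi> (rp (uf (P1 ?d) t) (uf \<pi>2 v))"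
      using psi_el[OF V'(1)] by simp
    note GE = fm_elem[OF d(1,2) de(1,2) hf ef t]
    have "uf ?G t = rp (uf (P1 ?d) t) (uf \<xi> v)"
      using pr_eq[OF de(1,2) GE(1)] GE v psi_el[OF v(1)] by simp
    then have rhs: "uf \<xi> (uf ?G t) = uf \<xi> (rp (uf (P1 ?d) t) (uf \<pi>2 v))"
      using coc2[OF T(1) v(1) pe] by simp
    show "uf (Cmp C psi (Kxi alpha)) t = uf (Cmp C \<xi> ?G) t"
      using uf_c[OF Kh psi_prop(1) t] uf_c[OF Gh hR(3) t] lhs rhs by simp
  qed
  then show ?thesis unfolding is_descent_morphism_def using psi_prop(1) g_psi by simp
qed

lemma phi_dm: "is_descent_morphism C p (X, \<gamma>, \<xi>) phi (PO alpha, P1 alpha, Kxi alpha)"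
proof -
  let ?d = "Cmp C p (P1 alpha)"
  note A = pbp_parts[OF al(1,2)]
  have d: "?d \<in> Ar C" "Cod C ?d = B" "Dom C ?d = PO alpha" using A al by auto
  have hf: "phi \<in> hom C (Dom C \<delta>) (Dom C ?d)" using phi_prop(1) d de by simp
  have ef: "Cmp C ?d phi = \<delta>"
    using assoc[of phi "P1 alpha" p] phi_prop A by (simp add: hom_def)
  let ?H = "fibmap C p \<delta> ?d phi"
  note H = fm_prop[OF de(1,2) d(1,2) hf ef]
  have Hh: "?H \<in> hom C R (PO ?d)" using H by simp
  have Kh: "Kxi alpha \<in> hom C (PO ?d) (PO alpha)" using Kxi_prop(1)[OF al(1,2)] .
  have "Cmp C phi \<xi> = Cmp C (Kxi alpha) ?H"
  proof (rule fext[OF hom_c[OF hR(3) phi_prop(1)] hom_c[OF Hh Kh]])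
    fix v assume v: "v \<in> uo R"
    have xv: "uf \<xi> v \<in> uo X" using xi_in[OF v] .
    note HE = fm_elem[OF de(1,2) d(1,2) hf ef v]
    note K = Kxi_elem[OF al(1,2) HE(1)]
    note S = R_sq[OF v]
    have "uf phi (uf \<xi> v) = uf (Kxi alpha) (uf ?H v)"
      using pe_un[OF al(1,2) phi_el(1)[OF xv] K(1)] phi_el[OF xv] K HE xi_g[OF v] qq_el[OF v]
        phi_el[OF S(2)] by simp
    then show "uf (Cmp C phi \<xi>) v = uf (Cmp C (Kxi alpha) ?H) v"
      using uf_c[OF hR(3) phi_prop(1) v] uf_c[OF Hh Kh v] by simp
  qed
  then show ?thesis unfolding is_descent_morphism_def using phi_prop by simp
qed

lemma ess: "\<exists>a\<in>Ob (Slice C B). \<exists>\<theta>. \<theta> \<in> hom (Des C p) (fst (Kp C p) a) (X, \<gamma>, \<xi>) \<and> iso (Des C p) \<theta>"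
proof -
  let ?a = "(AA, alpha)"
  have aob: "?a \<in> Ob (Slice C B)" using alpha_prop(1) qq_a by (simp add: Slice_simps)
  have Ka: "fst (Kp C p) ?a = (PO alpha, P1 alpha, Kxi alpha)" by (simp add: Kp_def K_obj_eq)
  let ?Ka = "(PO alpha, P1 alpha, Kxi alpha)" and ?D = "(X, \<gamma>, \<xi>)"
  let ?th = "(?Ka, psi, ?D)" and ?g = "(?D, phi, ?Ka)"
  have kd: "is_descent_data C p ?Ka" using K_dd[OF al(1,2)] .
  have th: "?th \<in> hom (Des C p) ?Ka ?D" using kd dd psi_dm by (simp add: hom_def Des_simps)
  have g: "?g \<in> hom (Des C p) ?D ?Ka" using kd dd phi_dm by (simp add: hom_def Des_simps)
  have "iso (Des C p) ?th"
    unfolding iso_def using th g phi_psi psi_phi by (auto simp: hom_def Des_simps)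
  then have "?th \<in> hom (Des C p) (fst (Kp C p) ?a) ?D \<and> iso (Des C p) ?th" using th Ka by simp
  then show ?thesis by (rule bexI[OF exI aob])
qed

end

locale ccat = fixes C :: "('o, 'm) category" assumes cat: "is_category C"
begin
lemma ob_dom: "f \<in> Ar C \<Longrightarrow> Dom C f \<in> Ob C" using cat by (simp add: is_category_def)
lemma ob_cod: "f \<in> Ar C \<Longrightarrow> Cod C f \<in> Ob C" using cat by (simp add: is_category_def)
lemma id_hom: "a \<in> Ob C \<Longrightarrow> Idt C a \<in> hom C a a" using cat by (simp add: is_category_def)
lemma comp_hom: "f \<in> hom C a b \<Longrightarrow> g \<in> hom C b c \<Longrightarrow> Cmp C g f \<in> hom C a c"
  using cat unfolding is_category_def hom_def by auto
lemma hom_ob: "f \<in> hom C a b \<Longrightarrow> a \<in> Ob C \<and> b \<in> Ob C" using ob_dom ob_cod by (auto simp: hom_def)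
lemma id_l: "f \<in> hom C a b \<Longrightarrow> Cmp C (Idt C b) f = f" using cat by (auto simp: is_category_def hom_def)
lemma id_r: "f \<in> hom C a b \<Longrightarrow> Cmp C f (Idt C a) = f" using cat by (auto simp: is_category_def hom_def)
lemma assoc: "f \<in> hom C a b \<Longrightarrow> g \<in> hom C b c \<Longrightarrow> h \<in> hom C c d \<Longrightarrow>
  Cmp C h (Cmp C g f) = Cmp C (Cmp C h g) f"
  using cat unfolding is_category_def hom_def by auto
end

locale ffes =
  fixes A :: "('a, 'b) category" and D :: "('c, 'd) category" and K :: "('a, 'b, 'c, 'd) ftor"
  assumes cA: "is_category A" and cD: "is_category D" and fK: "is_functor A D K"
    and ff: "\<And>a b g. a \<in> Ob A \<Longrightarrow> b \<in> Ob A \<Longrightarrow> g \<in> hom D (fst K a) (fst K b) \<Longrightarrow> \<exists>!f. f \<in> hom A a b \<and> snd K f = g"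
    and es: "\<And>d. d \<in> Ob D \<Longrightarrow> \<exists>a\<in>Ob A. \<exists>\<theta>. \<theta> \<in> hom D (fst K a) d \<and> iso D \<theta>"
begin

interpretation A: ccat A by unfold_locales (rule cA)
interpretation D: ccat D by unfold_locales (rule cD)

abbreviation "Ko \<equiv> fst K"
abbreviation "Kf \<equiv> snd K"

lemma K_ob: "a \<in> Ob A \<Longrightarrow> Ko a \<in> Ob D" using fK by (simp add: is_functor_def)
lemma K_hom: "f \<in> hom A a b \<Longrightarrow> Kf f \<in> hom D (Ko a) (Ko b)" using fK by (auto simp: is_functor_def hom_def)
lemma K_id: "a \<in> Ob A \<Longrightarrow> Kf (Idt A a) = Idt D (Ko a)" using fK by (simp add: is_functor_def)
lemma K_comp: "f \<in> hom A a b \<Longrightarrow> g \<in> hom A b c \<Longrightarrow> Kf (Cmp A g f) = Cmp D (Kf g) (Kf f)"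
  using fK by (auto simp: is_functor_def hom_def)

definition "ga d = (SOME a. a \<in> Ob A \<and> (\<exists>\<theta>. \<theta> \<in> hom D (Ko a) d \<and> iso D \<theta>))"
definition "th d = (SOME \<theta>. \<theta> \<in> hom D (Ko (ga d)) d \<and> iso D \<theta>)"

lemma ga_th: assumes d: "d \<in> Ob D" shows "ga d \<in> Ob A" "th d \<in> hom D (Ko (ga d)) d" "iso D (th d)"
proof -
  have "\<exists>a. a \<in> Ob A \<and> (\<exists>\<theta>. \<theta> \<in> hom D (Ko a) d \<and> iso D \<theta>)" using es[OF d] by blast
  from someI_ex[OF this] have g: "ga d \<in> Ob A" "\<exists>\<theta>. \<theta> \<in> hom D (Ko (ga d)) d \<and> iso D \<theta>"
    unfolding ga_def by auto
  from someI_ex[OF g(2)] show "th d \<in> hom D (Ko (ga d)) d" "iso D (th d)" unfolding th_def by auto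
  show "ga d \<in> Ob A" by (rule g(1))
qed

definition "ith d = (SOME g. g \<in> hom D d (Ko (ga d)) \<and> Cmp D g (th d) = Idt D (Ko (ga d)) \<and> Cmp D (th d) g = Idt D d)"

lemma ith: assumes d: "d \<in> Ob D"
  shows "ith d \<in> hom D d (Ko (ga d))" "Cmp D (ith d) (th d) = Idt D (Ko (ga d))" "Cmp D (th d) (ith d) = Idt D d"
proof -
  note T = ga_th[OF d]
  have dc: "Dom D (th d) = Ko (ga d)" "Cod D (th d) = d" using T by (auto simp: hom_def)
  have "\<exists>g. g \<in> hom D d (Ko (ga d)) \<and> Cmp D g (th d) = Idt D (Ko (ga d)) \<and> Cmp D (th d) g = Idt D d"
    using T(3) dc unfolding iso_def by auto
  from someI_ex[OF this] show "ith d \<in> hom D d (Ko (ga d))" "Cmp D (ith d) (th d) = Idt D (Ko (ga d))"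
    "Cmp D (th d) (ith d) = Idt D d" unfolding ith_def by auto
qed

definition "lift a b g = (THE f. f \<in> hom A a b \<and> Kf f = g)"

lemma lift: "a \<in> Ob A \<Longrightarrow> b \<in> Ob A \<Longrightarrow> g \<in> hom D (Ko a) (Ko b) \<Longrightarrow> lift a b g \<in> hom A a b \<and> Kf (lift a b g) = g"
  unfolding lift_def by (rule theI') (rule ff)

lemma faithK: assumes "f \<in> hom A a b" "f' \<in> hom A a b" "Kf f = Kf f'" shows "f = f'"
proof -
  have ab: "a \<in> Ob A" "b \<in> Ob A" using A.hom_ob assms(1) by auto
  have "\<exists>!f. f \<in> hom A a b \<and> Kf f = Kf f'" using ff[OF ab K_hom[OF assms(2)]] .
  then show ?thesis using assms by blast
qed

definition "Gf g = lift (ga (Dom D g)) (ga (Cod D g)) (Cmp D (ith (Cod D g)) (Cmp D g (th (Dom D g))))"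

lemma conj_hom: assumes g: "g \<in> hom D d d'"
  shows "Cmp D (ith d') (Cmp D g (th d)) \<in> hom D (Ko (ga d)) (Ko (ga d'))"
proof -
  have dd: "d \<in> Ob D" "d' \<in> Ob D" using D.hom_ob[OF g] by auto
  show ?thesis using D.comp_hom[OF D.comp_hom[OF ga_th(2)[OF dd(1)] g] ith(1)[OF dd(2)]] .
qed

lemma Gf: assumes g: "g \<in> hom D d d'"
  shows "Gf g \<in> hom A (ga d) (ga d')" "Kf (Gf g) = Cmp D (ith d') (Cmp D g (th d))"
proof -
  have dd: "d \<in> Ob D" "d' \<in> Ob D" using D.hom_ob[OF g] by auto
  have e: "Dom D g = d" "Cod D g = d'" using g by (auto simp: hom_def)
  note L = lift[OF ga_th(1)[OF dd(1)] ga_th(1)[OF dd(2)] conj_hom[OF g]]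
  show "Gf g \<in> hom A (ga d) (ga d')" "Kf (Gf g) = Cmp D (ith d') (Cmp D g (th d))"
    using L e by (auto simp: Gf_def)
qed

definition "G = (ga, Gf)"

lemma G_functor: "is_functor D A G"
proof -
  have ob: "ga d \<in> Ob A" if "d \<in> Ob D" for d using ga_th(1)[OF that] .
  have ar: "Gf g \<in> hom A (ga (Dom D g)) (ga (Cod D g))" if "g \<in> Ar D" for g
    using Gf(1)[of g "Dom D g" "Cod D g"] that by (simp add: hom_def)
  have idt: "Gf (Idt D d) = Idt A (ga d)" if d: "d \<in> Ob D" for d
  proof (rule faithK)
    have ih: "Idt D d \<in> hom D d d" using D.id_hom[OF d] .
    show "Gf (Idt D d) \<in> hom A (ga d) (ga d)" using Gf(1)[OF ih] .
    show "Idt A (ga d) \<in> hom A (ga d) (ga d)" using A.id_hom[OF ga_th(1)[OF d]] .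
    have "Kf (Gf (Idt D d)) = Cmp D (ith d) (Cmp D (Idt D d) (th d))" using Gf(2)[OF ih] .
    also have "\<dots> = Idt D (Ko (ga d))" using D.id_l[OF ga_th(2)[OF d]] ith(2)[OF d] by simp
    also have "\<dots> = Kf (Idt A (ga d))" using K_id[OF ga_th(1)[OF d]] by simp
    finally show "Kf (Gf (Idt D d)) = Kf (Idt A (ga d))" .
  qed
  have cmp: "Gf (Cmp D g' g) = Cmp A (Gf g') (Gf g)" if g: "g \<in> Ar D" and g': "g' \<in> Ar D"
    and e: "Cod D g = Dom D g'" for g g'
  proof -
    define d where "d = Dom D g"
    define d' where "d' = Cod D g"
    define d'' where "d'' = Cod D g'"
    have gh: "g \<in> hom D d d'" "g' \<in> hom D d' d''" using g g' e by (auto simp: hom_def d_def d'_def d''_def)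
    have dd: "d \<in> Ob D" "d' \<in> Ob D" "d'' \<in> Ob D" using D.hom_ob gh by auto
    have gg: "Cmp D g' g \<in> hom D d d''" using D.comp_hom[OF gh] .
    show ?thesis
    proof (rule faithK)
      show "Gf (Cmp D g' g) \<in> hom A (ga d) (ga d'')" using Gf(1)[OF gg] .
      show "Cmp A (Gf g') (Gf g) \<in> hom A (ga d) (ga d'')" using A.comp_hom[OF Gf(1)[OF gh(1)] Gf(1)[OF gh(2)]] .
      note T = ga_th(2)[OF dd(1)] and T' = ga_th(2)[OF dd(2)]
      note I' = ith(1)[OF dd(2)] and I'' = ith(1)[OF dd(3)]
      have "Kf (Cmp A (Gf g') (Gf g)) = Cmp D (Kf (Gf g')) (Kf (Gf g))"
        using K_comp[OF Gf(1)[OF gh(1)] Gf(1)[OF gh(2)]] .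
      also have "\<dots> = Cmp D (Cmp D (ith d'') (Cmp D g' (th d'))) (Cmp D (ith d') (Cmp D g (th d)))"
        using Gf(2)[OF gh(1)] Gf(2)[OF gh(2)] by simp
      also have "\<dots> = Cmp D (ith d'') (Cmp D (Cmp D g' (th d')) (Cmp D (ith d') (Cmp D g (th d))))"
        using D.assoc[OF conj_hom[OF gh(1)] D.comp_hom[OF T' gh(2)] I''] by simp
      also have "Cmp D (Cmp D g' (th d')) (Cmp D (ith d') (Cmp D g (th d))) =
          Cmp D g' (Cmp D (th d') (Cmp D (ith d') (Cmp D g (th d))))"
        using D.assoc[OF conj_hom[OF gh(1)] T' gh(2)] by simp
      also have "Cmp D (th d') (Cmp D (ith d') (Cmp D g (th d))) = Cmp D (Cmp D (th d') (ith d')) (Cmp D g (th d))"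
        using D.assoc[OF D.comp_hom[OF T gh(1)] I' T'] by simp
      also have "\<dots> = Cmp D g (th d)" using ith(3)[OF dd(2)] D.id_l[OF D.comp_hom[OF T gh(1)]] by simp
      also have "Cmp D g' (Cmp D g (th d)) = Cmp D (Cmp D g' g) (th d)" using D.assoc[OF T gh] by simp
      also have "Cmp D (ith d'') (Cmp D (Cmp D g' g) (th d)) = Kf (Gf (Cmp D g' g))" using Gf(2)[OF gg] by simp
      finally show "Kf (Gf (Cmp D g' g)) = Kf (Cmp A (Gf g') (Gf g))" by simp
    qed
  qed
  show ?thesis unfolding is_functor_def G_def using ob ar idt cmp by auto
qed

definition "eta a = lift a (ga (Ko a)) (ith (Ko a))"

lemma eta: assumes a: "a \<in> Ob A" shows "eta a \<in> hom A a (ga (Ko a))" "Kf (eta a) = ith (Ko a)"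
  using lift[OF a ga_th(1)[OF K_ob[OF a]] ith(1)[OF K_ob[OF a]]] by (auto simp: eta_def)

lemma eta_iso: assumes a: "a \<in> Ob A" shows "iso A (eta a)"
proof -
  let ?b = "ga (Ko a)"
  have b: "?b \<in> Ob A" using ga_th(1)[OF K_ob[OF a]] .
  let ?i = "lift ?b a (th (Ko a))"
  note L = lift[OF b a ga_th(2)[OF K_ob[OF a]]]
  note E = eta[OF a]
  have e1: "Cmp A ?i (eta a) = Idt A a"
  proof (rule faithK)
    show "Cmp A ?i (eta a) \<in> hom A a a" using A.comp_hom[OF E(1)] L by blast
    show "Idt A a \<in> hom A a a" using A.id_hom[OF a] .
    show "Kf (Cmp A ?i (eta a)) = Kf (Idt A a)"
      using K_comp[OF E(1), of ?i a] L E(2) ith(3)[OF K_ob[OF a]] K_id[OF a] by simp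
  qed
  have e2: "Cmp A (eta a) ?i = Idt A ?b"
  proof (rule faithK)
    show "Cmp A (eta a) ?i \<in> hom A ?b ?b" using A.comp_hom[OF _ E(1)] L by blast
    show "Idt A ?b \<in> hom A ?b ?b" using A.id_hom[OF b] .
    show "Kf (Cmp A (eta a) ?i) = Kf (Idt A ?b)"
      using K_comp[OF conjunct1[OF L] E(1)] L E(2) ith(2)[OF K_ob[OF a]] K_id[OF b] by simp
  qed
  have ea: "eta a \<in> Ar A" "Dom A (eta a) = a" "Cod A (eta a) = ?b" using E(1) by (auto simp: hom_def)
  show ?thesis unfolding iso_def using ea e1 e2 L by auto
qed

lemma equivalence: "is_equivalence A D K"
proof -
  have GK: "fst (comp_functor G K) a = ga (Ko a)" "snd (comp_functor G K) f = Gf (Kf f)" for a f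
    by (simp_all add: comp_functor_def G_def)
  have KG: "fst (comp_functor K G) d = Ko (ga d)" "snd (comp_functor K G) g = Kf (Gf g)" for d g
    by (simp_all add: comp_functor_def G_def)
  have n1: "nat_iso A A id_functor (comp_functor G K) eta"
    unfolding nat_iso_def
  proof (intro conjI ballI)
    fix a assume a: "a \<in> Ob A"
    show "eta a \<in> hom A (fst (id_functor :: ('a, 'b, 'a, 'b) ftor) a) (fst (comp_functor G K) a)"
      using eta(1)[OF a] GK by (simp add: id_functor_def)
    show "iso A (eta a)" using eta_iso[OF a] .
  next
    fix f assume f: "f \<in> Ar A"
    define a where "a = Dom A f"
    define b where "b = Cod A f"
    have fh: "f \<in> hom A a b" using f by (simp add: hom_def a_def b_def)
    have ab: "a \<in> Ob A" "b \<in> Ob A" using A.hom_ob[OF fh] by auto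
    note Kfh = K_hom[OF fh]
    note Ea = eta[OF ab(1)] and Eb = eta[OF ab(2)]
    note GKf = Gf[OF Kfh]
    have "Cmp A (eta b) f = Cmp A (Gf (Kf f)) (eta a)"
    proof (rule faithK)
      show "Cmp A (eta b) f \<in> hom A a (ga (Ko b))" using A.comp_hom[OF fh Eb(1)] .
      show "Cmp A (Gf (Kf f)) (eta a) \<in> hom A a (ga (Ko b))" using A.comp_hom[OF Ea(1) GKf(1)] .
      note T = ga_th(2)[OF K_ob[OF ab(1)]] and I = ith(1)[OF K_ob[OF ab(1)]] and Ib = ith(1)[OF K_ob[OF ab(2)]]
      have "Kf (Cmp A (Gf (Kf f)) (eta a)) = Cmp D (Cmp D (ith (Ko b)) (Cmp D (Kf f) (th (Ko a)))) (ith (Ko a))"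
        using K_comp[OF Ea(1) GKf(1)] GKf(2) Ea(2) by simp
      also have "\<dots> = Cmp D (ith (Ko b)) (Cmp D (Cmp D (Kf f) (th (Ko a))) (ith (Ko a)))"
        using D.assoc[OF I D.comp_hom[OF T Kfh] Ib] by simp
      also have "Cmp D (Cmp D (Kf f) (th (Ko a))) (ith (Ko a)) = Cmp D (Kf f) (Cmp D (th (Ko a)) (ith (Ko a)))"
        using D.assoc[OF I T Kfh] by simp
      also have "\<dots> = Kf f" using ith(3)[OF K_ob[OF ab(1)]] D.id_r[OF Kfh] by simp
      also have "Cmp D (ith (Ko b)) (Kf f) = Kf (Cmp A (eta b) f)" using K_comp[OF fh Eb(1)] Eb(2) by simp
      finally show "Kf (Cmp A (eta b) f) = Kf (Cmp A (Gf (Kf f)) (eta a))" by simp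
    qed
    then show "Cmp A (eta (Cod A f)) (snd (id_functor :: ('a, 'b, 'a, 'b) ftor) f) = Cmp A (snd (comp_functor G K) f) (eta (Dom A f))"
      using GK a_def b_def by (simp add: id_functor_def)
  qed
  have n2: "nat_iso D D (comp_functor K G) id_functor th"
    unfolding nat_iso_def
  proof (intro conjI ballI)
    fix d assume d: "d \<in> Ob D"
    show "th d \<in> hom D (fst (comp_functor K G) d) (fst (id_functor :: ('c, 'd, 'c, 'd) ftor) d)"
      using ga_th[OF d] KG by (simp add: id_functor_def)
    show "iso D (th d)" using ga_th[OF d] by simp
  next
    fix g assume g: "g \<in> Ar D"
    define d where "d = Dom D g"
    define d' where "d' = Cod D g"
    have gh: "g \<in> hom D d d'" using g by (simp add: hom_def d_def d'_def)
    have dd: "d \<in> Ob D" "d' \<in> Ob D" using D.hom_ob[OF gh] by auto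
    note T = ga_th(2)[OF dd(1)] and T' = ga_th(2)[OF dd(2)] and I' = ith(1)[OF dd(2)]
    have "Cmp D (th d') (Kf (Gf g)) = Cmp D (th d') (Cmp D (ith d') (Cmp D g (th d)))" using Gf(2)[OF gh] by simp
    also have "\<dots> = Cmp D (Cmp D (th d') (ith d')) (Cmp D g (th d))"
      using D.assoc[OF D.comp_hom[OF T gh] I' T'] by simp
    also have "\<dots> = Cmp D g (th d)" using ith(3)[OF dd(2)] D.id_l[OF D.comp_hom[OF T gh]] by simp
    finally show "Cmp D (th (Cod D g)) (snd (comp_functor K G) g) = Cmp D (snd (id_functor :: ('c, 'd, 'c, 'd) ftor) g) (th (Dom D g))"
      using KG d_def d'_def by (simp add: id_functor_def)
  qed
  show ?thesis unfolding is_equivalence_def using fK G_functor n1 n2 by blast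
qed

end

context ctx begin

lemma slice_cat: "is_category (Slice C B0)"
proof -
  have ar: "Dom (Slice C B0) f \<in> Ob (Slice C B0) \<and> Cod (Slice C B0) f \<in> Ob (Slice C B0)" if "f \<in> Ar (Slice C B0)" for f
    using that by (auto simp: Slice_simps)
  have idh: "Idt (Slice C B0) a \<in> hom (Slice C B0) a a" if a: "a \<in> Ob (Slice C B0)" for a
  proof -
    obtain A \<alpha> where a': "a = (A, \<alpha>)" by (cases a)
    have "A \<in> Ob C" "\<alpha> \<in> Ar C" "Dom C \<alpha> = A" "Cod C \<alpha> = B0" using a a' by (auto simp: Slice_simps hom_def)
    then show ?thesis using a a' id_hom id_r[of \<alpha>] by (simp add: Slice_simps hom_def)
  qed
  have cmp: "Cmp (Slice C B0) g f \<in> hom (Slice C B0) (Dom (Slice C B0) f) (Cod (Slice C B0) g)"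
    if f: "f \<in> Ar (Slice C B0)" and g: "g \<in> Ar (Slice C B0)" and e: "Cod (Slice C B0) f = Dom (Slice C B0) g" for f g
  proof -
    obtain X h Y where f': "f = (X, h, Y)" by (cases f) auto
    obtain k Z where g': "g = (Y, k, Z)" using e f' by (cases g) (auto simp: Slice_simps)
    have hh: "h \<in> hom C (fst X) (fst Y)" "Cmp C (snd Y) h = snd X" "k \<in> hom C (fst Y) (fst Z)" "Cmp C (snd Z) k = snd Y"
      and ob: "X \<in> Ob (Slice C B0)" "Z \<in> Ob (Slice C B0)"
      using f g f' g' by (auto simp: Slice_simps)
    have z: "snd Z \<in> Ar C" "Dom C (snd Z) = fst Z" using ob by (auto simp: Slice_simps hom_def case_prod_beta)
    have "Cmp C (snd Z) (Cmp C k h) = snd X" using assoc[of h k "snd Z"] hh z by (auto simp: hom_def)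
    then show ?thesis using f' g' hh ob comp_hom[OF hh(1) hh(3)] by (simp add: Slice_simps hom_def)
  qed
  have idl: "Cmp (Slice C B0) f (Idt (Slice C B0) (Dom (Slice C B0) f)) = f \<and>
             Cmp (Slice C B0) (Idt (Slice C B0) (Cod (Slice C B0) f)) f = f" if f: "f \<in> Ar (Slice C B0)" for f
  proof -
    obtain X h Y where f': "f = (X, h, Y)" by (cases f) auto
    have "h \<in> hom C (fst X) (fst Y)" using f f' by (auto simp: Slice_simps)
    then show ?thesis using f' id_l[of h] id_r[of h] by (simp add: Slice_simps hom_def)
  qed
  have asc: "Cmp (Slice C B0) h (Cmp (Slice C B0) g f) = Cmp (Slice C B0) (Cmp (Slice C B0) h g) f"
    if f: "f \<in> Ar (Slice C B0)" and g: "g \<in> Ar (Slice C B0)" and h: "h \<in> Ar (Slice C B0)"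
      and e: "Cod (Slice C B0) f = Dom (Slice C B0) g \<and> Cod (Slice C B0) g = Dom (Slice C B0) h" for f g h
  proof -
    obtain X a Y where f': "f = (X, a, Y)" by (cases f) auto
    obtain b Z where g': "g = (Y, b, Z)" using e f' by (cases g) (auto simp: Slice_simps)
    obtain c W where h': "h = (Z, c, W)" using e g' by (cases h) (auto simp: Slice_simps)
    have "a \<in> hom C (fst X) (fst Y)" "b \<in> hom C (fst Y) (fst Z)" "c \<in> hom C (fst Z) (fst W)"
      using f g h f' g' h' by (auto simp: Slice_simps)
    then show ?thesis using f' g' h' assoc[of a b c] by (simp add: Slice_simps hom_def)
  qed
  show ?thesis unfolding is_category_def using ar idh cmp idl asc by blast
qed

end

context ctxp begin

lemma fm_id: assumes a: "a \<in> Ar C" "Cod C a = B"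
  shows "fibmap C p a a (Idt C (Dom C a)) = Idt C (PO a)"
proof (rule fm_unique[OF a a])
  note Aa = pbp_parts[OF a]
  have A: "Dom C a \<in> Ob C" using a by simp
  show "Idt C (Dom C a) \<in> hom C (Dom C a) (Dom C a)" using id_hom[OF A] .
  show "Cmp C a (Idt C (Dom C a)) = a" using id_r[of a] a by simp
  show "Idt C (PO a) \<in> hom C (PO a) (PO a)" using id_hom Aa by simp
  show "Cmp C (P1 a) (Idt C (PO a)) = P1 a" using id_r[of "P1 a"] Aa by simp
  show "Cmp C (P2 a) (Idt C (PO a)) = Cmp C (Idt C (Dom C a)) (P2 a)"
    using id_r[of "P2 a"] id_l[of "P2 a"] Aa a by simp
qed

lemma fm_comp: assumes a: "a \<in> Ar C" "Cod C a = B" and a': "a' \<in> Ar C" "Cod C a' = B"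
  and a'': "a'' \<in> Ar C" "Cod C a'' = B"
  and h: "h \<in> hom C (Dom C a) (Dom C a')" and e: "Cmp C a' h = a"
  and k: "k \<in> hom C (Dom C a') (Dom C a'')" and e': "Cmp C a'' k = a'"
  shows "fibmap C p a a'' (Cmp C k h) = Cmp C (fibmap C p a' a'' k) (fibmap C p a a' h)"
proof -
  have ha: "h \<in> Ar C" "Dom C h = Dom C a" "Cod C h = Dom C a'" "k \<in> Ar C" "Dom C k = Dom C a'" "Cod C k = Dom C a''"
    using h k by (auto simp: hom_def)
  have kh: "Cmp C k h \<in> hom C (Dom C a) (Dom C a'')" using ha by (simp add: hom_def)
  have ekh: "Cmp C a'' (Cmp C k h) = a" using assoc[of h k a''] ha a'' e e' by simp
  note F = fm_prop[OF a a' h e] and G = fm_prop[OF a' a'' k e']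
  let ?f = "fibmap C p a a' h" and ?g = "fibmap C p a' a'' k"
  have fa: "?f \<in> Ar C" "Dom C ?f = PO a" "Cod C ?f = PO a'" using F by (auto simp: hom_def)
  have gaa: "?g \<in> Ar C" "Dom C ?g = PO a'" "Cod C ?g = PO a''" using G by (auto simp: hom_def)
  note A = pbp_parts[OF a] and A' = pbp_parts[OF a'] and A'' = pbp_parts[OF a'']
  show ?thesis
  proof (rule fm_unique[OF a a'' kh ekh])
    show "Cmp C ?g ?f \<in> hom C (PO a) (PO a'')" using fa gaa by (simp add: hom_def)
    show "Cmp C (P1 a'') (Cmp C ?g ?f) = P1 a" using assoc[of ?f ?g "P1 a''"] fa gaa A'' F G by simp
    have "Cmp C (P2 a'') (Cmp C ?g ?f) = Cmp C (Cmp C k (P2 a')) ?f"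
      using assoc[of ?f ?g "P2 a''"] fa gaa A'' G by simp
    also have "\<dots> = Cmp C k (Cmp C h (P2 a))" using assoc[of ?f "P2 a'" k] fa A' ha a' F by simp
    also have "\<dots> = Cmp C (Cmp C k h) (P2 a)" using assoc[of "P2 a" h k] A ha a by simp
    finally show "Cmp C (P2 a'') (Cmp C ?g ?f) = Cmp C (Cmp C k h) (P2 a)" .
  qed
qed

lemma dd_parts: assumes "is_descent_data C p (X, \<gamma>, \<xi>)"
  shows "X \<in> Ob C" "\<gamma> \<in> hom C X E" "\<xi> \<in> hom C (PO (Cmp C p \<gamma>)) X"
  using assms by (auto simp: is_descent_data_def)

lemma des_cat: "is_category (Des C p)"
proof -
  have ar: "Dom (Des C p) f \<in> Ob (Des C p) \<and> Cod (Des C p) f \<in> Ob (Des C p)" if "f \<in> Ar (Des C p)" for f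
    using that by (auto simp: Des_simps)
  have idh: "Idt (Des C p) a \<in> hom (Des C p) a a" if a: "a \<in> Ob (Des C p)" for a
  proof -
    obtain X \<gamma> \<xi> where a': "a = (X, \<gamma>, \<xi>)" by (cases a) auto
    have d: "is_descent_data C p (X, \<gamma>, \<xi>)" using a a' by (simp add: Des_simps)
    note P = dd_parts[OF d]
    have ga: "\<gamma> \<in> Ar C" "Dom C \<gamma> = X" "Cod C \<gamma> = E" using P by (auto simp: hom_def)
    let ?d = "Cmp C p \<gamma>"
    have de: "?d \<in> Ar C" "Cod C ?d = B" "Dom C ?d = X" using ga by auto
    have xa: "\<xi> \<in> Ar C" "Dom C \<xi> = PO ?d" "Cod C \<xi> = X" using P by (auto simp: hom_def)
    have "fibmap C p ?d ?d (Idt C X) = Idt C (PO ?d)" using fm_id[OF de(1,2)] de by simp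
    then have "Cmp C (Idt C X) \<xi> = Cmp C \<xi> (fibmap C p ?d ?d (Idt C X))"
      using id_l[of \<xi>] id_r[of \<xi>] xa by simp
    then have "is_descent_morphism C p (X, \<gamma>, \<xi>) (Idt C X) (X, \<gamma>, \<xi>)"
      unfolding is_descent_morphism_def using id_hom[OF P(1)] id_r[of \<gamma>] ga by simp
    then show ?thesis using a' d by (simp add: Des_simps hom_def)
  qed
  have cmp: "Cmp (Des C p) g f \<in> hom (Des C p) (Dom (Des C p) f) (Cod (Des C p) g)"
    if f: "f \<in> Ar (Des C p)" and g: "g \<in> Ar (Des C p)" and e: "Cod (Des C p) f = Dom (Des C p) g" for f g
  proof -
    obtain X1 \<gamma>1 \<xi>1 f0 X2 \<gamma>2 \<xi>2 where f': "f = ((X1, \<gamma>1, \<xi>1), f0, (X2, \<gamma>2, \<xi>2))" by (cases f) auto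
    obtain g0 X3 \<gamma>3 \<xi>3 where g': "g = ((X2, \<gamma>2, \<xi>2), g0, (X3, \<gamma>3, \<xi>3))" using e f' by (cases g) (auto simp: Des_simps)
    have d1: "is_descent_data C p (X1, \<gamma>1, \<xi>1)" and d2: "is_descent_data C p (X2, \<gamma>2, \<xi>2)"
      and d3: "is_descent_data C p (X3, \<gamma>3, \<xi>3)" using f g f' g' by (auto simp: Des_simps)
    have m1: "is_descent_morphism C p (X1, \<gamma>1, \<xi>1) f0 (X2, \<gamma>2, \<xi>2)"
      and m2: "is_descent_morphism C p (X2, \<gamma>2, \<xi>2) g0 (X3, \<gamma>3, \<xi>3)" using f g f' g' by (auto simp: Des_simps)
    let ?d1 = "Cmp C p \<gamma>1" and ?d2 = "Cmp C p \<gamma>2" and ?d3 = "Cmp C p \<gamma>3"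
    have f0: "f0 \<in> hom C X1 X2" "Cmp C \<gamma>2 f0 = \<gamma>1" "Cmp C f0 \<xi>1 = Cmp C \<xi>2 (fibmap C p ?d1 ?d2 f0)"
      using m1 by (auto simp: is_descent_morphism_def)
    have g0: "g0 \<in> hom C X2 X3" "Cmp C \<gamma>3 g0 = \<gamma>2" "Cmp C g0 \<xi>2 = Cmp C \<xi>3 (fibmap C p ?d2 ?d3 g0)"
      using m2 by (auto simp: is_descent_morphism_def)
    note P1 = dd_parts[OF d1] and P2 = dd_parts[OF d2] and P3 = dd_parts[OF d3]
    have ga: "\<gamma>1 \<in> Ar C" "Dom C \<gamma>1 = X1" "Cod C \<gamma>1 = E" "\<gamma>2 \<in> Ar C" "Dom C \<gamma>2 = X2" "Cod C \<gamma>2 = E"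
      "\<gamma>3 \<in> Ar C" "Dom C \<gamma>3 = X3" "Cod C \<gamma>3 = E" using P1 P2 P3 by (auto simp: hom_def)
    have de: "?d1 \<in> Ar C" "Cod C ?d1 = B" "Dom C ?d1 = X1" "?d2 \<in> Ar C" "Cod C ?d2 = B" "Dom C ?d2 = X2"
      "?d3 \<in> Ar C" "Cod C ?d3 = B" "Dom C ?d3 = X3" using ga by auto
    have fa: "f0 \<in> Ar C" "Dom C f0 = X1" "Cod C f0 = X2" "g0 \<in> Ar C" "Dom C g0 = X2" "Cod C g0 = X3"
      using f0 g0 by (auto simp: hom_def)
    have xa: "\<xi>1 \<in> Ar C" "Dom C \<xi>1 = PO ?d1" "Cod C \<xi>1 = X1" "\<xi>2 \<in> Ar C" "Dom C \<xi>2 = PO ?d2" "Cod C \<xi>2 = X2"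
      "\<xi>3 \<in> Ar C" "Dom C \<xi>3 = PO ?d3" "Cod C \<xi>3 = X3" using P1 P2 P3 by (auto simp: hom_def)
    have hf: "f0 \<in> hom C (Dom C ?d1) (Dom C ?d2)" using f0 de by simp
    have ef: "Cmp C ?d2 f0 = ?d1" using assoc[of f0 \<gamma>2 p] fa ga f0 by simp
    have hg: "g0 \<in> hom C (Dom C ?d2) (Dom C ?d3)" using g0 de by simp
    have eg: "Cmp C ?d3 g0 = ?d2" using assoc[of g0 \<gamma>3 p] fa ga g0 by simp
    let ?F = "fibmap C p ?d1 ?d2 f0" and ?G = "fibmap C p ?d2 ?d3 g0"
    note F = fm_prop[OF de(1,2) de(4,5) hf ef] and G = fm_prop[OF de(4,5) de(7,8) hg eg]
    have Fa: "?F \<in> Ar C" "Dom C ?F = PO ?d1" "Cod C ?F = PO ?d2" using F by (auto simp: hom_def)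
    have Ga: "?G \<in> Ar C" "Dom C ?G = PO ?d2" "Cod C ?G = PO ?d3" using G by (auto simp: hom_def)
    have FG: "fibmap C p ?d1 ?d3 (Cmp C g0 f0) = Cmp C ?G ?F" using fm_comp[OF de(1,2) de(4,5) de(7,8) hf ef hg eg] .
    have gf: "Cmp C g0 f0 \<in> hom C X1 X3" using fa by (simp add: hom_def)
    have e1: "Cmp C \<gamma>3 (Cmp C g0 f0) = \<gamma>1" using assoc[of f0 g0 \<gamma>3] fa ga f0 g0 by simp
    have "Cmp C (Cmp C g0 f0) \<xi>1 = Cmp C g0 (Cmp C f0 \<xi>1)" using assoc[of \<xi>1 f0 g0] fa xa by simp
    also have "\<dots> = Cmp C g0 (Cmp C \<xi>2 ?F)" using f0(3) by simp
    also have "\<dots> = Cmp C (Cmp C g0 \<xi>2) ?F" using assoc[of ?F \<xi>2 g0] fa xa Fa by simp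
    also have "\<dots> = Cmp C (Cmp C \<xi>3 ?G) ?F" using g0(3) by simp
    also have "\<dots> = Cmp C \<xi>3 (Cmp C ?G ?F)" using assoc[of ?F ?G \<xi>3] Fa Ga xa by simp
    finally have e2: "Cmp C (Cmp C g0 f0) \<xi>1 = Cmp C \<xi>3 (fibmap C p ?d1 ?d3 (Cmp C g0 f0))" using FG by simp
    have "is_descent_morphism C p (X1, \<gamma>1, \<xi>1) (Cmp C g0 f0) (X3, \<gamma>3, \<xi>3)"
      unfolding is_descent_morphism_def using gf e1 e2 by simp
    then show ?thesis using f' g' d1 d3 by (simp add: Des_simps hom_def)
  qed
  have idl: "Cmp (Des C p) f (Idt (Des C p) (Dom (Des C p) f)) = f \<and>
             Cmp (Des C p) (Idt (Des C p) (Cod (Des C p) f)) f = f" if f: "f \<in> Ar (Des C p)" for f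
  proof -
    obtain D1 f0 D2 where f': "f = (D1, f0, D2)" by (cases f) auto
    have "f0 \<in> hom C (fst D1) (fst D2)" using f f' by (cases D1, cases D2) (auto simp: Des_simps is_descent_morphism_def)
    then show ?thesis using f' id_l[of f0] id_r[of f0] by (simp add: Des_simps hom_def)
  qed
  have asc: "Cmp (Des C p) h (Cmp (Des C p) g f) = Cmp (Des C p) (Cmp (Des C p) h g) f"
    if f: "f \<in> Ar (Des C p)" and g: "g \<in> Ar (Des C p)" and h: "h \<in> Ar (Des C p)"
      and e: "Cod (Des C p) f = Dom (Des C p) g \<and> Cod (Des C p) g = Dom (Des C p) h" for f g h
  proof -
    obtain D1 a D2 where f': "f = (D1, a, D2)" by (cases f) auto
    obtain b D3 where g': "g = (D2, b, D3)" using e f' by (cases g) (auto simp: Des_simps)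
    obtain c D4 where h': "h = (D3, c, D4)" using e g' by (cases h) (auto simp: Des_simps)
    have "a \<in> hom C (fst D1) (fst D2)" "b \<in> hom C (fst D2) (fst D3)" "c \<in> hom C (fst D3) (fst D4)"
      using f g h f' g' h' by (cases D1, cases D2, cases D3, cases D4, auto simp: Des_simps is_descent_morphism_def)+
    then show ?thesis using f' g' h' assoc[of a b c] by (simp add: Des_simps hom_def)
  qed
  show ?thesis unfolding is_category_def using ar idh cmp idl asc by blast
qed

end

context ctxp begin

lemma eff: "effective_descent C p"
proof -
  have es: "\<exists>a\<in>Ob (Slice C B). \<exists>\<theta>. \<theta> \<in> hom (Des C p) (fst (Kp C p) a) d \<and> iso (Des C p) \<theta>"
    if d: "d \<in> Ob (Des C p)" for d
  proof -
    obtain X \<gamma> \<xi> where d': "d = (X, \<gamma>, \<xi>)" by (cases d) auto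
    have "is_descent_data C p (X, \<gamma>, \<xi>)" using d d' by (simp add: Des_simps)
    then interpret dd C U P p X \<gamma> \<xi> by unfold_locales
    show ?thesis using ess d' by simp
  qed
  interpret ffes "Slice C B" "Des C p" "Kp C p"
  proof (unfold_locales)
    show "is_category (Slice C B)" by (rule slice_cat)
    show "is_category (Des C p)" by (rule des_cat)
    show "is_functor (Slice C B) (Des C p) (Kp C p)" by (rule K_functor)
    show "\<And>a b g. a \<in> Ob (Slice C B) \<Longrightarrow> b \<in> Ob (Slice C B) \<Longrightarrow> g \<in> hom (Des C p) (fst (Kp C p) a) (fst (Kp C p) b) \<Longrightarrow>
      \<exists>!f. f \<in> hom (Slice C B) a b \<and> snd (Kp C p) f = g" by (rule K_full)
    show "\<And>d. d \<in> Ob (Des C p) \<Longrightarrow> \<exists>a\<in>Ob (Slice C B). \<exists>\<theta>. \<theta> \<in> hom (Des C p) (fst (Kp C p) a) d \<and> iso (Des C p) \<theta>"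
      by (rule es)
  qed
  show ?thesis unfolding effective_descent_def using equivalence by simp
qed

end

theorem theorem6p1:
  fixes C :: "('o, 'm) category"
    and U :: "('o, 'm, 'u set, 'u set \<times> ('u \<Rightarrow> 'u) \<times> 'u set) ftor"
    and P :: "'m set"
  assumes "is_category C"
    and "has_pullbacks C"
    and "has_coeq_of_equiv_rels C"
    and "is_functor C SetCat U"
    and "faithful C U"
    and "preserves_pullbacks C SetCat U"
    and "preserves_coeq_equiv_rels C SetCat U"
    and "P \<subseteq> Ar C"
    and "\<forall>h\<in>P. regular_epi C h"
    and "pullback_stable C P"
    and "\<forall>f g h. is_coequalizer C f g h \<and> exact_image C U f g h \<and> f \<in> P \<and> g \<in> P \<longrightarrow> h \<in> P"
  shows "\<forall>p\<in>P. effective_descent C p"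
proof
  fix p assume pP: "p \<in> P"
  interpret ctxp C U P p using assms pP by unfold_locales
  show "effective_descent C p" by (rule eff)
qed

end
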